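(* The operator $\Gamma$ defined below is the Choi–Jamiolkowski operator of a separable CPTP map from $\mathbf L(\mathcal H_1\otimes\mathcal H_3\otimes\mathcal H_5)$ to $\mathbf L(\mathcal H_2\otimes\mathcal H_4\otimes\mathcal H_6)$, and this map cannot be implemented by any finite-round three-party LOCC protocol in which the first party acts $\mathcal H_1\to\mathcal H_2$, the second $\mathcal H_3\to\mathcal H_4$ and the third $\mathcal H_5\to\mathcal H_6$.
   Context: $\mathcal H_1,\mathcal H_3,\mathcal H_5\cong\mathbb C^2$ and $\mathcal H_2,\mathcal H_4,\mathcal H_6\cong\mathbb C^2\otimes\mathbb C^2$. On each pair ($\mathcal H_1\otimes\mathcal H_2$, $\mathcal H_3\otimes\mathcal H_4$, $\mathcal H_5\otimes\mathcal H_6$) define $|\mathbf 0\rangle=|0\rangle|00\rangle$, $|\mathbf 1\rangle=|1\rangle|01\rangle$, $|\mathbf 2\rangle=|+\rangle|10\rangle$, $|\mathbf 3\rangle=|-\rangle|11\rangle$, with $|\pm\rangle=(|0\rangle\pm|1\rangle)/\sqrt2$, and $[\mathbf x]:=|\mathbf x\rangle\langle\mathbf x|$. Let $T=\{(0,0,0),(1,2,0),(2,3,0),(3,1,0),(0,3,1),(1,1,1),(2,0,1),(3,2,1),(0,1,2),(1,3,2),(2,2,2),(3,0,2),(0,2,3),(1,0,3),(2,1,3),(3,3,3)\}$ and $\Gamma=\frac12\sum_{(a,b,c)\in T}[\mathbf a]\otimes[\mathbf b]\otimes[\mathbf c]$. The Choi–Jamiolkowski operator of a linear map $\mathcal M:\mathbf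 L(\mathcal H_{in})\to\mathbf L(\mathcal H_{out})$ is $\sum_{k,l}|k\rangle\langle l|\otimes\mathcal M(|k\rangle\langle l|)$ in the computational basis of $\mathcal H_{in}$. A map is separable if it has Kraus operators of product form $E^{(1)}_k\otimes E^{(2)}_k\otimes E^{(3)}_k$. Finite-round three-party LOCC: finitely many rounds in which one party at a time applies a local quantum instrument and broadcasts its outcome, with later operations allowed to depend on earlier outcomes, all outcomes summed at the end. *)

theory Defs
  imports Complex_Main "Jordan_Normal_Form.Matrix"
begin

text \<open>Operators on finite-dimensional Hilbert spaces C^d are complex matrices (JNF type
  complex mat) w.r.t. the computational basis; tensor products are Kronecker products
  (big-endian ordering, so the basis vector |i>|j> of C^m (x) C^n has index i*n+j).\<close>

type_synonym cmat = "complex mat"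

definition kron :: "cmat \<Rightarrow> cmat \<Rightarrow> cmat" where
  "kron A B = mat (dim_row A * dim_row B) (dim_col A * dim_col B)
     (\<lambda>(i,j). A $$ (i div dim_row B, j div dim_col B) * B $$ (i mod dim_row B, j mod dim_col B))"

definition adj :: "cmat \<Rightarrow> cmat" where
  "adj A = mat (dim_col A) (dim_row A) (\<lambda>(i,j). cnj (A $$ (j,i)))"

definition tr :: "cmat \<Rightarrow> complex" where
  "tr A = (\<Sum>i<dim_row A. A $$ (i,i))"

definition msum :: "nat \<Rightarrow> nat \<Rightarrow> cmat list \<Rightarrow> cmat" where
  "msum r c Xs = foldr (+) Xs (0\<^sub>m r c)"

definition ket :: "nat \<Rightarrow> nat \<Rightarrow> cmat" where
  "ket d k = mat d 1 (\<lambda>(i,j). if i = k then 1 else 0)"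

definition proj :: "cmat \<Rightarrow> cmat" where
  "proj v = v * adj v"

definition kraus_apply :: "nat \<Rightarrow> cmat list \<Rightarrow> cmat \<Rightarrow> cmat" where
  "kraus_apply dout Ks X = msum dout dout (map (\<lambda>K. K * X * adj K) Ks)"

text \<open>Choi-Jamiolkowski operator sum_{k,l} |k><l| (x) M(|k><l|), written entrywise:
  entry ((k*dout+o),(l*dout+o')) equals the (o,o') entry of M(|k><l|).\<close>
definition choi :: "nat \<Rightarrow> nat \<Rightarrow> (cmat \<Rightarrow> cmat) \<Rightarrow> cmat" where
  "choi din dout M = mat (din*dout) (din*dout)
     (\<lambda>(i,j). M (ket din (i div dout) * adj (ket din (j div dout))) $$ (i mod dout, j mod dout))"

definition CP_map :: "nat \<Rightarrow> nat \<Rightarrow> (cmat \<Rightarrow> cmat) \<Rightarrow> bool" where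
  "CP_map din dout M \<longleftrightarrow> (\<exists>Ks. set Ks \<subseteq> carrier_mat dout din \<and>
      (\<forall>X \<in> carrier_mat din din. M X = kraus_apply dout Ks X))"

definition TP_map :: "nat \<Rightarrow> nat \<Rightarrow> (cmat \<Rightarrow> cmat) \<Rightarrow> bool" where
  "TP_map din dout M \<longleftrightarrow> (\<forall>X \<in> carrier_mat din din. M X \<in> carrier_mat dout dout \<and> tr (M X) = tr X)"

definition CPTP_map :: "nat \<Rightarrow> nat \<Rightarrow> (cmat \<Rightarrow> cmat) \<Rightarrow> bool" where
  "CPTP_map din dout M \<longleftrightarrow> CP_map din dout M \<and> TP_map din dout M"

definition prod3 :: "cmat \<times> cmat \<times> cmat \<Rightarrow> cmat" where
  "prod3 E = (case E of (E1,E2,E3) \<Rightarrow> kron (kron E1 E2) E3)"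

definition separable3 :: "nat \<times> nat \<times> nat \<Rightarrow> nat \<times> nat \<times> nat \<Rightarrow> (cmat \<Rightarrow> cmat) \<Rightarrow> bool" where
  "separable3 a b M \<longleftrightarrow> (case a of (a1,a2,a3) \<Rightarrow> case b of (b1,b2,b3) \<Rightarrow>
     (\<exists>Es. (\<forall>(E1,E2,E3) \<in> set Es. E1 \<in> carrier_mat b1 a1 \<and> E2 \<in> carrier_mat b2 a2 \<and> E3 \<in> carrier_mat b3 a3) \<and>
       (\<forall>X \<in> carrier_mat (a1*a2*a3) (a1*a2*a3). M X = kraus_apply (b1*b2*b3) (map prod3 Es) X)))"

text \<open>Finite-round three-party LOCC protocols, as a finite tree.
  locc_tree bout d Ls: starting with local systems of dimensions d = (d1,d2,d3), a
  finite-round protocol ending with local systems of dimensions bout produces the (product)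
  Kraus operators Ls (each component maps the current local space to the final local space).
  In a round, one party applies a local quantum instrument: each outcome is a triple
  (d', Ks, Ls) where d' is the party's new local dimension, Ks are the Kraus operators of
  the CP map of that outcome, and Ls is the result of the continuation protocol, which may
  depend on the broadcast outcome.\<close>
inductive locc_tree :: "nat \<times> nat \<times> nat \<Rightarrow> nat \<times> nat \<times> nat \<Rightarrow> (cmat \<times> cmat \<times> cmat) list \<Rightarrow> bool"
  for bout :: "nat \<times> nat \<times> nat" where
  stop: "bout = (d1,d2,d3) \<Longrightarrow> locc_tree bout (d1,d2,d3) [(1\<^sub>m d1, 1\<^sub>m d2, 1\<^sub>m d3)]"
| round1: "\<lbrakk> \<forall>(d', Ks, Ls) \<in> set outs. set Ks \<subseteq> carrier_mat d' d1 \<and> locc_tree bout (d', d2, d3) Ls;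
     msum d1 d1 (concat (map (\<lambda>(d', Ks, Ls). map (\<lambda>K. adj K * K) Ks) outs)) = 1\<^sub>m d1 \<rbrakk>
   \<Longrightarrow> locc_tree bout (d1,d2,d3)
        (concat (map (\<lambda>(d', Ks, Ls). concat (map (\<lambda>K. map (\<lambda>(L1,L2,L3). (L1 * K, L2, L3)) Ls) Ks)) outs))"
| round2: "\<lbrakk> \<forall>(d', Ks, Ls) \<in> set outs. set Ks \<subseteq> carrier_mat d' d2 \<and> locc_tree bout (d1, d', d3) Ls;
     msum d2 d2 (concat (map (\<lambda>(d', Ks, Ls). map (\<lambda>K. adj K * K) Ks) outs)) = 1\<^sub>m d2 \<rbrakk>
   \<Longrightarrow> locc_tree bout (d1,d2,d3)
        (concat (map (\<lambda>(d', Ks, Ls). concat (map (\<lambda>K. map (\<lambda>(L1,L2,L3). (L1, L2 * K, L3)) Ls) Ks)) outs))"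
| round3: "\<lbrakk> \<forall>(d', Ks, Ls) \<in> set outs. set Ks \<subseteq> carrier_mat d' d3 \<and> locc_tree bout (d1, d2, d') Ls;
     msum d3 d3 (concat (map (\<lambda>(d', Ks, Ls). map (\<lambda>K. adj K * K) Ks) outs)) = 1\<^sub>m d3 \<rbrakk>
   \<Longrightarrow> locc_tree bout (d1,d2,d3)
        (concat (map (\<lambda>(d', Ks, Ls). concat (map (\<lambda>K. map (\<lambda>(L1,L2,L3). (L1, L2, L3 * K)) Ls) Ks)) outs))"

definition LOCC3 :: "nat \<times> nat \<times> nat \<Rightarrow> nat \<times> nat \<times> nat \<Rightarrow> (cmat \<Rightarrow> cmat) \<Rightarrow> bool" where
  "LOCC3 a b M \<longleftrightarrow> (case a of (a1,a2,a3) \<Rightarrow> case b of (b1,b2,b3) \<Rightarrow>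
     (\<exists>Ls. locc_tree b a Ls \<and>
       (\<forall>X \<in> carrier_mat (a1*a2*a3) (a1*a2*a3). M X = kraus_apply (b1*b2*b3) (map prod3 Ls) X)))"

definition qket :: "nat \<Rightarrow> cmat" where
  "qket x = (if x = 0 then ket 2 0 else if x = 1 then ket 2 1
             else if x = 2 then complex_of_real (1 / sqrt 2) \<cdot>\<^sub>m (ket 2 0 + ket 2 1)
             else complex_of_real (1 / sqrt 2) \<cdot>\<^sub>m (ket 2 0 - ket 2 1))"

definition bket :: "nat \<Rightarrow> cmat" where
  "bket x = kron (qket x) (ket 4 x)"

definition Tset :: "(nat \<times> nat \<times> nat) list" where
  "Tset = [(0,0,0),(1,2,0),(2,3,0),(3,1,0),(0,3,1),(1,1,1),(2,0,1),(3,2,1),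
           (0,1,2),(1,3,2),(2,2,2),(3,0,2),(0,2,3),(1,0,3),(2,1,3),(3,3,3)]"

text \<open>Gamma on (H1 (x) H2) (x) (H3 (x) H4) (x) (H5 (x) H6), dimension 8*8*8.\<close>
definition Gamma :: cmat where
  "Gamma = (1/2 :: complex) \<cdot>\<^sub>m msum 512 512
     (map (\<lambda>(a,b,c). kron (kron (proj (bket a)) (proj (bket b))) (proj (bket c))) Tset)"

text \<open>Canonical reordering of tensor factors: index in (H1(x)H3(x)H5)(x)(H2(x)H4(x)H6)
  (the Choi ordering) to index in H1(x)H2(x)H3(x)H4(x)H5(x)H6.\<close>
definition reidx :: "nat \<Rightarrow> nat" where
  "reidx x = (let inp = x div 64; out = x mod 64;
                  i1 = inp div 4; i3 = (inp div 2) mod 2; i5 = inp mod 2;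
                  i2 = out div 16; i4 = (out div 4) mod 4; i6 = out mod 4
              in ((i1*4+i2)*8 + (i3*4+i4))*8 + (i5*4+i6))"

definition Gamma_choi_order :: cmat where
  "Gamma_choi_order = mat 512 512 (\<lambda>(i,j). Gamma $$ (reidx i, reidx j))"

end

theory Submission
  imports Defs
begin


lemma mult_entry:
  assumes "A \<in> carrier_mat r n" "B \<in> carrier_mat n c" "i < r" "j < c"
  shows "(A * B) $$ (i,j) = (\<Sum>m<n. A $$ (i,m) * B $$ (m,j))"
  using assms by (auto simp: scalar_prod_def intro!: sum.cong)

lemma sum_div_mod:
  fixes f :: "nat \<Rightarrow> nat \<Rightarrow> 'a::comm_monoid_add"
  shows "(\<Sum>m<a*b. f (m div b) (m mod b)) = (\<Sum>x<a. \<Sum>y<b. f x y)"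
proof -
  have "(\<Sum>x<a. \<Sum>y<b. f x y) = (\<Sum>p\<in>{..<a}\<times>{..<b}. f (fst p) (snd p))"
    by (simp add: sum.cartesian_product case_prod_beta)
  also have "\<dots> = (\<Sum>m<a*b. f (m div b) (m mod b))"
  proof (rule sum.reindex_bij_witness[where i="\<lambda>m. (m div b, m mod b)" and j="\<lambda>p. fst p * b + snd p"])
    fix m assume m: "m \<in> {..<a*b}"
    then show "fst (m div b, m mod b) * b + snd (m div b, m mod b) = m" by simp
    from m have "b > 0" by (cases "b = 0") auto
    with m show "(m div b, m mod b) \<in> {..<a}\<times>{..<b}"
      by (auto simp: less_mult_imp_div_less)
  next
    fix p assume p: "p \<in> {..<a}\<times>{..<b}"
    then obtain x y where xy: "p = (x,y)" "x < a" "y < b" by auto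
    have "x * b + y < a * b"
    proof -
      have "x * b + y < x * b + b" using xy by simp
      also have "\<dots> = (x+1)*b" by simp
      also have "\<dots> \<le> a * b" using xy by (intro mult_le_mono1) simp
      finally show ?thesis .
    qed
    with xy show "((fst p * b + snd p) div b, (fst p * b + snd p) mod b) = p"
      "fst p * b + snd p \<in> {..<a*b}"
      "f ((fst p * b + snd p) div b) ((fst p * b + snd p) mod b) = f (fst p) (snd p)"
      by auto
  qed
  finally show ?thesis by simp
qed


lemma div_lt: "i < a * (b::nat) \<Longrightarrow> i div b < a"
  by (simp add: less_mult_imp_div_less)
lemma mod_lt: "i < a * (b::nat) \<Longrightarrow> i mod b < b"
  by (cases "b = 0") auto

lemma kron_dims[simp]: "dim_row (kron A B) = dim_row A * dim_row B" "dim_col (kron A B) = dim_col A * dim_col B"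
  unfolding kron_def by simp_all
lemma kron_carrier[simp]: "kron A B \<in> carrier_mat (dim_row A * dim_row B) (dim_col A * dim_col B)"
  by (rule carrier_matI) simp_all
lemma kron_carrierI: "A \<in> carrier_mat r1 c1 \<Longrightarrow> B \<in> carrier_mat r2 c2 \<Longrightarrow> kron A B \<in> carrier_mat (r1*r2) (c1*c2)"
  by (rule carrier_matI) auto
lemma kron_entry: "i < dim_row A * dim_row B \<Longrightarrow> j < dim_col A * dim_col B \<Longrightarrow>
  kron A B $$ (i,j) = A $$ (i div dim_row B, j div dim_col B) * B $$ (i mod dim_row B, j mod dim_col B)"
  by (simp add: kron_def)

lemma adj_dims[simp]: "dim_row (adj A) = dim_col A" "dim_col (adj A) = dim_row A"
  by (simp_all add: adj_def)
lemma adj_carrierI: "A \<in> carrier_mat r c \<Longrightarrow> adj A \<in> carrier_mat c r"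
  by (rule carrier_matI) auto
lemma adj_entry[simp]: "i < dim_col A \<Longrightarrow> j < dim_row A \<Longrightarrow> adj A $$ (i,j) = cnj (A $$ (j,i))"
  by (simp add: adj_def)

lemma adj_adj[simp]: "adj (adj A) = A"
  by (rule eq_matI) auto

lemma adj_mult: assumes A: "A \<in> carrier_mat r n" and B: "B \<in> carrier_mat n c"
  shows "adj (A * B) = adj B * adj A"
proof (rule eq_matI)
  fix i j assume "i < dim_row (adj B * adj A)" "j < dim_col (adj B * adj A)"
  then have i: "i < c" and j: "j < r" using assms by auto
  have "(adj B * adj A) $$ (i,j) = (\<Sum>m<n. adj B $$ (i,m) * adj A $$ (m,j))"
    by (rule mult_entry[OF adj_carrierI[OF B] adj_carrierI[OF A] i j])
  also have "\<dots> = (\<Sum>m<n. cnj (A $$ (j,m) * B $$ (m,i)))"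
    using assms i j by (intro sum.cong) auto
  also have "\<dots> = cnj ((A * B) $$ (j,i))"
    by (simp add: mult_entry[OF A B j i])
  also have "\<dots> = adj (A * B) $$ (i,j)" using assms i j by simp
  finally show "adj (A * B) $$ (i, j) = (adj B * adj A) $$ (i, j)" by simp
qed (use assms in auto)

lemma adj_one[simp]: "adj (1\<^sub>m n) = 1\<^sub>m n"
  by (rule eq_matI) auto

lemma adj_smult: "adj (a \<cdot>\<^sub>m A) = cnj a \<cdot>\<^sub>m adj A"
  by (rule eq_matI) auto

lemma kron_mult:
  assumes A: "A \<in> carrier_mat r1 c1" and B: "B \<in> carrier_mat c1 e1"
    and C: "C \<in> carrier_mat r2 c2" and D: "D \<in> carrier_mat c2 e2"
  shows "kron A C * kron B D = kron (A * B) (C * D)"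
proof (rule eq_matI)
  fix i j assume "i < dim_row (kron (A * B) (C * D))" "j < dim_col (kron (A * B) (C * D))"
  then have i: "i < r1 * r2" and j: "j < e1 * e2" using assms by auto
  have "(kron A C * kron B D) $$ (i,j) = (\<Sum>m<c1*c2. kron A C $$ (i,m) * kron B D $$ (m,j))"
    by (rule mult_entry[OF kron_carrierI[OF A C] kron_carrierI[OF B D] i j])
  also have "\<dots> = (\<Sum>m<c1*c2. (A $$ (i div r2, m div c2) * B $$ (m div c2, j div e2)) *
        (C $$ (i mod r2, m mod c2) * D $$ (m mod c2, j mod e2)))"
    using assms i j by (intro sum.cong refl) (auto simp: kron_entry div_lt mod_lt)
  also have "\<dots> = (\<Sum>x<c1. \<Sum>y<c2. (A $$ (i div r2, x) * B $$ (x, j div e2)) *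
        (C $$ (i mod r2, y) * D $$ (y, j mod e2)))"
    by (rule sum_div_mod)
  also have "\<dots> = (\<Sum>x<c1. A $$ (i div r2, x) * B $$ (x, j div e2)) *
        (\<Sum>y<c2. C $$ (i mod r2, y) * D $$ (y, j mod e2))"
    by (simp add: sum_product)
  also have "\<dots> = (A * B) $$ (i div r2, j div e2) * (C * D) $$ (i mod r2, j mod e2)"
  proof -
    have "(A * B) $$ (i div r2, j div e2) = (\<Sum>x<c1. A $$ (i div r2, x) * B $$ (x, j div e2))"
      using i j by (intro mult_entry[OF A B]) (auto simp: div_lt)
    moreover have "(C * D) $$ (i mod r2, j mod e2) = (\<Sum>y<c2. C $$ (i mod r2, y) * D $$ (y, j mod e2))"
      using i j by (intro mult_entry[OF C D]) (auto simp: mod_lt)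
    ultimately show ?thesis by simp
  qed
  also have "\<dots> = kron (A * B) (C * D) $$ (i,j)"
    using assms i j by (simp add: kron_entry)
  finally show "(kron A C * kron B D) $$ (i,j) = kron (A * B) (C * D) $$ (i,j)" .
qed (use assms in auto)

lemma adj_kron: "adj (kron A B) = kron (adj A) (adj B)"
  by (rule eq_matI) (auto simp: kron_entry div_lt mod_lt)

lemma kron_one: "kron (1\<^sub>m a) (1\<^sub>m b) = 1\<^sub>m (a*b)"
proof (rule eq_matI)
  fix i j assume "i < dim_row (1\<^sub>m (a * b))" "j < dim_col (1\<^sub>m (a * b))"
  then have i: "i < a*b" and j: "j < a*b" by auto
  have "(i div b = j div b \<and> i mod b = j mod b) = (i = j)"
    by (metis div_mod_decomp)
  then show "kron (1\<^sub>m a) (1\<^sub>m b) $$ (i, j) = 1\<^sub>m (a * b) $$ (i, j)"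
    using i j by (auto simp: kron_entry div_lt mod_lt)
qed auto

lemma kron_smult_left: "kron (c \<cdot>\<^sub>m A) B = c \<cdot>\<^sub>m kron A B"
  by (rule eq_matI) (auto simp: kron_entry div_lt mod_lt)
lemma kron_smult_right: "kron A (c \<cdot>\<^sub>m B) = c \<cdot>\<^sub>m kron A B"
  by (rule eq_matI) (auto simp: kron_entry div_lt mod_lt)


lemma msum_Nil[simp]: "msum r c [] = 0\<^sub>m r c" by (simp add: msum_def)
lemma msum_Cons[simp]: "msum r c (x # xs) = x + msum r c xs" by (simp add: msum_def)

lemma msum_carrier: "set Xs \<subseteq> carrier_mat r c \<Longrightarrow> msum r c Xs \<in> carrier_mat r c"
  by (induction Xs) auto

lemma msum_entry: "set Xs \<subseteq> carrier_mat r c \<Longrightarrow> i < r \<Longrightarrow> j < c \<Longrightarrow>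
   msum r c Xs $$ (i,j) = sum_list (map (\<lambda>X. X $$ (i,j)) Xs)"
proof (induction Xs)
  case (Cons X Xs)
  then have "msum r c Xs \<in> carrier_mat r c" by (intro msum_carrier) auto
  with Cons show ?case by auto
qed auto

lemma msum_append: "set Xs \<subseteq> carrier_mat r c \<Longrightarrow> set Ys \<subseteq> carrier_mat r c \<Longrightarrow>
   msum r c (Xs @ Ys) = msum r c Xs + msum r c Ys"
proof (induction Xs)
  case Nil then show ?case using msum_carrier[of Ys r c] by simp
next
  case (Cons X Xs)
  then show ?case using msum_carrier[of Ys r c] msum_carrier[of Xs r c]
    assoc_add_mat[of X r c "msum r c Xs" "msum r c Ys"] by simp
qed

lemma msum_concat: "(\<forall>xs\<in>set xss. set xs \<subseteq> carrier_mat r c) \<Longrightarrow>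
   msum r c (concat xss) = msum r c (map (msum r c) xss)"
proof (induction xss)
  case (Cons xs xss)
  then have "set (concat xss) \<subseteq> carrier_mat r c" by auto
  with Cons show ?case by (simp add: msum_append)
qed simp

lemma msum_mult3:
  assumes "\<forall>x\<in>set xs. f x \<in> carrier_mat n n" "B \<in> carrier_mat m n" "C \<in> carrier_mat n p"
  shows "msum m p (map (\<lambda>x. B * f x * C) xs) = B * msum n n (map f xs) * C"
  using assms
proof (induction xs)
  case Nil then show ?case by simp
next
  case (Cons x xs)
  have S: "msum n n (map f xs) \<in> carrier_mat n n" using Cons by (intro msum_carrier) auto
  have fx: "f x \<in> carrier_mat n n" using Cons by auto
  have "B * (f x + msum n n (map f xs)) * C = (B * f x + B * msum n n (map f xs)) * C"
    using Cons S fx by (simp add: mult_add_distrib_mat)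
  also have "\<dots> = B * f x * C + B * msum n n (map f xs) * C"
    using Cons S fx by (intro add_mult_distrib_mat) auto
  finally show ?case using Cons by simp
qed

lemma kron_add_left: "A \<in> carrier_mat r c \<Longrightarrow> B \<in> carrier_mat r c \<Longrightarrow> kron (A + B) C = kron A C + kron B C"
  by (rule eq_matI) (auto simp: kron_entry div_lt mod_lt algebra_simps)

lemma kron_zero_left: "kron (0\<^sub>m r c) C = 0\<^sub>m (r * dim_row C) (c * dim_col C)"
  by (rule eq_matI) (auto simp: kron_entry div_lt mod_lt)

lemma msum_kron: "\<forall>x\<in>set xs. f x \<in> carrier_mat r c \<Longrightarrow>
  msum (r * dim_row C) (c * dim_col C) (map (\<lambda>x. kron (f x) C) xs) = kron (msum r c (map f xs)) C"
proof (induction xs)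
  case Nil then show ?case by (simp add: kron_zero_left)
next
  case (Cons x xs)
  have S: "msum r c (map f xs) \<in> carrier_mat r c" using Cons by (intro msum_carrier) auto
  then show ?case using Cons kron_add_left[of "f x" r c "msum r c (map f xs)" C] by simp
qed


lemma kron_add_right: "A \<in> carrier_mat r c \<Longrightarrow> B \<in> carrier_mat r c \<Longrightarrow> kron C (A + B) = kron C A + kron C B"
  by (rule eq_matI) (auto simp: kron_entry div_lt mod_lt algebra_simps)

lemma kron_zero_right: "kron C (0\<^sub>m r c) = 0\<^sub>m (dim_row C * r) (dim_col C * c)"
  by (rule eq_matI) (auto simp: kron_entry div_lt mod_lt)

lemma msum_kron_right: "\<forall>x\<in>set xs. f x \<in> carrier_mat r c \<Longrightarrow>
  msum (dim_row C * r) (dim_col C * c) (map (\<lambda>x. kron C (f x)) xs) = kron C (msum r c (map f xs))"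
proof (induction xs)
  case Nil then show ?case by (simp add: kron_zero_right)
next
  case (Cons x xs)
  have S: "msum r c (map f xs) \<in> carrier_mat r c" using Cons by (intro msum_carrier) auto
  then show ?case using Cons kron_add_right[of "f x" r c "msum r c (map f xs)" C] by simp
qed

lemma prod3_simp: "prod3 (A,B,C) = kron (kron A B) C" by (simp add: prod3_def)

lemma prod3_carrier: "A \<in> carrier_mat r1 c1 \<Longrightarrow> B \<in> carrier_mat r2 c2 \<Longrightarrow> C \<in> carrier_mat r3 c3 \<Longrightarrow>
  prod3 (A,B,C) \<in> carrier_mat (r1*r2*r3) (c1*c2*c3)"
  unfolding prod3_simp by (intro kron_carrierI)

lemma prod3_mult:
  assumes "A \<in> carrier_mat r1 c1" "A' \<in> carrier_mat c1 e1"
    "B \<in> carrier_mat r2 c2" "B' \<in> carrier_mat c2 e2"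
    "C \<in> carrier_mat r3 c3" "C' \<in> carrier_mat c3 e3"
  shows "prod3 (A,B,C) * prod3 (A',B',C') = prod3 (A*A', B*B', C*C')"
  unfolding prod3_simp
  by (subst kron_mult[OF kron_carrierI kron_carrierI]; (rule assms)?; subst kron_mult; (rule assms)?; rule refl)

lemma adj_prod3: "adj (prod3 (A,B,C)) = prod3 (adj A, adj B, adj C)"
  by (simp add: prod3_simp adj_kron)

lemma prod3_one: "prod3 (1\<^sub>m a, 1\<^sub>m b, 1\<^sub>m c) = 1\<^sub>m (a*b*c)"
  by (simp add: prod3_simp kron_one)

lemma msum_prod3_1: "\<forall>x\<in>set xs. f x \<in> carrier_mat r c \<Longrightarrow> B \<in> carrier_mat r2 c2 \<Longrightarrow> C \<in> carrier_mat r3 c3 \<Longrightarrow>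
  msum (r*r2*r3) (c*c2*c3) (map (\<lambda>x. prod3 (f x, B, C)) xs) = prod3 (msum r c (map f xs), B, C)"
proof -
  assume a: "\<forall>x\<in>set xs. f x \<in> carrier_mat r c" "B \<in> carrier_mat r2 c2" "C \<in> carrier_mat r3 c3"
  have "msum (r*r2*r3) (c*c2*c3) (map (\<lambda>x. kron (kron (f x) B) C) xs)
      = kron (msum (r*r2) (c*c2) (map (\<lambda>x. kron (f x) B) xs)) C"
    using msum_kron[of xs "\<lambda>x. kron (f x) B" "r*r2" "c*c2" C] a by (auto intro: kron_carrierI)
  also have "msum (r*r2) (c*c2) (map (\<lambda>x. kron (f x) B) xs) = kron (msum r c (map f xs)) B"
    using msum_kron[of xs f r c B] a by auto
  finally show ?thesis by (simp add: prod3_simp)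
qed

lemma msum_prod3_2: "\<forall>x\<in>set xs. f x \<in> carrier_mat r c \<Longrightarrow> A \<in> carrier_mat r1 c1 \<Longrightarrow> C \<in> carrier_mat r3 c3 \<Longrightarrow>
  msum (r1*r*r3) (c1*c*c3) (map (\<lambda>x. prod3 (A, f x, C)) xs) = prod3 (A, msum r c (map f xs), C)"
proof -
  assume a: "\<forall>x\<in>set xs. f x \<in> carrier_mat r c" "A \<in> carrier_mat r1 c1" "C \<in> carrier_mat r3 c3"
  have "msum (r1*r*r3) (c1*c*c3) (map (\<lambda>x. kron (kron A (f x)) C) xs)
      = kron (msum (r1*r) (c1*c) (map (\<lambda>x. kron A (f x)) xs)) C"
    using msum_kron[of xs "\<lambda>x. kron A (f x)" "r1*r" "c1*c" C] a by (auto intro: kron_carrierI)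
  also have "msum (r1*r) (c1*c) (map (\<lambda>x. kron A (f x)) xs) = kron A (msum r c (map f xs))"
    using msum_kron_right[of xs f r c A] a by auto
  finally show ?thesis by (simp add: prod3_simp)
qed

lemma msum_prod3_3: "\<forall>x\<in>set xs. f x \<in> carrier_mat r c \<Longrightarrow> A \<in> carrier_mat r1 c1 \<Longrightarrow> B \<in> carrier_mat r2 c2 \<Longrightarrow>
  msum (r1*r2*r) (c1*c2*c) (map (\<lambda>x. prod3 (A, B, f x)) xs) = prod3 (A, B, msum r c (map f xs))"
proof -
  assume a: "\<forall>x\<in>set xs. f x \<in> carrier_mat r c" "A \<in> carrier_mat r1 c1" "B \<in> carrier_mat r2 c2"
  have "msum (r1*r2*r) (c1*c2*c) (map (\<lambda>x. kron (kron A B) (f x)) xs)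
      = kron (kron A B) (msum r c (map f xs))"
    using msum_kron_right[of xs f r c "kron A B"] a by auto
  then show ?thesis by (simp add: prod3_simp)
qed



lemma mem_round:
  assumes "x \<in> set (concat (map (\<lambda>(d', Ks, Ls). concat (map (\<lambda>K. map (g K) Ls) Ks)) outs))"
  obtains d' Ks Ls K y where "(d',Ks,Ls) \<in> set outs" "K \<in> set Ks" "y \<in> set Ls" "x = g K y"
  using assms by (auto 4 4)



lemma locc_carrier:
  assumes "locc_tree bout d Ls" "bout = (b1,b2,b3)"
  shows "\<forall>d1 d2 d3 L1 L2 L3. d = (d1,d2,d3) \<longrightarrow> (L1,L2,L3) \<in> set Ls \<longrightarrow>
     L1 \<in> carrier_mat b1 d1 \<and> L2 \<in> carrier_mat b2 d2 \<and> L3 \<in> carrier_mat b3 d3"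
  using assms
proof (induction rule: locc_tree.induct)
  case (stop d1 d2 d3)
  then show ?case by auto
next
  case (round1 outs d1 d2 d3)
  show ?case
  proof (intro allI impI)
    fix e1 e2 e3 L1 L2 L3 assume e: "(d1, d2, d3) = (e1, e2, e3)" and
      mem: "(L1, L2, L3) \<in> set (concat (map (\<lambda>(d', Ks, Ls). concat (map (\<lambda>K. map (\<lambda>(L1, L2, L3). (L1 * K, L2, L3)) Ls) Ks)) outs))"
    from mem obtain d' Ks Ls K y where o: "(d',Ks,Ls) \<in> set outs" and K: "K \<in> set Ks"
      and y: "y \<in> set Ls" and L: "(L1,L2,L3) = (\<lambda>(L1, L2, L3). (L1 * K, L2, L3)) y"
      by (rule mem_round)
    obtain M1 M2 M3 where yy: "y = (M1,M2,M3)" by (cases y) auto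
    have H: "set Ks \<subseteq> carrier_mat d' d1 \<and> (\<forall>L1 L2 L3. (L1,L2,L3) \<in> set Ls \<longrightarrow>
       L1 \<in> carrier_mat b1 d' \<and> L2 \<in> carrier_mat b2 d2 \<and> L3 \<in> carrier_mat b3 d3)"
      using bspec[OF round1.IH o] round1.prems by blast
    have "M1 \<in> carrier_mat b1 d' \<and> M2 \<in> carrier_mat b2 d2 \<and> M3 \<in> carrier_mat b3 d3"
      using H y yy by blast
    moreover from H K have "K \<in> carrier_mat d' d1" by blast
    ultimately show "L1 \<in> carrier_mat b1 e1 \<and> L2 \<in> carrier_mat b2 e2 \<and> L3 \<in> carrier_mat b3 e3"
      using e L yy by auto
  qed
next
  case (round2 outs d2 d1 d3)
  show ?case
  proof (intro allI impI)
    fix e1 e2 e3 L1 L2 L3 assume e: "(d1, d2, d3) = (e1, e2, e3)" and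
      mem: "(L1, L2, L3) \<in> set (concat (map (\<lambda>(d', Ks, Ls). concat (map (\<lambda>K. map (\<lambda>(L1, L2, L3). (L1, L2 * K, L3)) Ls) Ks)) outs))"
    from mem obtain d' Ks Ls K y where o: "(d',Ks,Ls) \<in> set outs" and K: "K \<in> set Ks"
      and y: "y \<in> set Ls" and L: "(L1,L2,L3) = (\<lambda>(L1, L2, L3). (L1, L2 * K, L3)) y"
      by (rule mem_round)
    obtain M1 M2 M3 where yy: "y = (M1,M2,M3)" by (cases y) auto
    have H: "set Ks \<subseteq> carrier_mat d' d2 \<and> (\<forall>L1 L2 L3. (L1,L2,L3) \<in> set Ls \<longrightarrow>
       L1 \<in> carrier_mat b1 d1 \<and> L2 \<in> carrier_mat b2 d' \<and> L3 \<in> carrier_mat b3 d3)"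
      using bspec[OF round2.IH o] round2.prems by blast
    have "M1 \<in> carrier_mat b1 d1 \<and> M2 \<in> carrier_mat b2 d' \<and> M3 \<in> carrier_mat b3 d3"
      using H y yy by blast
    moreover from H K have "K \<in> carrier_mat d' d2" by blast
    ultimately show "L1 \<in> carrier_mat b1 e1 \<and> L2 \<in> carrier_mat b2 e2 \<and> L3 \<in> carrier_mat b3 e3"
      using e L yy by auto
  qed
next
  case (round3 outs d3 d1 d2)
  show ?case
  proof (intro allI impI)
    fix e1 e2 e3 L1 L2 L3 assume e: "(d1, d2, d3) = (e1, e2, e3)" and
      mem: "(L1, L2, L3) \<in> set (concat (map (\<lambda>(d', Ks, Ls). concat (map (\<lambda>K. map (\<lambda>(L1, L2, L3). (L1, L2, L3 * K)) Ls) Ks)) outs))"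
    from mem obtain d' Ks Ls K y where o: "(d',Ks,Ls) \<in> set outs" and K: "K \<in> set Ks"
      and y: "y \<in> set Ls" and L: "(L1,L2,L3) = (\<lambda>(L1, L2, L3). (L1, L2, L3 * K)) y"
      by (rule mem_round)
    obtain M1 M2 M3 where yy: "y = (M1,M2,M3)" by (cases y) auto
    have H: "set Ks \<subseteq> carrier_mat d' d3 \<and> (\<forall>L1 L2 L3. (L1,L2,L3) \<in> set Ls \<longrightarrow>
       L1 \<in> carrier_mat b1 d1 \<and> L2 \<in> carrier_mat b2 d2 \<and> L3 \<in> carrier_mat b3 d')"
      using bspec[OF round3.IH o] round3.prems by blast
    have "M1 \<in> carrier_mat b1 d1 \<and> M2 \<in> carrier_mat b2 d2 \<and> M3 \<in> carrier_mat b3 d'"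
      using H y yy by blast
    moreover from H K have "K \<in> carrier_mat d' d3" by blast
    ultimately show "L1 \<in> carrier_mat b1 e1 \<and> L2 \<in> carrier_mat b2 e2 \<and> L3 \<in> carrier_mat b3 e3"
      using e L yy by auto
  qed
qed


definition Gm :: "cmat \<times> cmat \<times> cmat \<Rightarrow> cmat" where
  "Gm L = adj (prod3 L) * prod3 L"

lemma Gm_carrier: "A \<in> carrier_mat r1 c1 \<Longrightarrow> B \<in> carrier_mat r2 c2 \<Longrightarrow> C \<in> carrier_mat r3 c3 \<Longrightarrow>
  Gm (A,B,C) \<in> carrier_mat (c1*c2*c3) (c1*c2*c3)"
  unfolding Gm_def using prod3_carrier[of A r1 c1 B r2 c2 C r3 c3]
  by (intro mult_carrier_mat adj_carrierI) auto

lemma Gm_shift: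
  assumes L: "L1 \<in> carrier_mat b1 e1" "L2 \<in> carrier_mat b2 e2" "L3 \<in> carrier_mat b3 e3"
    and K: "K1 \<in> carrier_mat e1 d1" "K2 \<in> carrier_mat e2 d2" "K3 \<in> carrier_mat e3 d3"
  shows "Gm (L1*K1, L2*K2, L3*K3) = adj (prod3 (K1,K2,K3)) * Gm (L1,L2,L3) * prod3 (K1,K2,K3)"
proof -
  have P: "prod3 (L1*K1, L2*K2, L3*K3) = prod3 (L1,L2,L3) * prod3 (K1,K2,K3)"
    using prod3_mult[OF L(1) K(1) L(2) K(2) L(3) K(3)] by simp
  have c1: "prod3 (L1,L2,L3) \<in> carrier_mat (b1*b2*b3) (e1*e2*e3)" by (rule prod3_carrier[OF L])
  have c2: "prod3 (K1,K2,K3) \<in> carrier_mat (e1*e2*e3) (d1*d2*d3)" by (rule prod3_carrier[OF K])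
  have "Gm (L1*K1, L2*K2, L3*K3) = (adj (prod3 (K1,K2,K3)) * adj (prod3 (L1,L2,L3))) * (prod3 (L1,L2,L3) * prod3 (K1,K2,K3))"
    unfolding Gm_def P using adj_mult[OF c1 c2] by simp
  also have "\<dots> = adj (prod3 (K1,K2,K3)) * (adj (prod3 (L1,L2,L3)) * prod3 (L1,L2,L3)) * prod3 (K1,K2,K3)"
  proof -
    have a1: "adj (prod3 (L1,L2,L3)) \<in> carrier_mat (e1*e2*e3) (b1*b2*b3)" by (rule adj_carrierI[OF c1])
    have a2: "adj (prod3 (K1,K2,K3)) \<in> carrier_mat (d1*d2*d3) (e1*e2*e3)" by (rule adj_carrierI[OF c2])
    have "(adj (prod3 (K1,K2,K3)) * adj (prod3 (L1,L2,L3))) * (prod3 (L1,L2,L3) * prod3 (K1,K2,K3))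
      = adj (prod3 (K1,K2,K3)) * (adj (prod3 (L1,L2,L3)) * (prod3 (L1,L2,L3) * prod3 (K1,K2,K3)))"
      by (rule assoc_mult_mat[OF a2 a1 mult_carrier_mat[OF c1 c2]])
    also have "adj (prod3 (L1,L2,L3)) * (prod3 (L1,L2,L3) * prod3 (K1,K2,K3))
      = (adj (prod3 (L1,L2,L3)) * prod3 (L1,L2,L3)) * prod3 (K1,K2,K3)"
      by (rule assoc_mult_mat[OF a1 c1 c2, symmetric])
    also have "adj (prod3 (K1,K2,K3)) * ((adj (prod3 (L1,L2,L3)) * prod3 (L1,L2,L3)) * prod3 (K1,K2,K3))
      = adj (prod3 (K1,K2,K3)) * (adj (prod3 (L1,L2,L3)) * prod3 (L1,L2,L3)) * prod3 (K1,K2,K3)"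
      by (rule assoc_mult_mat[OF a2 mult_carrier_mat[OF a1 c1] c2, symmetric])
    finally show ?thesis .
  qed
  finally show ?thesis unfolding Gm_def .
qed

lemma branch:
  assumes Ls: "\<forall>(L1,L2,L3)\<in>set Ls. L1 \<in> carrier_mat b1 e1 \<and> L2 \<in> carrier_mat b2 e2 \<and> L3 \<in> carrier_mat b3 e3"
    and TP: "msum (e1*e2*e3) (e1*e2*e3) (map Gm Ls) = 1\<^sub>m (e1*e2*e3)"
    and K: "K1 \<in> carrier_mat e1 d1" "K2 \<in> carrier_mat e2 d2" "K3 \<in> carrier_mat e3 d3"
  shows "msum (d1*d2*d3) (d1*d2*d3) (map (\<lambda>(L1,L2,L3). Gm (L1*K1, L2*K2, L3*K3)) Ls)
     = prod3 (adj K1 * K1, adj K2 * K2, adj K3 * K3)"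
proof -
  let ?P = "prod3 (K1,K2,K3)"
  have cP: "?P \<in> carrier_mat (e1*e2*e3) (d1*d2*d3)" by (rule prod3_carrier[OF K])
  have "map (\<lambda>(L1,L2,L3). Gm (L1*K1, L2*K2, L3*K3)) Ls = map (\<lambda>L. adj ?P * Gm L * ?P) Ls"
    using Ls by (auto simp: Gm_shift[OF _ _ _ K])
  also have "msum (d1*d2*d3) (d1*d2*d3) \<dots> = adj ?P * msum (e1*e2*e3) (e1*e2*e3) (map Gm Ls) * ?P"
    using Ls cP by (intro msum_mult3) (auto intro: Gm_carrier adj_carrierI)
  also have "\<dots> = adj ?P * ?P"
  proof -
    have "adj ?P * 1\<^sub>m (e1*e2*e3) = adj ?P" using cP by (intro right_mult_one_mat adj_carrierI)
    then show ?thesis unfolding TP by simp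
  qed
  also have "\<dots> = prod3 (adj K1 * K1, adj K2 * K2, adj K3 * K3)"
    unfolding adj_prod3
    by (rule prod3_mult[OF adj_carrierI[OF K(1)] K(1) adj_carrierI[OF K(2)] K(2) adj_carrierI[OF K(3)] K(3)])
  finally show ?thesis .
qed


lemma msum_concat_map:
  assumes "\<forall>x\<in>set xs. \<forall>y\<in>set (f x). h y \<in> carrier_mat n n"
  shows "msum n n (map h (concat (map f xs))) = msum n n (map (\<lambda>x. msum n n (map h (f x))) xs)"
proof -
  have "map h (concat (map f xs)) = concat (map (\<lambda>x. map h (f x)) xs)" by (simp add: map_concat o_def)
  moreover have "msum n n (concat (map (\<lambda>x. map h (f x)) xs)) = msum n n (map (msum n n) (map (\<lambda>x. map h (f x)) xs))"
    using assms by (intro msum_concat) auto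
  ultimately show ?thesis by (simp add: o_def)
qed

lemma msum_leaves:
  assumes "\<forall>(d',Ks,Ls)\<in>set outs. \<forall>K\<in>set Ks. \<forall>y\<in>set Ls. h (g K y) \<in> carrier_mat n n"
  shows "msum n n (map h (concat (map (\<lambda>(d',Ks,Ls). concat (map (\<lambda>K. map (g K) Ls) Ks)) outs)))
    = msum n n (map (\<lambda>(d',Ks,Ls). msum n n (map (\<lambda>K. msum n n (map (\<lambda>y. h (g K y)) Ls)) Ks)) outs)"
proof -
  have "msum n n (map h (concat (map (\<lambda>(d',Ks,Ls). concat (map (\<lambda>K. map (g K) Ls) Ks)) outs)))
    = msum n n (map (\<lambda>x. msum n n (map h ((\<lambda>(d',Ks,Ls). concat (map (\<lambda>K. map (g K) Ls) Ks)) x))) outs)"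
    using assms by (intro msum_concat_map) auto
  also have "map (\<lambda>x. msum n n (map h ((\<lambda>(d',Ks,Ls). concat (map (\<lambda>K. map (g K) Ls) Ks)) x))) outs
     = map (\<lambda>(d',Ks,Ls). msum n n (map (\<lambda>K. msum n n (map (\<lambda>y. h (g K y)) Ls)) Ks)) outs"
  proof (rule map_cong[OF refl])
    fix x assume x: "x \<in> set outs"
    obtain d' Ks Ls where xx: "x = (d',Ks,Ls)" by (cases x) auto
    have "msum n n (map h (concat (map (\<lambda>K. map (g K) Ls) Ks))) = msum n n (map (\<lambda>K. msum n n (map h (map (g K) Ls))) Ks)"
      using assms x xx by (intro msum_concat_map) auto
    then show "msum n n (map h ((\<lambda>(d',Ks,Ls). concat (map (\<lambda>K. map (g K) Ls) Ks)) x))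
      = (\<lambda>(d',Ks,Ls). msum n n (map (\<lambda>K. msum n n (map (\<lambda>y. h (g K y)) Ls)) Ks)) x"
      using xx by (simp add: o_def)
  qed
  finally show ?thesis .
qed

lemma msum_nested:
  assumes "\<forall>(d',Ks,Ls)\<in>set outs. \<forall>K\<in>set Ks. h K \<in> carrier_mat n n"
  shows "msum n n (map (\<lambda>(d',Ks,Ls). msum n n (map h Ks)) outs)
     = msum n n (map h (concat (map (\<lambda>(d',Ks,Ls). Ks) outs)))"
proof -
  have "msum n n (map h (concat (map (\<lambda>(d',Ks,Ls). Ks) outs)))
     = msum n n (map (\<lambda>x. msum n n (map h ((\<lambda>(d',Ks,Ls). Ks) x))) outs)"
    using assms by (intro msum_concat_map) auto
  also have "map (\<lambda>x. msum n n (map h ((\<lambda>(d',Ks,Ls). Ks) x))) outs = map (\<lambda>(d',Ks,Ls). msum n n (map h Ks)) outs"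
    by (rule map_cong) (auto split: prod.splits)
  finally show ?thesis by simp
qed

lemma concat_Ks: "concat (map (\<lambda>(d', Ks, Ls). map f Ks) outs) = map f (concat (map (\<lambda>(d',Ks,Ls). Ks) outs))"
  by (induction outs) auto



lemma locc_tp:
  assumes "locc_tree bout d Ls" "bout = (b1,b2,b3)"
  shows "\<forall>d1 d2 d3. d = (d1,d2,d3) \<longrightarrow> msum (d1*d2*d3) (d1*d2*d3) (map Gm Ls) = 1\<^sub>m (d1*d2*d3)"
  using assms
proof (induction rule: locc_tree.induct)
  case (stop d1 d2 d3)
  have "Gm (1\<^sub>m d1, 1\<^sub>m d2, 1\<^sub>m d3) = 1\<^sub>m (d1*d2*d3)"
    by (simp add: Gm_def prod3_one)
  then show ?case by simp
next
  case (round1 outs d1 d2 d3)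
  have sub: "set Ks \<subseteq> carrier_mat d' d1 \<and> (\<forall>M1 M2 M3. (M1,M2,M3) \<in> set Ls \<longrightarrow>
       M1 \<in> carrier_mat b1 d' \<and> M2 \<in> carrier_mat b2 d2 \<and> M3 \<in> carrier_mat b3 d3) \<and>
       msum (d'*d2*d3) (d'*d2*d3) (map Gm Ls) = 1\<^sub>m (d'*d2*d3)"
    if o: "(d',Ks,Ls) \<in> set outs" for d' Ks Ls
  proof -
    have H: "set Ks \<subseteq> carrier_mat d' d1 \<and> locc_tree bout (d', d2, d3) Ls \<and>
       msum (d'*d2*d3) (d'*d2*d3) (map Gm Ls) = 1\<^sub>m (d'*d2*d3)"
      using bspec[OF round1.IH o] round1.prems by blast
    then have "\<forall>M1 M2 M3. (M1,M2,M3) \<in> set Ls \<longrightarrow>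
       M1 \<in> carrier_mat b1 d' \<and> M2 \<in> carrier_mat b2 d2 \<and> M3 \<in> carrier_mat b3 d3"
      using locc_carrier[of bout "(d', d2, d3)" Ls b1 b2 b3] round1.prems by blast
    with H show ?thesis by blast
  qed
  show ?case
  proof (intro allI impI)
    fix e1 e2 e3 assume e: "(d1, d2, d3) = (e1, e2, e3)"
    let ?N = "d1*d2*d3"
    have "msum ?N ?N (map Gm (concat (map (\<lambda>(d', Ks, Ls). concat (map (\<lambda>K. map (\<lambda>(L1, L2, L3). (L1 * K, L2, L3)) Ls) Ks)) outs)))
      = msum ?N ?N (map (\<lambda>(d',Ks,Ls). msum ?N ?N (map (\<lambda>K. msum ?N ?N (map (\<lambda>y. Gm ((\<lambda>(L1, L2, L3). (L1 * K, L2, L3)) y)) Ls)) Ks)) outs)"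
    proof (rule msum_leaves[where g="\<lambda>K (L1, L2, L3). (L1 * K, L2, L3)" and h=Gm])
      show "\<forall>(d',Ks,Ls)\<in>set outs. \<forall>K\<in>set Ks. \<forall>y\<in>set Ls. Gm ((\<lambda>(L1, L2, L3). (L1 * K, L2, L3)) y) \<in> carrier_mat ?N ?N"
      proof (intro ballI, clarify)
        fix d' Ks Ls K M1 M2 M3 assume o: "(d',Ks,Ls) \<in> set outs" and K: "K \<in> set Ks" and M: "(M1,M2,M3) \<in> set Ls"
        from sub[OF o] K M have "K \<in> carrier_mat d' d1" "M1 \<in> carrier_mat b1 d'" "M2 \<in> carrier_mat b2 d2" "M3 \<in> carrier_mat b3 d3"
          by blast+
        then show "Gm (M1 * K, M2, M3) \<in> carrier_mat ?N ?N" by (intro Gm_carrier) auto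
      qed
    qed
    also have "\<dots> = msum ?N ?N (map (\<lambda>(d',Ks,Ls). msum ?N ?N (map (\<lambda>K. prod3 (adj K * K, 1\<^sub>m d2, 1\<^sub>m d3)) Ks)) outs)"
    proof (rule arg_cong[where f="msum ?N ?N"], rule map_cong[OF refl], clarify)
      fix d' Ks Ls assume o: "(d',Ks,Ls) \<in> set outs"
      show "msum ?N ?N (map (\<lambda>K. msum ?N ?N (map (\<lambda>y. Gm ((\<lambda>(L1, L2, L3). (L1 * K, L2, L3)) y)) Ls)) Ks)
         = msum ?N ?N (map (\<lambda>K. prod3 (adj K * K, 1\<^sub>m d2, 1\<^sub>m d3)) Ks)"
      proof (rule arg_cong[where f="msum ?N ?N"], rule map_cong[OF refl])
        fix K assume K: "K \<in> set Ks"
        have cK: "K \<in> carrier_mat d' d1" using sub[OF o] K by blast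
        have Ls: "\<forall>(M1,M2,M3)\<in>set Ls. M1 \<in> carrier_mat b1 d' \<and> M2 \<in> carrier_mat b2 d2 \<and> M3 \<in> carrier_mat b3 d3"
          using sub[OF o] by blast
        have "map (\<lambda>y. Gm ((\<lambda>(L1, L2, L3). (L1 * K, L2, L3)) y)) Ls = map (\<lambda>(M1,M2,M3). Gm (M1 * K, M2 * 1\<^sub>m d2, M3 * 1\<^sub>m d3)) Ls"
        proof (rule map_cong[OF refl], clarify)
          fix M1 M2 M3 assume "(M1,M2,M3) \<in> set Ls"
          with Ls have "M1 \<in> carrier_mat b1 d'" "M2 \<in> carrier_mat b2 d2" "M3 \<in> carrier_mat b3 d3" by auto
          then show "Gm (M1 * K, M2, M3) = Gm (M1 * K, M2 * 1\<^sub>m d2, M3 * 1\<^sub>m d3)" by simp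
        qed
        also have "msum ?N ?N \<dots> = prod3 (adj (K) * K, adj (1\<^sub>m d2) * 1\<^sub>m d2, adj (1\<^sub>m d3) * 1\<^sub>m d3)"
          by (rule branch[OF Ls sub[OF o, THEN conjunct2, THEN conjunct2]]) (use cK in auto)
        also have "\<dots> = prod3 (adj K * K, 1\<^sub>m d2, 1\<^sub>m d3)" by simp
        finally show "msum ?N ?N (map (\<lambda>y. Gm ((\<lambda>(L1, L2, L3). (L1 * K, L2, L3)) y)) Ls) = prod3 (adj K * K, 1\<^sub>m d2, 1\<^sub>m d3)" .
      qed
    qed
    also have "\<dots> = msum ?N ?N (map (\<lambda>K. prod3 (adj K * K, 1\<^sub>m d2, 1\<^sub>m d3)) (concat (map (\<lambda>(d',Ks,Ls). Ks) outs)))"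
    proof (rule msum_nested, clarify)
      fix d' Ks Ls K assume o: "(d',Ks,Ls) \<in> set outs" and K: "K \<in> set Ks"
      have cK: "K \<in> carrier_mat d' d1" using sub[OF o] K by blast
      show "prod3 (adj K * K, 1\<^sub>m d2, 1\<^sub>m d3) \<in> carrier_mat ?N ?N"
        using prod3_carrier[of "adj K * K" d1 d1 "1\<^sub>m d2" d2 d2 "1\<^sub>m d3" d3 d3] mult_carrier_mat[OF adj_carrierI[OF cK] cK]
        by simp
    qed
    also have "\<dots> = prod3 (msum d1 d1 (map (\<lambda>K. adj K * K) (concat (map (\<lambda>(d',Ks,Ls). Ks) outs))), 1\<^sub>m d2, 1\<^sub>m d3)"
      using msum_prod3_1[of "concat (map (\<lambda>(d',Ks,Ls). Ks) outs)" "\<lambda>K. adj K * K" d1 d1] sub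
      by (fastforce intro: adj_carrierI)
    also have "\<dots> = 1\<^sub>m ?N"
      using round1.hyps by (simp add: concat_Ks prod3_one)
    finally show "msum (e1*e2*e3) (e1*e2*e3) (map Gm (concat (map (\<lambda>(d', Ks, Ls). concat (map (\<lambda>K. map (\<lambda>(L1, L2, L3). (L1 * K, L2, L3)) Ls) Ks)) outs))) = 1\<^sub>m (e1*e2*e3)"
      using e by simp
  qed
next
  case (round2 outs d2 d1 d3)
  have sub: "set Ks \<subseteq> carrier_mat d' d2 \<and> (\<forall>M1 M2 M3. (M1,M2,M3) \<in> set Ls \<longrightarrow>
       M1 \<in> carrier_mat b1 d1 \<and> M2 \<in> carrier_mat b2 d' \<and> M3 \<in> carrier_mat b3 d3) \<and>
       msum (d1*d'*d3) (d1*d'*d3) (map Gm Ls) = 1\<^sub>m (d1*d'*d3)"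
    if o: "(d',Ks,Ls) \<in> set outs" for d' Ks Ls
  proof -
    have H: "set Ks \<subseteq> carrier_mat d' d2 \<and> locc_tree bout (d1, d', d3) Ls \<and>
       msum (d1*d'*d3) (d1*d'*d3) (map Gm Ls) = 1\<^sub>m (d1*d'*d3)"
      using bspec[OF round2.IH o] round2.prems by blast
    then have "\<forall>M1 M2 M3. (M1,M2,M3) \<in> set Ls \<longrightarrow>
       M1 \<in> carrier_mat b1 d1 \<and> M2 \<in> carrier_mat b2 d' \<and> M3 \<in> carrier_mat b3 d3"
      using locc_carrier[of bout "(d1, d', d3)" Ls b1 b2 b3] round2.prems by blast
    with H show ?thesis by blast
  qed
  show ?case
  proof (intro allI impI)
    fix e1 e2 e3 assume e: "(d1, d2, d3) = (e1, e2, e3)"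
    let ?N = "d1*d2*d3"
    have "msum ?N ?N (map Gm (concat (map (\<lambda>(d', Ks, Ls). concat (map (\<lambda>K. map (\<lambda>(L1, L2, L3). (L1, L2 * K, L3)) Ls) Ks)) outs)))
      = msum ?N ?N (map (\<lambda>(d',Ks,Ls). msum ?N ?N (map (\<lambda>K. msum ?N ?N (map (\<lambda>y. Gm ((\<lambda>(L1, L2, L3). (L1, L2 * K, L3)) y)) Ls)) Ks)) outs)"
    proof (rule msum_leaves[where g="\<lambda>K (L1, L2, L3). (L1, L2 * K, L3)" and h=Gm])
      show "\<forall>(d',Ks,Ls)\<in>set outs. \<forall>K\<in>set Ks. \<forall>y\<in>set Ls. Gm ((\<lambda>(L1, L2, L3). (L1, L2 * K, L3)) y) \<in> carrier_mat ?N ?N"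
      proof (intro ballI, clarify)
        fix d' Ks Ls K M1 M2 M3 assume o: "(d',Ks,Ls) \<in> set outs" and K: "K \<in> set Ks" and M: "(M1,M2,M3) \<in> set Ls"
        from sub[OF o] K M have "K \<in> carrier_mat d' d2" "M1 \<in> carrier_mat b1 d1" "M2 \<in> carrier_mat b2 d'" "M3 \<in> carrier_mat b3 d3"
          by blast+
        then show "Gm (M1, M2 * K, M3) \<in> carrier_mat ?N ?N" by (intro Gm_carrier) auto
      qed
    qed
    also have "\<dots> = msum ?N ?N (map (\<lambda>(d',Ks,Ls). msum ?N ?N (map (\<lambda>K. prod3 (1\<^sub>m d1, adj K * K, 1\<^sub>m d3)) Ks)) outs)"
    proof (rule arg_cong[where f="msum ?N ?N"], rule map_cong[OF refl], clarify)
      fix d' Ks Ls assume o: "(d',Ks,Ls) \<in> set outs"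
      show "msum ?N ?N (map (\<lambda>K. msum ?N ?N (map (\<lambda>y. Gm ((\<lambda>(L1, L2, L3). (L1, L2 * K, L3)) y)) Ls)) Ks)
         = msum ?N ?N (map (\<lambda>K. prod3 (1\<^sub>m d1, adj K * K, 1\<^sub>m d3)) Ks)"
      proof (rule arg_cong[where f="msum ?N ?N"], rule map_cong[OF refl])
        fix K assume K: "K \<in> set Ks"
        have cK: "K \<in> carrier_mat d' d2" using sub[OF o] K by blast
        have Ls: "\<forall>(M1,M2,M3)\<in>set Ls. M1 \<in> carrier_mat b1 d1 \<and> M2 \<in> carrier_mat b2 d' \<and> M3 \<in> carrier_mat b3 d3"
          using sub[OF o] by blast
        have "map (\<lambda>y. Gm ((\<lambda>(L1, L2, L3). (L1, L2 * K, L3)) y)) Ls = map (\<lambda>(M1,M2,M3). Gm (M1 * 1\<^sub>m d1, M2 * K, M3 * 1\<^sub>m d3)) Ls"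
        proof (rule map_cong[OF refl], clarify)
          fix M1 M2 M3 assume "(M1,M2,M3) \<in> set Ls"
          with Ls have "M1 \<in> carrier_mat b1 d1" "M2 \<in> carrier_mat b2 d'" "M3 \<in> carrier_mat b3 d3" by auto
          then show "Gm (M1, M2 * K, M3) = Gm (M1 * 1\<^sub>m d1, M2 * K, M3 * 1\<^sub>m d3)" by simp
        qed
        also have "msum ?N ?N \<dots> = prod3 (adj (1\<^sub>m d1) * 1\<^sub>m d1, adj (K) * K, adj (1\<^sub>m d3) * 1\<^sub>m d3)"
          by (rule branch[OF Ls sub[OF o, THEN conjunct2, THEN conjunct2]]) (use cK in auto)
        also have "\<dots> = prod3 (1\<^sub>m d1, adj K * K, 1\<^sub>m d3)" by simp
        finally show "msum ?N ?N (map (\<lambda>y. Gm ((\<lambda>(L1, L2, L3). (L1, L2 * K, L3)) y)) Ls) = prod3 (1\<^sub>m d1, adj K * K, 1\<^sub>m d3)" .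
      qed
    qed
    also have "\<dots> = msum ?N ?N (map (\<lambda>K. prod3 (1\<^sub>m d1, adj K * K, 1\<^sub>m d3)) (concat (map (\<lambda>(d',Ks,Ls). Ks) outs)))"
    proof (rule msum_nested, clarify)
      fix d' Ks Ls K assume o: "(d',Ks,Ls) \<in> set outs" and K: "K \<in> set Ks"
      have cK: "K \<in> carrier_mat d' d2" using sub[OF o] K by blast
      show "prod3 (1\<^sub>m d1, adj K * K, 1\<^sub>m d3) \<in> carrier_mat ?N ?N"
        using prod3_carrier[of "1\<^sub>m d1" d1 d1 "adj K * K" d2 d2 "1\<^sub>m d3" d3 d3] mult_carrier_mat[OF adj_carrierI[OF cK] cK]
        by simp
    qed
    also have "\<dots> = prod3 (1\<^sub>m d1, msum d2 d2 (map (\<lambda>K. adj K * K) (concat (map (\<lambda>(d',Ks,Ls). Ks) outs))), 1\<^sub>m d3)"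
      using msum_prod3_2[of "concat (map (\<lambda>(d',Ks,Ls). Ks) outs)" "\<lambda>K. adj K * K" d2 d2] sub
      by (fastforce intro: adj_carrierI)
    also have "\<dots> = 1\<^sub>m ?N"
      using round2.hyps by (simp add: concat_Ks prod3_one)
    finally show "msum (e1*e2*e3) (e1*e2*e3) (map Gm (concat (map (\<lambda>(d', Ks, Ls). concat (map (\<lambda>K. map (\<lambda>(L1, L2, L3). (L1, L2 * K, L3)) Ls) Ks)) outs))) = 1\<^sub>m (e1*e2*e3)"
      using e by simp
  qed
next
  case (round3 outs d3 d1 d2)
  have sub: "set Ks \<subseteq> carrier_mat d' d3 \<and> (\<forall>M1 M2 M3. (M1,M2,M3) \<in> set Ls \<longrightarrow>
       M1 \<in> carrier_mat b1 d1 \<and> M2 \<in> carrier_mat b2 d2 \<and> M3 \<in> carrier_mat b3 d') \<and>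
       msum (d1*d2*d') (d1*d2*d') (map Gm Ls) = 1\<^sub>m (d1*d2*d')"
    if o: "(d',Ks,Ls) \<in> set outs" for d' Ks Ls
  proof -
    have H: "set Ks \<subseteq> carrier_mat d' d3 \<and> locc_tree bout (d1, d2, d') Ls \<and>
       msum (d1*d2*d') (d1*d2*d') (map Gm Ls) = 1\<^sub>m (d1*d2*d')"
      using bspec[OF round3.IH o] round3.prems by blast
    then have "\<forall>M1 M2 M3. (M1,M2,M3) \<in> set Ls \<longrightarrow>
       M1 \<in> carrier_mat b1 d1 \<and> M2 \<in> carrier_mat b2 d2 \<and> M3 \<in> carrier_mat b3 d'"
      using locc_carrier[of bout "(d1, d2, d')" Ls b1 b2 b3] round3.prems by blast
    with H show ?thesis by blast
  qed
  show ?case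
  proof (intro allI impI)
    fix e1 e2 e3 assume e: "(d1, d2, d3) = (e1, e2, e3)"
    let ?N = "d1*d2*d3"
    have "msum ?N ?N (map Gm (concat (map (\<lambda>(d', Ks, Ls). concat (map (\<lambda>K. map (\<lambda>(L1, L2, L3). (L1, L2, L3 * K)) Ls) Ks)) outs)))
      = msum ?N ?N (map (\<lambda>(d',Ks,Ls). msum ?N ?N (map (\<lambda>K. msum ?N ?N (map (\<lambda>y. Gm ((\<lambda>(L1, L2, L3). (L1, L2, L3 * K)) y)) Ls)) Ks)) outs)"
    proof (rule msum_leaves[where g="\<lambda>K (L1, L2, L3). (L1, L2, L3 * K)" and h=Gm])
      show "\<forall>(d',Ks,Ls)\<in>set outs. \<forall>K\<in>set Ks. \<forall>y\<in>set Ls. Gm ((\<lambda>(L1, L2, L3). (L1, L2, L3 * K)) y) \<in> carrier_mat ?N ?N"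
      proof (intro ballI, clarify)
        fix d' Ks Ls K M1 M2 M3 assume o: "(d',Ks,Ls) \<in> set outs" and K: "K \<in> set Ks" and M: "(M1,M2,M3) \<in> set Ls"
        from sub[OF o] K M have "K \<in> carrier_mat d' d3" "M1 \<in> carrier_mat b1 d1" "M2 \<in> carrier_mat b2 d2" "M3 \<in> carrier_mat b3 d'"
          by blast+
        then show "Gm (M1, M2, M3 * K) \<in> carrier_mat ?N ?N" by (intro Gm_carrier) auto
      qed
    qed
    also have "\<dots> = msum ?N ?N (map (\<lambda>(d',Ks,Ls). msum ?N ?N (map (\<lambda>K. prod3 (1\<^sub>m d1, 1\<^sub>m d2, adj K * K)) Ks)) outs)"
    proof (rule arg_cong[where f="msum ?N ?N"], rule map_cong[OF refl], clarify)
      fix d' Ks Ls assume o: "(d',Ks,Ls) \<in> set outs"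
      show "msum ?N ?N (map (\<lambda>K. msum ?N ?N (map (\<lambda>y. Gm ((\<lambda>(L1, L2, L3). (L1, L2, L3 * K)) y)) Ls)) Ks)
         = msum ?N ?N (map (\<lambda>K. prod3 (1\<^sub>m d1, 1\<^sub>m d2, adj K * K)) Ks)"
      proof (rule arg_cong[where f="msum ?N ?N"], rule map_cong[OF refl])
        fix K assume K: "K \<in> set Ks"
        have cK: "K \<in> carrier_mat d' d3" using sub[OF o] K by blast
        have Ls: "\<forall>(M1,M2,M3)\<in>set Ls. M1 \<in> carrier_mat b1 d1 \<and> M2 \<in> carrier_mat b2 d2 \<and> M3 \<in> carrier_mat b3 d'"
          using sub[OF o] by blast
        have "map (\<lambda>y. Gm ((\<lambda>(L1, L2, L3). (L1, L2, L3 * K)) y)) Ls = map (\<lambda>(M1,M2,M3). Gm (M1 * 1\<^sub>m d1, M2 * 1\<^sub>m d2, M3 * K)) Ls"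
        proof (rule map_cong[OF refl], clarify)
          fix M1 M2 M3 assume "(M1,M2,M3) \<in> set Ls"
          with Ls have "M1 \<in> carrier_mat b1 d1" "M2 \<in> carrier_mat b2 d2" "M3 \<in> carrier_mat b3 d'" by auto
          then show "Gm (M1, M2, M3 * K) = Gm (M1 * 1\<^sub>m d1, M2 * 1\<^sub>m d2, M3 * K)" by simp
        qed
        also have "msum ?N ?N \<dots> = prod3 (adj (1\<^sub>m d1) * 1\<^sub>m d1, adj (1\<^sub>m d2) * 1\<^sub>m d2, adj (K) * K)"
          by (rule branch[OF Ls sub[OF o, THEN conjunct2, THEN conjunct2]]) (use cK in auto)
        also have "\<dots> = prod3 (1\<^sub>m d1, 1\<^sub>m d2, adj K * K)" by simp
        finally show "msum ?N ?N (map (\<lambda>y. Gm ((\<lambda>(L1, L2, L3). (L1, L2, L3 * K)) y)) Ls) = prod3 (1\<^sub>m d1, 1\<^sub>m d2, adj K * K)" .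
      qed
    qed
    also have "\<dots> = msum ?N ?N (map (\<lambda>K. prod3 (1\<^sub>m d1, 1\<^sub>m d2, adj K * K)) (concat (map (\<lambda>(d',Ks,Ls). Ks) outs)))"
    proof (rule msum_nested, clarify)
      fix d' Ks Ls K assume o: "(d',Ks,Ls) \<in> set outs" and K: "K \<in> set Ks"
      have cK: "K \<in> carrier_mat d' d3" using sub[OF o] K by blast
      show "prod3 (1\<^sub>m d1, 1\<^sub>m d2, adj K * K) \<in> carrier_mat ?N ?N"
        using prod3_carrier[of "1\<^sub>m d1" d1 d1 "1\<^sub>m d2" d2 d2 "adj K * K" d3 d3] mult_carrier_mat[OF adj_carrierI[OF cK] cK]
        by simp
    qed
    also have "\<dots> = prod3 (1\<^sub>m d1, 1\<^sub>m d2, msum d3 d3 (map (\<lambda>K. adj K * K) (concat (map (\<lambda>(d',Ks,Ls). Ks) outs))))"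
      using msum_prod3_3[of "concat (map (\<lambda>(d',Ks,Ls). Ks) outs)" "\<lambda>K. adj K * K" d3 d3] sub
      by (fastforce intro: adj_carrierI)
    also have "\<dots> = 1\<^sub>m ?N"
      using round3.hyps by (simp add: concat_Ks prod3_one)
    finally show "msum (e1*e2*e3) (e1*e2*e3) (map Gm (concat (map (\<lambda>(d', Ks, Ls). concat (map (\<lambda>K. map (\<lambda>(L1, L2, L3). (L1, L2, L3 * K)) Ls) Ks)) outs))) = 1\<^sub>m (e1*e2*e3)"
      using e by simp
  qed
qed


definition qr :: "nat \<Rightarrow> nat \<Rightarrow> real" where
  "qr a i = (if a = 0 then (if i = 0 then 1 else 0) else if a = 1 then (if i = 0 then 0 else 1)
     else if a = 2 then 1 / sqrt 2 else (if i = 0 then 1 / sqrt 2 else - (1 / sqrt 2)))"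

definition qq :: "nat \<Rightarrow> nat \<Rightarrow> nat \<Rightarrow> real" where
  "qq a i j = (if a = 0 then (if i = 0 \<and> j = 0 then 1 else 0) else if a = 1 then (if i \<noteq> 0 \<and> j \<noteq> 0 then 1 else 0)
     else if a = 2 then 1/2 else (if i = j then 1/2 else -1/2))"

lemma qr_qq: "i < 2 \<Longrightarrow> j < 2 \<Longrightarrow> qr a i * qr a j = qq a i j"
  by (auto simp: qr_def qq_def less_2_cases_iff power2_eq_square[symmetric] power_divide)

definition V :: "nat \<times> nat \<times> nat \<Rightarrow> nat \<Rightarrow> real" where
  "V t k = (case t of (a,b,c) \<Rightarrow> qr a (k div 4) * qr b ((k div 2) mod 2) * qr c (k mod 2))"

definition VV :: "nat \<times> nat \<times> nat \<Rightarrow> nat \<Rightarrow> nat \<Rightarrow> real" where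
  "VV t k l = (case t of (a,b,c) \<Rightarrow> qq a (k div 4) (l div 4) * qq b ((k div 2) mod 2) ((l div 2) mod 2) * qq c (k mod 2) (l mod 2))"

lemma V_VV: "k < 8 \<Longrightarrow> l < 8 \<Longrightarrow> V t k * V t l = VV t k l"
proof -
  assume "k < 8" "l < 8"
  then have "k div 4 < 2" "l div 4 < 2" by auto
  then show ?thesis
    by (cases t) (simp add: V_def VV_def qr_qq[symmetric] mult_ac)
qed

definition enc :: "nat \<times> nat \<times> nat \<Rightarrow> nat" where
  "enc t = (case t of (a,b,c) \<Rightarrow> a*16 + b*4 + c)"

definition Rt :: "(nat \<Rightarrow> real) \<Rightarrow> nat \<Rightarrow> nat \<Rightarrow> real" where
  "Rt w k l = sum_list (map (\<lambda>t. w (enc t) * VV t k l) Tset)"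

lemma Rt_0_0: "Rt w 0 0 = (1) * w 0 + (1/4) * w 44 + (1/8) * w 42 + (1/4) * w 50 + (1/4) * w 11 + (1/8) * w 63"
  by (simp add: Rt_def VV_def qq_def Tset_def enc_def)

lemma Rt_0_1: "Rt w 0 1 = (1/8) * w 42 + (1/4) * w 50 + (-1/4) * w 11 + (-1/8) * w 63"
  by (simp add: Rt_def VV_def qq_def Tset_def enc_def)

lemma Rt_0_2: "Rt w 0 2 = (-1/4) * w 44 + (1/8) * w 42 + (1/4) * w 11 + (-1/8) * w 63"
  by (simp add: Rt_def VV_def qq_def Tset_def enc_def)

lemma Rt_0_3: "Rt w 0 3 = (1/8) * w 42 + (-1/4) * w 11 + (1/8) * w 63"
  by (simp add: Rt_def VV_def qq_def Tset_def enc_def)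

lemma Rt_0_4: "Rt w 0 4 = (1/4) * w 44 + (1/8) * w 42 + (-1/4) * w 50 + (-1/8) * w 63"
  by (simp add: Rt_def VV_def qq_def Tset_def enc_def)

lemma Rt_0_5: "Rt w 0 5 = (1/8) * w 42 + (-1/4) * w 50 + (1/8) * w 63"
  by (simp add: Rt_def VV_def qq_def Tset_def enc_def)

lemma Rt_1_0: "Rt w 1 0 = (1/8) * w 42 + (1/4) * w 50 + (-1/4) * w 11 + (-1/8) * w 63"
  by (simp add: Rt_def VV_def qq_def Tset_def enc_def)

lemma Rt_1_1: "Rt w 1 1 = (1/2) * w 13 + (1/2) * w 33 + (1/4) * w 57 + (1/8) * w 42 + (1/4) * w 50 + (1/4) * w 11 + (1/8) * w 63"
  by (simp add: Rt_def VV_def qq_def Tset_def enc_def)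

lemma Rt_1_3: "Rt w 1 3 = (-1/2) * w 13 + (1/4) * w 57 + (1/8) * w 42 + (1/4) * w 11 + (-1/8) * w 63"
  by (simp add: Rt_def VV_def qq_def Tset_def enc_def)

lemma Rt_1_5: "Rt w 1 5 = (1/2) * w 33 + (-1/4) * w 57 + (1/8) * w 42 + (-1/4) * w 50 + (-1/8) * w 63"
  by (simp add: Rt_def VV_def qq_def Tset_def enc_def)

lemma Rt_1_7: "Rt w 1 7 = (-1/4) * w 57 + (1/8) * w 42 + (1/8) * w 63"
  by (simp add: Rt_def VV_def qq_def Tset_def enc_def)

lemma Rt_2_0: "Rt w 2 0 = (-1/4) * w 44 + (1/8) * w 42 + (1/4) * w 11 + (-1/8) * w 63"
  by (simp add: Rt_def VV_def qq_def Tset_def enc_def)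

lemma Rt_2_2: "Rt w 2 2 = (1/4) * w 44 + (1/2) * w 52 + (1/2) * w 6 + (1/8) * w 42 + (1/4) * w 11 + (1/4) * w 39 + (1/8) * w 63"
  by (simp add: Rt_def VV_def qq_def Tset_def enc_def)

lemma Rt_2_3: "Rt w 2 3 = (1/2) * w 6 + (1/8) * w 42 + (-1/4) * w 11 + (-1/4) * w 39 + (-1/8) * w 63"
  by (simp add: Rt_def VV_def qq_def Tset_def enc_def)

lemma Rt_2_6: "Rt w 2 6 = (1/4) * w 44 + (-1/2) * w 52 + (1/8) * w 42 + (1/4) * w 39 + (-1/8) * w 63"
  by (simp add: Rt_def VV_def qq_def Tset_def enc_def)

lemma Rt_2_7: "Rt w 2 7 = (1/8) * w 42 + (-1/4) * w 39 + (1/8) * w 63"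
  by (simp add: Rt_def VV_def qq_def Tset_def enc_def)

lemma Rt_3_0: "Rt w 3 0 = (1/8) * w 42 + (-1/4) * w 11 + (1/8) * w 63"
  by (simp add: Rt_def VV_def qq_def Tset_def enc_def)

lemma Rt_4_0: "Rt w 4 0 = (1/4) * w 44 + (1/8) * w 42 + (-1/4) * w 50 + (-1/8) * w 63"
  by (simp add: Rt_def VV_def qq_def Tset_def enc_def)

lemma Rt_4_4: "Rt w 4 4 = (1/2) * w 24 + (1/4) * w 44 + (1/4) * w 30 + (1/8) * w 42 + (1/4) * w 50 + (1/2) * w 19 + (1/8) * w 63"
  by (simp add: Rt_def VV_def qq_def Tset_def enc_def)

lemma Rt_4_5: "Rt w 4 5 = (1/4) * w 30 + (1/8) * w 42 + (1/4) * w 50 + (-1/2) * w 19 + (-1/8) * w 63"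
  by (simp add: Rt_def VV_def qq_def Tset_def enc_def)

lemma Rt_4_6: "Rt w 4 6 = (1/2) * w 24 + (-1/4) * w 44 + (-1/4) * w 30 + (1/8) * w 42 + (-1/8) * w 63"
  by (simp add: Rt_def VV_def qq_def Tset_def enc_def)

lemma Rt_4_7: "Rt w 4 7 = (-1/4) * w 30 + (1/8) * w 42 + (1/8) * w 63"
  by (simp add: Rt_def VV_def qq_def Tset_def enc_def)

lemma Rt_5_0: "Rt w 5 0 = (1/8) * w 42 + (-1/4) * w 50 + (1/8) * w 63"
  by (simp add: Rt_def VV_def qq_def Tset_def enc_def)

lemmas Rt_evals = Rt_0_0 Rt_0_1 Rt_0_2 Rt_0_3 Rt_0_4 Rt_0_5 Rt_1_0 Rt_1_1 Rt_1_3 Rt_1_5 Rt_1_7 Rt_2_0 Rt_2_2 Rt_2_3 Rt_2_6 Rt_2_7 Rt_3_0 Rt_4_0 Rt_4_4 Rt_4_5 Rt_4_6 Rt_4_7 Rt_5_0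

lemma lin1:
  fixes w :: "nat \<Rightarrow> real"
  assumes z: "\<And>k l. k < 8 \<Longrightarrow> l < 8 \<Longrightarrow> \<not> ((k div 2) mod 2 = (l div 2) mod 2 \<and> k mod 2 = l mod 2) \<Longrightarrow> Rt w k l = 0"
    and e: "\<And>k l k' l'. k < 8 \<Longrightarrow> l < 8 \<Longrightarrow> k' < 8 \<Longrightarrow> l' < 8 \<Longrightarrow>
      ((k div 2) mod 2 = (l div 2) mod 2 \<and> k mod 2 = l mod 2) \<Longrightarrow>
      ((k' div 2) mod 2 = (l' div 2) mod 2 \<and> k' mod 2 = l' mod 2) \<Longrightarrow> k div 4 = k' div 4 \<Longrightarrow> l div 4 = l' div 4 \<Longrightarrow>
      Rt w k l = Rt w k' l'"
  shows "Rt w 0 4 = 0 \<and> Rt w 4 0 = 0 \<and> Rt w 0 0 = Rt w 4 4"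
proof -
  note R = Rt_def VV_def qq_def Tset_def enc_def
  have "Rt w 0 1 = 0" "Rt w 0 2 = 0" "Rt w 0 3 = 0" "Rt w 0 5 = 0"
       "Rt w 1 3 = 0" "Rt w 1 7 = 0" "Rt w 4 5 = 0" "Rt w 4 6 = 0" "Rt w 4 7 = 0"
       "Rt w 1 0 = 0" "Rt w 2 0 = 0" "Rt w 3 0 = 0" "Rt w 5 0 = 0"
    by (rule z; simp)+
  moreover have "Rt w 1 1 = Rt w 0 0" "Rt w 1 5 = Rt w 0 4"
    by (rule e; simp)+
  ultimately show ?thesis by (simp only: Rt_evals, intro conjI; linarith)
qed


lemma lin2:
  fixes w :: "nat \<Rightarrow> real"
  assumes z: "\<And>k l. k < 8 \<Longrightarrow> l < 8 \<Longrightarrow> \<not> (k div 4 = l div 4 \<and> k mod 2 = l mod 2) \<Longrightarrow> Rt w k l = 0"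
    and e: "\<And>k l k' l'. k < 8 \<Longrightarrow> l < 8 \<Longrightarrow> k' < 8 \<Longrightarrow> l' < 8 \<Longrightarrow>
      (k div 4 = l div 4 \<and> k mod 2 = l mod 2) \<Longrightarrow>
      (k' div 4 = l' div 4 \<and> k' mod 2 = l' mod 2) \<Longrightarrow> (k div 2) mod 2 = (k' div 2) mod 2 \<Longrightarrow> (l div 2) mod 2 = (l' div 2) mod 2 \<Longrightarrow>
      Rt w k l = Rt w k' l'"
  shows "Rt w 0 2 = 0 \<and> Rt w 2 0 = 0 \<and> Rt w 0 0 = Rt w 2 2"
proof -
  note R = Rt_def VV_def qq_def Tset_def enc_def
  have "Rt w 0 1 = 0" "Rt w 0 3 = 0" "Rt w 0 4 = 0" "Rt w 0 5 = 0"
       "Rt w 1 5 = 0" "Rt w 1 7 = 0" "Rt w 2 3 = 0" "Rt w 2 6 = 0" "Rt w 2 7 = 0"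
       "Rt w 1 0 = 0" "Rt w 3 0 = 0" "Rt w 4 0 = 0" "Rt w 5 0 = 0"
    by (rule z; simp)+
  moreover have "Rt w 1 1 = Rt w 0 0" "Rt w 1 3 = Rt w 0 2"
    by (rule e; simp)+
  ultimately show ?thesis by (simp only: Rt_evals, intro conjI; linarith)
qed

lemma lin3:
  fixes w :: "nat \<Rightarrow> real"
  assumes z: "\<And>k l. k < 8 \<Longrightarrow> l < 8 \<Longrightarrow> \<not> (k div 4 = l div 4 \<and> (k div 2) mod 2 = (l div 2) mod 2) \<Longrightarrow> Rt w k l = 0"
    and e: "\<And>k l k' l'. k < 8 \<Longrightarrow> l < 8 \<Longrightarrow> k' < 8 \<Longrightarrow> l' < 8 \<Longrightarrow>
      (k div 4 = l div 4 \<and> (k div 2) mod 2 = (l div 2) mod 2) \<Longrightarrow>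
      (k' div 4 = l' div 4 \<and> (k' div 2) mod 2 = (l' div 2) mod 2) \<Longrightarrow> k mod 2 = k' mod 2 \<Longrightarrow> l mod 2 = l' mod 2 \<Longrightarrow>
      Rt w k l = Rt w k' l'"
  shows "Rt w 0 1 = 0 \<and> Rt w 1 0 = 0 \<and> Rt w 0 0 = Rt w 1 1"
proof -
  note R = Rt_def VV_def qq_def Tset_def enc_def
  have "Rt w 0 2 = 0" "Rt w 0 3 = 0" "Rt w 0 4 = 0" "Rt w 0 5 = 0"
       "Rt w 1 3 = 0" "Rt w 1 5 = 0" "Rt w 1 7 = 0" "Rt w 2 6 = 0" "Rt w 2 7 = 0"
       "Rt w 2 0 = 0" "Rt w 3 0 = 0" "Rt w 4 0 = 0" "Rt w 5 0 = 0"
    by (rule z; simp)+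
  moreover have "Rt w 2 2 = Rt w 0 0" "Rt w 2 3 = Rt w 0 1"
    by (rule e; simp)+
  ultimately show ?thesis by (simp only: Rt_evals, intro conjI; linarith)
qed

definition dec :: "nat \<Rightarrow> nat \<times> nat \<times> nat" where
  "dec o' = (o' div 16, (o' div 4) mod 4, o' mod 4)"

definition Vm :: "nat \<Rightarrow> nat \<Rightarrow> real" where
  "Vm o' k = (if dec o' \<in> set Tset then V (dec o') k else 0)"

lemma enc_dec: "enc (dec o') = o'"
proof -
  have "o' mod 16 = 4 * ((o' div 4) mod 4) + o' mod 4"
    using mod_mult2_eq[of o' 4 4] by simp
  then show ?thesis unfolding enc_def dec_def
    using div_mult_mod_eq[of o' 16] by simp
qed

lemma dec_enc: "t \<in> set Tset \<Longrightarrow> dec (enc t) = t"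
  unfolding Tset_def by (auto simp: enc_def dec_def)

lemma enc_lt: "t \<in> set Tset \<Longrightarrow> enc t < 64"
  unfolding Tset_def by (auto simp: enc_def)

lemma distinct_Tset: "distinct Tset" by (simp add: Tset_def)

lemma sum_T:
  fixes g :: "nat \<times> nat \<times> nat \<Rightarrow> 'a::comm_monoid_add"
  shows "(\<Sum>o'<64. if dec o' \<in> set Tset then g (dec o') else 0) = sum_list (map g Tset)"
proof -
  have "(\<Sum>o'<64. if dec o' \<in> set Tset then g (dec o') else 0) = (\<Sum>o'\<in>{o'\<in>{..<64}. dec o' \<in> set Tset}. g (dec o'))"
    by (rule sum.inter_filter[symmetric]) simp
  also have "{o'\<in>{..<64}. dec o' \<in> set Tset} = enc ` set Tset"
  proof
    show "{o'\<in>{..<64}. dec o' \<in> set Tset} \<subseteq> enc ` set Tset"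
      using enc_dec by (auto intro: image_eqI[where x="dec _"])
    show "enc ` set Tset \<subseteq> {o'\<in>{..<64}. dec o' \<in> set Tset}"
      using enc_lt dec_enc by auto
  qed
  also have "(\<Sum>o'\<in>enc ` set Tset. g (dec o')) = (\<Sum>t\<in>set Tset. g (dec (enc t)))"
    by (rule sum.reindex[unfolded o_def]) (metis dec_enc inj_onI)
  also have "\<dots> = (\<Sum>t\<in>set Tset. g t)" by (simp add: dec_enc)
  also have "\<dots> = sum_list (map g Tset)" using distinct_Tset by (simp add: sum_list_distinct_conv_sum_set)
  finally show ?thesis .
qed

lemma sum_Vm: "k < 8 \<Longrightarrow> l < 8 \<Longrightarrow> (\<Sum>o'<64. w o' * Vm o' k * Vm o' l) = Rt w k l"
proof -
  assume kl: "k < 8" "l < 8"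
  have "(\<Sum>o'<64. w o' * Vm o' k * Vm o' l) = (\<Sum>o'<64. if dec o' \<in> set Tset then w (enc (dec o')) * VV (dec o') k l else 0)"
    using kl by (intro sum.cong) (auto simp: Vm_def enc_dec V_VV[symmetric])
  also have "\<dots> = Rt w k l" unfolding Rt_def by (rule sum_T)
  finally show ?thesis .
qed

lemma dec_inj: "o1 < 64 \<Longrightarrow> o2 < 64 \<Longrightarrow> dec o1 = dec o2 \<longleftrightarrow> o1 = o2"
  by (metis enc_dec)

lemma delta_T:
  "sum_list (map (\<lambda>t. if u = t \<and> v = t then F t else 0) Tset) = (if u = v \<and> u \<in> set Tset then F u else (0::'a::comm_monoid_add))"
proof -
  have "sum_list (map (\<lambda>t. if u = t \<and> v = t then F t else 0) Tset) = (\<Sum>t\<in>set Tset. if u = t \<and> v = t then F t else 0)"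
    using distinct_Tset by (simp add: sum_list_distinct_conv_sum_set)
  also have "\<dots> = (if u = v \<and> u \<in> set Tset then F u else 0)"
  proof (cases "u = v")
    case True
    then show ?thesis by (simp add: sum.delta eq_commute[of u])
  next
    case False
    then have "\<And>t. (if u = t \<and> v = t then F t else 0) = 0" by auto
    then show ?thesis using False by simp
  qed
  finally show ?thesis .
qed


lemma ket_carrier: "ket d k \<in> carrier_mat d 1" by (simp add: ket_def)
lemma ket_entry: "i < d \<Longrightarrow> ket d k $$ (i,0) = (if i = k then 1 else 0)" by (simp add: ket_def)

lemma qket_carrier: "qket a \<in> carrier_mat 2 1"
  unfolding qket_def using ket_carrier[of 2 0] ket_carrier[of 2 1] by auto

lemma qket_entry: "i < 2 \<Longrightarrow> qket a $$ (i,0) = complex_of_real (qr a i)"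
  by (auto simp: qket_def qr_def ket_def less_2_cases_iff)

lemma bket_carrier: "bket a \<in> carrier_mat 8 1"
  unfolding bket_def using kron_carrierI[OF qket_carrier ket_carrier[of 4 a]] by simp

lemma bket_entry: "x < 8 \<Longrightarrow> bket a $$ (x,0) = complex_of_real (qr a (x div 4)) * (if x mod 4 = a then 1 else 0)"
proof -
  assume x: "x < 8"
  have "x div 4 < 2" using x by auto
  have d: "dim_row (ket 4 a) = 4" "dim_col (ket 4 a) = 1" "dim_row (qket a) = 2" "dim_col (qket a) = 1"
    using qket_carrier ket_carrier[of 4 a] by auto
  have "bket a $$ (x,0) = qket a $$ (x div 4, 0) * ket 4 a $$ (x mod 4, 0)"
    unfolding bket_def using x d by (simp add: kron_entry)
  then show ?thesis using \<open>x div 4 < 2\<close> by (simp add: qket_entry ket_entry)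
qed

lemma proj_carrier: "v \<in> carrier_mat n 1 \<Longrightarrow> proj v \<in> carrier_mat n n"
  unfolding proj_def by (intro mult_carrier_mat[OF _ adj_carrierI])

lemma proj_entry: "v \<in> carrier_mat n 1 \<Longrightarrow> x < n \<Longrightarrow> y < n \<Longrightarrow> proj v $$ (x,y) = v $$ (x,0) * cnj (v $$ (y,0))"
  unfolding proj_def by (subst mult_entry[OF _ adj_carrierI, of v n 1 v n]) auto

lemma reidx_lemma:
  assumes "k < 8" "o' < 64"
  shows "reidx (k*64+o') div 64 = (k div 4)*4 + o' div 16"
    "(reidx (k*64+o') div 8) mod 8 = ((k div 2) mod 2)*4 + (o' div 4) mod 4"
    "reidx (k*64+o') mod 8 = (k mod 2)*4 + o' mod 4"
    "reidx (k*64+o') < 512"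
proof -
  define A where "A = (k div 4)*4 + o' div 16"
  define B where "B = ((k div 2) mod 2)*4 + (o' div 4) mod 4"
  define C where "C = (k mod 2)*4 + o' mod 4"
  have r: "reidx (k*64+o') = (A*8+B)*8+C"
    unfolding reidx_def A_def B_def C_def Let_def using assms by simp
  have "k div 4 < 2" "o' div 16 < 4" "(k div 2) mod 2 < 2" "(o' div 4) mod 4 < 4" "k mod 2 < 2" "o' mod 4 < 4"
    using assms by auto
  then have "A < 8" "B < 8" "C < 8" unfolding A_def B_def C_def by linarith+
  then show "reidx (k*64+o') div 64 = A" "(reidx (k*64+o') div 8) mod 8 = B" "reidx (k*64+o') mod 8 = C"
    "reidx (k*64+o') < 512"
  proof -
    have r1: "reidx (k*64+o') = (B*8+C) + A*64" unfolding r by simp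
    have r2: "reidx (k*64+o') = C + (A*8+B)*8" unfolding r by simp
    have m: "B*8+C < 64" using \<open>B < 8\<close> \<open>C < 8\<close> by linarith
    show "reidx (k*64+o') div 64 = A" unfolding r1 using m by simp
    have "reidx (k*64+o') div 8 = (A*8+B) + C div 8" unfolding r2 by (rule div_mult_self1) simp
    also have "\<dots> = B + A*8" using \<open>C < 8\<close> by simp
    finally have d8: "reidx (k*64+o') div 8 = B + A*8" .
    show "(reidx (k*64+o') div 8) mod 8 = B" unfolding d8 using \<open>B < 8\<close> by (subst mod_mult_self1) simp
    show "reidx (k*64+o') mod 8 = C" unfolding r2 using \<open>C < 8\<close> by (subst mod_mult_self1) simp
    show "reidx (k*64+o') < 512" unfolding r1 using m \<open>A < 8\<close> by linarith
  qed
qed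


lemma div4_aux: "q < (4::nat) \<Longrightarrow> (p*4+q) div 4 = p" "q < (4::nat) \<Longrightarrow> (p*4+q) mod 4 = q"
  by simp_all

lemma pb_entry:
  assumes "p1 < 2" "q1 < 4" "p2 < 2" "q2 < 4"
  shows "proj (bket a) $$ (p1*4+q1, p2*4+q2) =
    (if q1 = a \<and> q2 = a then complex_of_real (qr a p1 * qr a p2) else 0)"
proof -
  have "p1*4+q1 < 8" "p2*4+q2 < 8" using assms by linarith+
  then have "proj (bket a) $$ (p1*4+q1, p2*4+q2) = bket a $$ (p1*4+q1, 0) * cnj (bket a $$ (p2*4+q2, 0))"
    by (intro proj_entry[OF bket_carrier])
  also have "\<dots> = (if q1 = a \<and> q2 = a then complex_of_real (qr a p1 * qr a p2) else 0)"
    using \<open>p1*4+q1 < 8\<close> \<open>p2*4+q2 < 8\<close> assms by (simp add: bket_entry div4_aux)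
  finally show ?thesis .
qed

definition Gf :: "nat \<times> nat \<times> nat \<Rightarrow> cmat" where
  "Gf t = (case t of (a,b,c) \<Rightarrow> kron (kron (proj (bket a)) (proj (bket b))) (proj (bket c)))"

lemma Gf_carrier: "Gf t \<in> carrier_mat 512 512"
proof -
  obtain a b c where t: "t = (a,b,c)" by (cases t) auto
  have "Gf t \<in> carrier_mat (8*8*8) (8*8*8)"
    unfolding t Gf_def prod3_simp[symmetric] prod.case
    by (rule prod3_carrier[OF proj_carrier[OF bket_carrier] proj_carrier[OF bket_carrier] proj_carrier[OF bket_carrier]])
  then show ?thesis by simp
qed

lemma Gf_entry:
  assumes "k < 8" "l < 8" "o1 < 64" "o2 < 64"
  shows "Gf t $$ (reidx (k*64+o1), reidx (l*64+o2)) =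
    (if dec o1 = t \<and> dec o2 = t then complex_of_real (V t k * V t l) else 0)"
proof -
  obtain a b c where t: "t = (a,b,c)" by (cases t) auto
  let ?I = "reidx (k*64+o1)" and ?J = "reidx (l*64+o2)"
  note RI = reidx_lemma[OF assms(1,3)] and RJ = reidx_lemma[OF assms(2,4)]
  have P: "proj (bket x) \<in> carrier_mat 8 8" for x by (rule proj_carrier[OF bket_carrier])
  have dimsP: "dim_row (proj (bket x)) = 8" "dim_col (proj (bket x)) = 8" for x using P[of x] by auto
  have "Gf t $$ (?I, ?J) = proj (bket a) $$ (?I div 64, ?J div 64) * proj (bket b) $$ ((?I div 8) mod 8, (?J div 8) mod 8)
      * proj (bket c) $$ (?I mod 8, ?J mod 8)"
  proof -
    have I8: "?I div 8 < 64" "?J div 8 < 64" using RI(4) RJ(4) by auto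
    have "Gf t $$ (?I, ?J) = kron (proj (bket a)) (proj (bket b)) $$ (?I div 8, ?J div 8) * proj (bket c) $$ (?I mod 8, ?J mod 8)"
      unfolding t Gf_def using RI(4) RJ(4) by (simp add: kron_entry dimsP)
    also have "kron (proj (bket a)) (proj (bket b)) $$ (?I div 8, ?J div 8) =
        proj (bket a) $$ (?I div 8 div 8, ?J div 8 div 8) * proj (bket b) $$ ((?I div 8) mod 8, (?J div 8) mod 8)"
      using I8 by (simp add: kron_entry dimsP)
    also have "?I div 8 div 8 = ?I div 64" by (simp add: div_mult2_eq)
    also have "?J div 8 div 8 = ?J div 64" by (simp add: div_mult2_eq)
    finally show ?thesis .
  qed
  also have "\<dots> = (if dec o1 = t \<and> dec o2 = t then complex_of_real (V t k * V t l) else 0)"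
  proof -
    have h: "k div 4 < 2" "o1 div 16 < 4" "(k div 2) mod 2 < 2" "(o1 div 4) mod 4 < 4" "k mod 2 < 2" "o1 mod 4 < 4"
      "l div 4 < 2" "o2 div 16 < 4" "(l div 2) mod 2 < 2" "(o2 div 4) mod 4 < 4" "l mod 2 < 2" "o2 mod 4 < 4"
      using assms by auto
    show ?thesis unfolding RI(1-3) RJ(1-3) pb_entry[OF h(1,2,7,8)] pb_entry[OF h(3,4,9,10)] pb_entry[OF h(5,6,11,12)]
      by (simp add: t dec_def V_def mult_ac)
  qed
  finally show ?thesis .
qed

lemma Gamma_entry:
  assumes "I < 512" "J < 512"
  shows "Gamma $$ (I,J) = (1/2) * sum_list (map (\<lambda>t. Gf t $$ (I,J)) Tset)"
proof -
  have m: "map (\<lambda>(a,b,c). kron (kron (proj (bket a)) (proj (bket b))) (proj (bket c))) Tset = map Gf Tset"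
    by (simp add: Gf_def[abs_def])
  have c: "set (map Gf Tset) \<subseteq> carrier_mat 512 512" using Gf_carrier by auto
  show ?thesis unfolding Gamma_def m using assms msum_carrier[OF c]
    by (simp add: msum_entry[OF c] o_def)
qed

lemma Gamma_choi_entry:
  assumes "k < 8" "l < 8" "o1 < 64" "o2 < 64"
  shows "Gamma_choi_order $$ (k*64+o1, l*64+o2) = (if o1 = o2 then complex_of_real (Vm o1 k * Vm o1 l / 2) else 0)"
proof -
  have i: "k*64+o1 < 512" "l*64+o2 < 512" using assms by linarith+
  have "Gamma_choi_order $$ (k*64+o1, l*64+o2) = Gamma $$ (reidx (k*64+o1), reidx (l*64+o2))"
    unfolding Gamma_choi_order_def using i by simp
  also have "\<dots> = (1/2) * sum_list (map (\<lambda>t. if dec o1 = t \<and> dec o2 = t then complex_of_real (V t k * V t l) else 0) Tset)"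
    using reidx_lemma(4)[OF assms(1,3)] reidx_lemma(4)[OF assms(2,4)]
    by (simp add: Gamma_entry Gf_entry[OF assms])
  also have "\<dots> = (1/2) * (if dec o1 = dec o2 \<and> dec o1 \<in> set Tset then complex_of_real (V (dec o1) k * V (dec o1) l) else 0)"
    by (simp only: delta_T)
  also have "\<dots> = (if o1 = o2 then complex_of_real (Vm o1 k * Vm o1 l / 2) else 0)"
    using dec_inj[OF assms(3,4)] by (auto simp: Vm_def)
  finally show ?thesis .
qed


lemma sumsq_zero:
  assumes "sum_list (map (\<lambda>x. z x * cnj (z x)) xs) = 0"
  shows "\<forall>x\<in>set xs. z x = 0"
proof -
  have "sum_list (map (\<lambda>x. z x * cnj (z x)) xs) = sum_list (map complex_of_real (map (\<lambda>x. (cmod (z x))\<^sup>2) xs))"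
    by (simp only: map_map o_def complex_norm_square)
  also have "\<dots> = complex_of_real (sum_list (map (\<lambda>x. (cmod (z x))\<^sup>2) xs))" by (rule sum_list_of_real)
  finally have "sum_list (map (\<lambda>x. (cmod (z x))\<^sup>2) xs) = 0" using assms by simp
  then have "\<forall>y\<in>set (map (\<lambda>x. (cmod (z x))\<^sup>2) xs). y = 0"
    by (subst (asm) sum_list_nonneg_eq_0_iff) auto
  then show ?thesis by auto
qed

lemma row_prop:
  fixes r :: "'x \<Rightarrow> nat \<Rightarrow> complex" and u :: "nat \<Rightarrow> real"
  assumes H: "\<And>k l. k < 8 \<Longrightarrow> l < 8 \<Longrightarrow> sum_list (map (\<lambda>y. r y k * cnj (r y l)) xs) = complex_of_real (u k * u l / 2)"
    and x: "x \<in> set xs"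
  shows "\<exists>c. \<forall>k::nat. k < 8 \<longrightarrow> r x k = c * complex_of_real (u k)"
proof -
  have F1: "r x k * complex_of_real (u m) = r x m * complex_of_real (u k)" if km: "k < 8" "m < 8" for k m :: nat
  proof -
    let ?z = "\<lambda>y. r y k * complex_of_real (u m) - r y m * complex_of_real (u k)"
    have e: "?z y * cnj (?z y) = complex_of_real (u m * u m) * (r y k * cnj (r y k)) - complex_of_real (u m * u k) * (r y k * cnj (r y m))
       - complex_of_real (u k * u m) * (r y m * cnj (r y k)) + complex_of_real (u k * u k) * (r y m * cnj (r y m))" for y
      by (simp add: algebra_simps)
    have "sum_list (map (\<lambda>y. ?z y * cnj (?z y)) xs) =
      complex_of_real (u m * u m) * sum_list (map (\<lambda>y. r y k * cnj (r y k)) xs) - complex_of_real (u m * u k) * sum_list (map (\<lambda>y. r y k * cnj (r y m)) xs)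
       - complex_of_real (u k * u m) * sum_list (map (\<lambda>y. r y m * cnj (r y k)) xs) + complex_of_real (u k * u k) * sum_list (map (\<lambda>y. r y m * cnj (r y m)) xs)"
      unfolding e by (simp add: sum_list_addf sum_list_subtractf sum_list_const_mult)
    also have "\<dots> = 0"
      unfolding H[OF km(1) km(1)] H[OF km(1) km(2)] H[OF km(2) km(1)] H[OF km(2) km(2)]
      by (simp add: field_simps)
    finally have "\<forall>y\<in>set xs. ?z y = 0" by (rule sumsq_zero)
    with x show ?thesis by simp
  qed
  have F2: "r x k = 0" if "k < 8" "u k = 0" for k :: nat
  proof -
    have "sum_list (map (\<lambda>y. r y k * cnj (r y k)) xs) = 0" using H[of k k] that by simp
    then show ?thesis using sumsq_zero[where z="\<lambda>y. r y k" and xs=xs] x by blast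
  qed
  show ?thesis
  proof (cases "\<exists>m<8. u m \<noteq> 0")
    case True
    then obtain m where m: "m < 8" "u m \<noteq> 0" by blast
    show ?thesis
    proof (intro exI allI impI)
      fix k :: nat assume k: "k < 8"
      have "r x k * complex_of_real (u m) = r x m * complex_of_real (u k)" by (rule F1[OF k m(1)])
      then show "r x k = r x m / complex_of_real (u m) * complex_of_real (u k)"
        using m(2) by (simp add: field_simps)
    qed
  next
    case False
    then show ?thesis using F2 by (intro exI[of _ 0]) auto
  qed
qed

lemma KEK:
  assumes K: "K \<in> carrier_mat n m" and "k < m" "l < m" "i < n" "j < n"
  shows "(K * (ket m k * adj (ket m l)) * adj K) $$ (i,j) = K $$ (i,k) * cnj (K $$ (j,l))"
proof -
  have E: "ket m k * adj (ket m l) \<in> carrier_mat m m"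
    using ket_carrier[of m k] ket_carrier[of m l] by (intro mult_carrier_mat[OF _ adj_carrierI])
  have Ee: "(ket m k * adj (ket m l)) $$ (a,b) = (if a = k \<and> b = l then 1 else 0)" if "a < m" "b < m" for a b
    using that by (subst mult_entry[OF ket_carrier adj_carrierI[OF ket_carrier]]) (auto simp: ket_def)
  have KE: "(K * (ket m k * adj (ket m l))) $$ (i,b) = (if b = l then K $$ (i,k) else 0)" if "b < m" for b
  proof -
    have "(K * (ket m k * adj (ket m l))) $$ (i,b) = (\<Sum>a<m. K $$ (i,a) * (ket m k * adj (ket m l)) $$ (a,b))"
      by (rule mult_entry[OF K E \<open>i < n\<close> that])
    also have "\<dots> = (\<Sum>a<m. if a = k then (if b = l then K $$ (i,k) else 0) else 0)"
      using that by (intro sum.cong) (auto simp: Ee)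
    also have "\<dots> = (if b = l then K $$ (i,k) else 0)" using \<open>k < m\<close> by simp
    finally show ?thesis .
  qed
  have "(K * (ket m k * adj (ket m l)) * adj K) $$ (i,j) = (\<Sum>b<m. (K * (ket m k * adj (ket m l))) $$ (i,b) * adj K $$ (b,j))"
    by (rule mult_entry[OF mult_carrier_mat[OF K E] adj_carrierI[OF K] \<open>i < n\<close> \<open>j < n\<close>])
  also have "\<dots> = (\<Sum>b<m. if b = l then K $$ (i,k) * cnj (K $$ (j,l)) else 0)"
    using K \<open>j < n\<close> by (intro sum.cong) (auto simp: KE)
  also have "\<dots> = K $$ (i,k) * cnj (K $$ (j,l))" using \<open>l < m\<close> by simp
  finally show ?thesis .
qed

lemma choi_kraus_entry:
  assumes Ks: "set Ks \<subseteq> carrier_mat 64 8" and M: "\<forall>X\<in>carrier_mat 8 8. M X = kraus_apply 64 Ks X"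
    and "k < 8" "l < 8" "o1 < 64" "o2 < 64"
  shows "choi 8 64 M $$ (k*64+o1, l*64+o2) = sum_list (map (\<lambda>K. K $$ (o1,k) * cnj (K $$ (o2,l))) Ks)"
proof -
  have i: "k*64+o1 < 8*64" "l*64+o2 < 8*64" using assms by linarith+
  have E: "ket 8 k * adj (ket 8 l) \<in> carrier_mat 8 8"
    using ket_carrier[of 8 k] ket_carrier[of 8 l] by (intro mult_carrier_mat[OF _ adj_carrierI])
  have c: "set (map (\<lambda>K. K * (ket 8 k * adj (ket 8 l)) * adj K) Ks) \<subseteq> carrier_mat 64 64"
  proof
    fix X assume "X \<in> set (map (\<lambda>K. K * (ket 8 k * adj (ket 8 l)) * adj K) Ks)"
    then obtain K where K: "K \<in> set Ks" and X: "X = K * (ket 8 k * adj (ket 8 l)) * adj K" by auto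
    have "K \<in> carrier_mat 64 8" using K Ks by auto
    then show "X \<in> carrier_mat 64 64" unfolding X
      by (intro mult_carrier_mat[OF mult_carrier_mat[OF _ E] adj_carrierI])
  qed
  have "choi 8 64 M $$ (k*64+o1, l*64+o2) = M (ket 8 k * adj (ket 8 l)) $$ (o1, o2)"
    unfolding choi_def using i assms by simp
  also have "\<dots> = kraus_apply 64 Ks (ket 8 k * adj (ket 8 l)) $$ (o1,o2)" using M E by simp
  also have "\<dots> = sum_list (map (\<lambda>K. (K * (ket 8 k * adj (ket 8 l)) * adj K) $$ (o1,o2)) Ks)"
    unfolding kraus_apply_def using assms by (simp add: msum_entry[OF c] o_def)
  also have "\<dots> = sum_list (map (\<lambda>K. K $$ (o1,k) * cnj (K $$ (o2,l))) Ks)"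
    using Ks assms by (intro arg_cong[where f=sum_list] map_cong refl KEK) auto
  finally show ?thesis .
qed


lemma prod3_entry:
  assumes "A \<in> carrier_mat r1 c1" "B \<in> carrier_mat r2 c2" "C \<in> carrier_mat r3 c3"
    "i < r1*r2*r3" "j < c1*c2*c3"
  shows "prod3 (A,B,C) $$ (i,j) = A $$ (i div (r2*r3), j div (c2*c3)) * B $$ ((i div r3) mod r2, (j div c3) mod c2)
     * C $$ (i mod r3, j mod c3)"
proof -
  have d: "dim_row A = r1" "dim_col A = c1" "dim_row B = r2" "dim_col B = c2" "dim_row C = r3" "dim_col C = c3"
    using assms by auto
  have i8: "i div r3 < r1 * r2" "j div c3 < c1 * c2" using assms(4,5) by (auto simp: div_lt mult.assoc[symmetric])
  have "prod3 (A,B,C) $$ (i,j) = kron A B $$ (i div r3, j div c3) * C $$ (i mod r3, j mod c3)"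
    unfolding prod3_simp using assms d by (simp add: kron_entry)
  also have "kron A B $$ (i div r3, j div c3) = A $$ (i div r3 div r2, j div c3 div c2) * B $$ ((i div r3) mod r2, (j div c3) mod c2)"
    using i8 d by (simp add: kron_entry)
  also have "i div r3 div r2 = i div (r2*r3)" by (subst mult.commute) (rule div_mult2_eq[symmetric])
  also have "j div c3 div c2 = j div (c2*c3)" by (subst mult.commute) (rule div_mult2_eq[symmetric])
  finally show ?thesis .
qed

definition good :: "cmat \<Rightarrow> bool" where
  "good P \<longleftrightarrow> (\<exists>c. \<forall>o'<64. \<forall>k<8. P $$ (o',k) = c o' * complex_of_real (Vm o' k))"

definition lat :: "nat \<Rightarrow> nat \<Rightarrow> nat" where
  "lat b c = (if c = 0 then [0,3,1,2] ! b else if c = 1 then [2,1,3,0] ! b else if c = 2 then [3,0,2,1] ! b else [1,2,0,3] ! b)"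

lemma T_lat: "(a,b,c) \<in> set Tset \<Longrightarrow> a = lat b c"
  unfolding Tset_def by (simp add: lat_def) (elim disjE; simp)

lemma Tset_latin: "(a,b,c) \<in> set Tset \<Longrightarrow> (a',b,c) \<in> set Tset \<Longrightarrow> a = a'"
  using T_lat by metis

lemma divmod_aux: "q < (n::nat) \<Longrightarrow> (p*n+q) div n = p \<and> (p*n+q) mod n = q"
proof -
  assume q: "q < n"
  have "(q + p*n) div n = p + q div n" by (rule div_mult_self1) (use q in simp)
  moreover have "(q + p*n) mod n = q mod n" by (rule mod_mult_self1)
  ultimately show ?thesis using q by (simp add: add.commute)
qed

lemma dec3: "b < 4 \<Longrightarrow> c < 4 \<Longrightarrow> dec ((a*4+b)*4+c) = (a,b,c)"
proof -
  assume bc: "b < 4" "c < 4"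
  have 1: "((a*4+b)*4+c) div 4 = a*4+b" "((a*4+b)*4+c) mod 4 = c" using divmod_aux[OF bc(2), of "a*4+b"] by auto
  have 3: "(a*4+b) div 4 = a" "(a*4+b) mod 4 = b" using divmod_aux[OF bc(1), of a] by auto
  have 2: "((a*4+b)*4+c) div 16 = ((a*4+b)*4+c) div 4 div 4"
    using div_mult2_eq[of "(a*4+b)*4+c" 4 4] by simp
  show ?thesis unfolding dec_def 2 1 3 by simp
qed

lemma k3: fixes x y z :: nat shows "y < 2 \<Longrightarrow> z < 2 \<Longrightarrow> ((x*2+y)*2+z) div (2*2) = x \<and> (((x*2+y)*2+z) div 2) mod 2 = y \<and> ((x*2+y)*2+z) mod 2 = z"
proof -
  assume yz: "y < 2" "z < 2"
  have 1: "((x*2+y)*2+z) div 2 = x*2+y" "((x*2+y)*2+z) mod 2 = z" using divmod_aux[OF yz(2), of "x*2+y"] by auto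
  have 3: "(x*2+y) div 2 = x" "(x*2+y) mod 2 = y" using divmod_aux[OF yz(1), of x] by auto
  have 2: "((x*2+y)*2+z) div (2*2) = ((x*2+y)*2+z) div 2 div 2"
    by (rule div_mult2_eq)
  show ?thesis unfolding 2 1 3 by simp
qed

lemma iso_two:
  assumes W: "W \<in> carrier_mat 4 2" and I: "adj W * W = 1\<^sub>m 2"
  shows "\<exists>a a'. a < 4 \<and> a' < 4 \<and> a \<noteq> a' \<and> (\<exists>x<2. W $$ (a,x) \<noteq> 0) \<and> (\<exists>x<2. W $$ (a',x) \<noteq> 0)"
proof (rule ccontr)
  assume N: "\<not> ?thesis"
  have e: "(adj W * W) $$ (x,y) = (\<Sum>a<4. cnj (W $$ (a,x)) * W $$ (a,y))" if "x < 2" "y < 2" for x y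
    using that W by (subst mult_entry[OF adj_carrierI[OF W] W]) (auto intro!: sum.cong)
  have "(\<Sum>a<4. cnj (W $$ (a,0)) * W $$ (a,0)) = 1" using e[of 0 0] I by simp
  then have "\<exists>a<4. W $$ (a,0) \<noteq> 0"
  proof (rule contrapos_pp)
    assume "\<not> (\<exists>a<4. W $$ (a,0) \<noteq> 0)"
    then have "(\<Sum>a<4. cnj (W $$ (a,0)) * W $$ (a,0)) = 0" by (intro sum.neutral) auto
    then show "(\<Sum>a<4. cnj (W $$ (a,0)) * W $$ (a,0)) \<noteq> 1" by simp
  qed
  then obtain a0 where a0: "a0 < 4" "W $$ (a0,0) \<noteq> 0" by blast
  have N': "False" if "a < 4" "a' < 4" "a \<noteq> a'" "x < 2" "W $$ (a,x) \<noteq> 0" "x' < 2" "W $$ (a',x') \<noteq> 0" for a a' x x'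
    using N that by blast
  have z: "W $$ (a,x) = 0" if "a < 4" "a \<noteq> a0" "x < 2" for a x
  proof (rule ccontr)
    assume "W $$ (a,x) \<noteq> 0"
    show False by (rule N'[of a a0 x 0]) (use that a0 \<open>W $$ (a,x) \<noteq> 0\<close> in auto)
  qed
  have red: "(\<Sum>a<4. cnj (W $$ (a,x)) * W $$ (a,y)) = cnj (W $$ (a0,x)) * W $$ (a0,y)" if "x < 2" "y < 2" for x y
  proof -
    have "(\<Sum>a<4. cnj (W $$ (a,x)) * W $$ (a,y)) = (\<Sum>a<4. if a = a0 then cnj (W $$ (a0,x)) * W $$ (a0,y) else 0)"
      using z that by (intro sum.cong) auto
    also have "\<dots> = cnj (W $$ (a0,x)) * W $$ (a0,y)" using a0 by simp
    finally show ?thesis .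
  qed
  have "cnj (W $$ (a0,1)) * W $$ (a0,1) = 1" using e[of 1 1] red[of 1 1] I by simp
  then have "W $$ (a0,1) \<noteq> 0" by auto
  moreover have "cnj (W $$ (a0,0)) * W $$ (a0,1) = 0" using e[of 0 1] red[of 0 1] I by simp
  ultimately show False using a0 by simp
qed

lemma base_case:
  assumes W: "W1 \<in> carrier_mat 4 2" "W2 \<in> carrier_mat 4 2" "W3 \<in> carrier_mat 4 2"
    and I: "adj W1 * W1 = 1\<^sub>m 2" "adj W2 * W2 = 1\<^sub>m 2" "adj W3 * W3 = 1\<^sub>m 2"
    and g: "good (prod3 (W1,W2,W3))"
  shows False
proof -
  from g obtain c where c: "\<forall>o'<64. \<forall>k<8. prod3 (W1,W2,W3) $$ (o',k) = c o' * complex_of_real (Vm o' k)"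
    unfolding good_def by blast
  have inT: "(a,b,cc) \<in> set Tset" if "a < 4" "b < 4" "cc < 4" "x < 2" "y < 2" "z < 2"
    "W1 $$ (a,x) \<noteq> 0" "W2 $$ (b,y) \<noteq> 0" "W3 $$ (cc,z) \<noteq> 0" for a b cc x y z
  proof (rule ccontr)
    assume nT: "(a,b,cc) \<notin> set Tset"
    define o' where "o' = (a*4+b)*4+cc"
    define k where "k = (x*2+y)*2+z"
    have ok: "o' < 4*4*4" "k < 2*2*2" unfolding o'_def k_def using that by (simp_all add: algebra_simps)
    have dec: "dec o' = (a,b,cc)" unfolding o'_def using that by (intro dec3)
    have kk: "k div (2*2) = x" "(k div 2) mod 2 = y" "k mod 2 = z" unfolding k_def using k3[of y z x] that by simp_all
    have oo: "o' div (4*4) = a" "(o' div 4) mod 4 = b" "o' mod 4 = cc" using dec unfolding dec_def by simp_all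
    have "prod3 (W1,W2,W3) $$ (o',k) = W1 $$ (a,x) * W2 $$ (b,y) * W3 $$ (cc,z)"
      using prod3_entry[OF W ok] unfolding kk oo .
    moreover have "Vm o' k = 0" unfolding Vm_def using dec nT by simp
    ultimately have "W1 $$ (a,x) * W2 $$ (b,y) * W3 $$ (cc,z) = 0" using c ok by simp
    with that show False by simp
  qed
  obtain a a' where aa: "a < 4" "a' < 4" "a \<noteq> a'" "\<exists>x<2. W1 $$ (a,x) \<noteq> 0" "\<exists>x<2. W1 $$ (a',x) \<noteq> 0"
    using iso_two[OF W(1) I(1)] by blast
  obtain b b' where bb: "b < 4" "\<exists>x<2. W2 $$ (b,x) \<noteq> 0"
    using iso_two[OF W(2) I(2)] by blast
  obtain cc cc' where ccc: "cc < 4" "\<exists>x<2. W3 $$ (cc,x) \<noteq> 0"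
    using iso_two[OF W(3) I(3)] by blast
  obtain x where x: "x < 2" "W1 $$ (a,x) \<noteq> 0" using aa by blast
  obtain x' where x': "x' < 2" "W1 $$ (a',x') \<noteq> 0" using aa by blast
  obtain y where y: "y < 2" "W2 $$ (b,y) \<noteq> 0" using bb by blast
  obtain z where z: "z < 2" "W3 $$ (cc,z) \<noteq> 0" using ccc by blast
  have "(a,b,cc) \<in> set Tset" by (rule inT[OF aa(1) bb(1) ccc(1) x(1) y(1) z(1) x(2) y(2) z(2)])
  moreover have "(a',b,cc) \<in> set Tset" by (rule inT[OF aa(2) bb(1) ccc(1) x'(1) y(1) z(1) x'(2) y(2) z(2)])
  ultimately have "a = a'" by (rule Tset_latin)
  with aa show False by simp
qed


lemma prod3_222:
  assumes "A \<in> carrier_mat 2 2" "B \<in> carrier_mat 2 2" "C \<in> carrier_mat 2 2" "k < 8" "l < 8"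
  shows "prod3 (A,B,C) $$ (k,l) = A $$ (k div 4, l div 4) * B $$ ((k div 2) mod 2, (l div 2) mod 2) * C $$ (k mod 2, l mod 2)"
proof -
  have kl: "k < 2*2*2" "l < 2*2*2" using assms(4,5) by simp_all
  have 4: "(2::nat) * 2 = 4" by simp
  show ?thesis using prod3_entry[OF assms(1-3) kl] unfolding 4 .
qed

lemma round_P1:
  assumes P: "P \<in> carrier_mat 2 2" and H: "\<forall>k<8. \<forall>l<8. prod3 (P, 1\<^sub>m 2, 1\<^sub>m 2) $$ (k,l) = complex_of_real (Rt w k l)"
  shows "P = complex_of_real (Rt w 0 0) \<cdot>\<^sub>m 1\<^sub>m 2"
proof -
  have I: "(1\<^sub>m 2 :: cmat) \<in> carrier_mat 2 2" by simp
  have ent: "complex_of_real (Rt w k l) = P $$ (k div 4, l div 4) * (if ((k div 2) mod 2 = (l div 2) mod 2 \<and> k mod 2 = l mod 2) then 1 else 0)" if "k < 8" "l < 8" for k l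
  proof -
    have "k div 4 < 2" "l div 4 < 2" "(k div 2) mod 2 < 2" "(l div 2) mod 2 < 2" "k mod 2 < 2" "l mod 2 < 2" "k div 4 < 2" "l div 4 < 2"
      using that by auto
    note b = this
    have h1: "prod3 (P, 1\<^sub>m 2, 1\<^sub>m 2) $$ (k,l) = complex_of_real (Rt w k l)" using H that by blast
    have h2: "prod3 (P, 1\<^sub>m 2, 1\<^sub>m 2) $$ (k,l) = P $$ (k div 4, l div 4) * (if (k div 2) mod 2 = (l div 2) mod 2 then 1 else 0) * (if k mod 2 = l mod 2 then 1 else 0)"
      using prod3_222[OF P I I that] b by simp
    show ?thesis unfolding h1[symmetric] h2 by simp
  qed
  have z: "Rt w k l = 0" if "k < 8" "l < 8" "\<not> ((k div 2) mod 2 = (l div 2) mod 2 \<and> k mod 2 = l mod 2)" for k l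
    using ent[OF that(1,2)] that(3) by simp
  have e: "Rt w k l = Rt w k' l'" if "k < 8" "l < 8" "k' < 8" "l' < 8" "((k div 2) mod 2 = (l div 2) mod 2 \<and> k mod 2 = l mod 2)" "((k' div 2) mod 2 = (l' div 2) mod 2 \<and> k' mod 2 = l' mod 2)" "k div 4 = k' div 4" "l div 4 = l' div 4" for k l k' l'
  proof -
    have "complex_of_real (Rt w k l) = complex_of_real (Rt w k' l')"
      using ent[OF that(1,2)] ent[OF that(3,4)] that(5-8) by simp
    then show ?thesis by simp
  qed
  have L: "Rt w 0 4 = 0 \<and> Rt w 4 0 = 0 \<and> Rt w 0 0 = Rt w 4 4"
    by (rule lin1[OF z e])
  show ?thesis
  proof (rule eq_matI)
    fix i j assume "i < dim_row (complex_of_real (Rt w 0 0) \<cdot>\<^sub>m 1\<^sub>m 2)" "j < dim_col (complex_of_real (Rt w 0 0) \<cdot>\<^sub>m 1\<^sub>m 2)"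
    then have ij: "i < 2" "j < 2" by auto
    have e00: "P $$ (0,0) = complex_of_real (Rt w 0 0)" using ent[of 0 0] by simp
    have e01: "P $$ (0,1) = complex_of_real (Rt w 0 4)" using ent[of 0 4] by simp
    have e10: "P $$ (1,0) = complex_of_real (Rt w 4 0)" using ent[of 4 0] by simp
    have e11: "P $$ (1,1) = complex_of_real (Rt w 4 4)" using ent[of 4 4] by simp
    show "P $$ (i,j) = (complex_of_real (Rt w 0 0) \<cdot>\<^sub>m 1\<^sub>m 2) $$ (i,j)"
      using ij e00 e01 e10 e11 L by (auto simp: less_2_cases_iff)
  qed (use P in auto)
qed

lemma round_P2:
  assumes P: "P \<in> carrier_mat 2 2" and H: "\<forall>k<8. \<forall>l<8. prod3 (1\<^sub>m 2, P, 1\<^sub>m 2) $$ (k,l) = complex_of_real (Rt w k l)"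
  shows "P = complex_of_real (Rt w 0 0) \<cdot>\<^sub>m 1\<^sub>m 2"
proof -
  have I: "(1\<^sub>m 2 :: cmat) \<in> carrier_mat 2 2" by simp
  have ent: "complex_of_real (Rt w k l) = P $$ ((k div 2) mod 2, (l div 2) mod 2) * (if (k div 4 = l div 4 \<and> k mod 2 = l mod 2) then 1 else 0)" if "k < 8" "l < 8" for k l
  proof -
    have "(k div 2) mod 2 < 2" "(l div 2) mod 2 < 2" "(k div 2) mod 2 < 2" "(l div 2) mod 2 < 2" "k mod 2 < 2" "l mod 2 < 2" "k div 4 < 2" "l div 4 < 2"
      using that by auto
    note b = this
    have h1: "prod3 (1\<^sub>m 2, P, 1\<^sub>m 2) $$ (k,l) = complex_of_real (Rt w k l)" using H that by blast
    have h2: "prod3 (1\<^sub>m 2, P, 1\<^sub>m 2) $$ (k,l) = (if k div 4 = l div 4 then 1 else 0) * P $$ ((k div 2) mod 2, (l div 2) mod 2) * (if k mod 2 = l mod 2 then 1 else 0)"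
      using prod3_222[OF I P I that] b by simp
    show ?thesis unfolding h1[symmetric] h2 by simp
  qed
  have z: "Rt w k l = 0" if "k < 8" "l < 8" "\<not> (k div 4 = l div 4 \<and> k mod 2 = l mod 2)" for k l
    using ent[OF that(1,2)] that(3) by simp
  have e: "Rt w k l = Rt w k' l'" if "k < 8" "l < 8" "k' < 8" "l' < 8" "(k div 4 = l div 4 \<and> k mod 2 = l mod 2)" "(k' div 4 = l' div 4 \<and> k' mod 2 = l' mod 2)" "(k div 2) mod 2 = (k' div 2) mod 2" "(l div 2) mod 2 = (l' div 2) mod 2" for k l k' l'
  proof -
    have "complex_of_real (Rt w k l) = complex_of_real (Rt w k' l')"
      using ent[OF that(1,2)] ent[OF that(3,4)] that(5-8) by simp
    then show ?thesis by simp
  qed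
  have L: "Rt w 0 2 = 0 \<and> Rt w 2 0 = 0 \<and> Rt w 0 0 = Rt w 2 2"
    by (rule lin2[OF z e])
  show ?thesis
  proof (rule eq_matI)
    fix i j assume "i < dim_row (complex_of_real (Rt w 0 0) \<cdot>\<^sub>m 1\<^sub>m 2)" "j < dim_col (complex_of_real (Rt w 0 0) \<cdot>\<^sub>m 1\<^sub>m 2)"
    then have ij: "i < 2" "j < 2" by auto
    have e00: "P $$ (0,0) = complex_of_real (Rt w 0 0)" using ent[of 0 0] by simp
    have e01: "P $$ (0,1) = complex_of_real (Rt w 0 2)" using ent[of 0 2] by simp
    have e10: "P $$ (1,0) = complex_of_real (Rt w 2 0)" using ent[of 2 0] by simp
    have e11: "P $$ (1,1) = complex_of_real (Rt w 2 2)" using ent[of 2 2] by simp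
    show "P $$ (i,j) = (complex_of_real (Rt w 0 0) \<cdot>\<^sub>m 1\<^sub>m 2) $$ (i,j)"
      using ij e00 e01 e10 e11 L by (auto simp: less_2_cases_iff)
  qed (use P in auto)
qed

lemma round_P3:
  assumes P: "P \<in> carrier_mat 2 2" and H: "\<forall>k<8. \<forall>l<8. prod3 (1\<^sub>m 2, 1\<^sub>m 2, P) $$ (k,l) = complex_of_real (Rt w k l)"
  shows "P = complex_of_real (Rt w 0 0) \<cdot>\<^sub>m 1\<^sub>m 2"
proof -
  have I: "(1\<^sub>m 2 :: cmat) \<in> carrier_mat 2 2" by simp
  have ent: "complex_of_real (Rt w k l) = P $$ (k mod 2, l mod 2) * (if (k div 4 = l div 4 \<and> (k div 2) mod 2 = (l div 2) mod 2) then 1 else 0)" if "k < 8" "l < 8" for k l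
  proof -
    have "k mod 2 < 2" "l mod 2 < 2" "(k div 2) mod 2 < 2" "(l div 2) mod 2 < 2" "k mod 2 < 2" "l mod 2 < 2" "k div 4 < 2" "l div 4 < 2"
      using that by auto
    note b = this
    have h1: "prod3 (1\<^sub>m 2, 1\<^sub>m 2, P) $$ (k,l) = complex_of_real (Rt w k l)" using H that by blast
    have h2: "prod3 (1\<^sub>m 2, 1\<^sub>m 2, P) $$ (k,l) = (if k div 4 = l div 4 then 1 else 0) * (if (k div 2) mod 2 = (l div 2) mod 2 then 1 else 0) * P $$ (k mod 2, l mod 2)"
      using prod3_222[OF I I P that] b by simp
    show ?thesis unfolding h1[symmetric] h2 by simp
  qed
  have z: "Rt w k l = 0" if "k < 8" "l < 8" "\<not> (k div 4 = l div 4 \<and> (k div 2) mod 2 = (l div 2) mod 2)" for k l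
    using ent[OF that(1,2)] that(3) by simp
  have e: "Rt w k l = Rt w k' l'" if "k < 8" "l < 8" "k' < 8" "l' < 8" "(k div 4 = l div 4 \<and> (k div 2) mod 2 = (l div 2) mod 2)" "(k' div 4 = l' div 4 \<and> (k' div 2) mod 2 = (l' div 2) mod 2)" "k mod 2 = k' mod 2" "l mod 2 = l' mod 2" for k l k' l'
  proof -
    have "complex_of_real (Rt w k l) = complex_of_real (Rt w k' l')"
      using ent[OF that(1,2)] ent[OF that(3,4)] that(5-8) by simp
    then show ?thesis by simp
  qed
  have L: "Rt w 0 1 = 0 \<and> Rt w 1 0 = 0 \<and> Rt w 0 0 = Rt w 1 1"
    by (rule lin3[OF z e])
  show ?thesis
  proof (rule eq_matI)
    fix i j assume "i < dim_row (complex_of_real (Rt w 0 0) \<cdot>\<^sub>m 1\<^sub>m 2)" "j < dim_col (complex_of_real (Rt w 0 0) \<cdot>\<^sub>m 1\<^sub>m 2)"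
    then have ij: "i < 2" "j < 2" by auto
    have e00: "P $$ (0,0) = complex_of_real (Rt w 0 0)" using ent[of 0 0] by simp
    have e01: "P $$ (0,1) = complex_of_real (Rt w 0 1)" using ent[of 0 1] by simp
    have e10: "P $$ (1,0) = complex_of_real (Rt w 1 0)" using ent[of 1 0] by simp
    have e11: "P $$ (1,1) = complex_of_real (Rt w 1 1)" using ent[of 1 1] by simp
    show "P $$ (i,j) = (complex_of_real (Rt w 0 0) \<cdot>\<^sub>m 1\<^sub>m 2) $$ (i,j)"
      using ij e00 e01 e10 e11 L by (auto simp: less_2_cases_iff)
  qed (use P in auto)
qed


lemma sum_list_sum_swap: "sum_list (map (\<lambda>x. \<Sum>o'\<in>A. f x o') xs) = (\<Sum>o'\<in>A. sum_list (map (\<lambda>x. f x o') xs))"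
  by (induction xs) (simp_all add: sum.distrib)

lemma Gram_good:
  assumes P: "P \<in> carrier_mat 64 8" and c: "\<forall>o'<64. \<forall>k<8. P $$ (o',k) = c o' * complex_of_real (Vm o' k)"
    and "k < 8" "l < 8"
  shows "(adj P * P) $$ (k,l) = (\<Sum>o'<64. complex_of_real ((cmod (c o'))\<^sup>2 * Vm o' k * Vm o' l))"
proof -
  have "(adj P * P) $$ (k,l) = (\<Sum>o'<64. adj P $$ (k,o') * P $$ (o',l))"
    by (rule mult_entry[OF adj_carrierI[OF P] P assms(3,4)])
  also have "\<dots> = (\<Sum>o'<64. complex_of_real ((cmod (c o'))\<^sup>2 * Vm o' k * Vm o' l))"
  proof (rule sum.cong[OF refl])
    fix o' assume "o' \<in> {..<64::nat}"
    then have o: "o' < 64" by simp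
    have "adj P $$ (k,o') * P $$ (o',l) = cnj (c o' * complex_of_real (Vm o' k)) * (c o' * complex_of_real (Vm o' l))"
      using P o assms(3,4) c by simp
    also have "\<dots> = (c o' * cnj (c o')) * complex_of_real (Vm o' k * Vm o' l)" by (simp add: mult_ac)
    also have "\<dots> = complex_of_real ((cmod (c o'))\<^sup>2 * Vm o' k * Vm o' l)"
      by (simp add: complex_norm_square[symmetric])
    finally show "adj P $$ (k,o') * P $$ (o',l) = complex_of_real ((cmod (c o'))\<^sup>2 * Vm o' k * Vm o' l)" .
  qed
  finally show ?thesis .
qed

lemma sum_good:
  assumes A: "\<forall>L\<in>set xs. \<Lambda> L \<in> carrier_mat 64 8 \<and> good (\<Lambda> L)"
  shows "\<exists>w. \<forall>k<8. \<forall>l<8. msum 8 8 (map (\<lambda>L. adj (\<Lambda> L) * \<Lambda> L) xs) $$ (k,l) = complex_of_real (Rt w k l)"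
proof -
  have "\<forall>L\<in>set xs. \<exists>c. \<forall>o'<64. \<forall>k<8. \<Lambda> L $$ (o',k) = c o' * complex_of_real (Vm o' k)"
    using A unfolding good_def by blast
  then obtain c where c: "\<forall>L\<in>set xs. \<forall>o'<64. \<forall>k<8. \<Lambda> L $$ (o',k) = c L o' * complex_of_real (Vm o' k)"
    by (metis bchoice)
  define w where "w o' = sum_list (map (\<lambda>L. (cmod (c L o'))\<^sup>2) xs)" for o'
  have car: "set (map (\<lambda>L. adj (\<Lambda> L) * \<Lambda> L) xs) \<subseteq> carrier_mat 8 8"
  proof
    fix X assume "X \<in> set (map (\<lambda>L. adj (\<Lambda> L) * \<Lambda> L) xs)"
    then obtain L where L: "L \<in> set xs" "X = adj (\<Lambda> L) * \<Lambda> L" by auto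
    have "\<Lambda> L \<in> carrier_mat 64 8" using A L by blast
    then show "X \<in> carrier_mat 8 8" unfolding L(2) by (intro mult_carrier_mat[OF adj_carrierI])
  qed
  show ?thesis
  proof (intro exI allI impI)
    fix k l :: nat assume kl: "k < 8" "l < 8"
    have "msum 8 8 (map (\<lambda>L. adj (\<Lambda> L) * \<Lambda> L) xs) $$ (k,l) = sum_list (map (\<lambda>L. (adj (\<Lambda> L) * \<Lambda> L) $$ (k,l)) xs)"
      using msum_entry[OF car kl] by (simp add: o_def)
    also have "\<dots> = sum_list (map (\<lambda>L. \<Sum>o'<64. complex_of_real ((cmod (c L o'))\<^sup>2 * Vm o' k * Vm o' l)) xs)"
    proof (rule arg_cong[where f=sum_list], rule map_cong[OF refl])
      fix L assume L: "L \<in> set xs"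
      show "(adj (\<Lambda> L) * \<Lambda> L) $$ (k,l) = (\<Sum>o'<64. complex_of_real ((cmod (c L o'))\<^sup>2 * Vm o' k * Vm o' l))"
        using Gram_good[of "\<Lambda> L" "c L" k l] A L c kl by blast
    qed
    also have "\<dots> = (\<Sum>o'<64. sum_list (map (\<lambda>L. complex_of_real ((cmod (c L o'))\<^sup>2 * Vm o' k * Vm o' l)) xs))"
      by (rule sum_list_sum_swap)
    also have "\<dots> = (\<Sum>o'<64. complex_of_real (w o' * Vm o' k * Vm o' l))"
    proof (rule sum.cong[OF refl])
      fix o'
      have "sum_list (map (\<lambda>L. complex_of_real ((cmod (c L o'))\<^sup>2 * Vm o' k * Vm o' l)) xs)
        = sum_list (map complex_of_real (map (\<lambda>L. (cmod (c L o'))\<^sup>2 * (Vm o' k * Vm o' l)) xs))"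
        by (simp add: o_def mult.assoc)
      also have "\<dots> = complex_of_real (sum_list (map (\<lambda>L. (cmod (c L o'))\<^sup>2) xs) * (Vm o' k * Vm o' l))"
        by (simp only: sum_list_of_real sum_list_mult_const)
      finally show "sum_list (map (\<lambda>L. complex_of_real ((cmod (c L o'))\<^sup>2 * Vm o' k * Vm o' l)) xs) = complex_of_real (w o' * Vm o' k * Vm o' l)"
        by (simp add: w_def mult.assoc)
    qed
    also have "\<dots> = complex_of_real (\<Sum>o'<64. w o' * Vm o' k * Vm o' l)" by simp
    also have "\<dots> = complex_of_real (Rt w k l)" by (simp add: sum_Vm kl)
    finally show "msum 8 8 (map (\<lambda>L. adj (\<Lambda> L) * \<Lambda> L) xs) $$ (k,l) = complex_of_real (Rt w k l)" .
  qed
qed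

lemma good_smult:
  assumes P: "P \<in> carrier_mat 64 8" and g: "good P" shows "good (a \<cdot>\<^sub>m P)"
proof -
  from g obtain c where c: "\<forall>o'<64. \<forall>k<8. P $$ (o',k) = c o' * complex_of_real (Vm o' k)"
    unfolding good_def by blast
  show ?thesis unfolding good_def
  proof (intro exI[of _ "\<lambda>o'. a * c o'"] allI impI)
    fix o' k :: nat assume ok: "o' < 64" "k < 8"
    then show "(a \<cdot>\<^sub>m P) $$ (o',k) = a * c o' * complex_of_real (Vm o' k)"
      using P c by (simp add: mult.assoc)
  qed
qed

lemma gram_nonneg:
  assumes A: "A \<in> carrier_mat n 2"
  shows "(adj A * A) $$ (0,0) = complex_of_real (\<Sum>i<n. (cmod (A $$ (i,0)))\<^sup>2)"
proof -
  have "(adj A * A) $$ (0,0) = (\<Sum>i<n. adj A $$ (0,i) * A $$ (i,0))"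
    by (rule mult_entry[OF adj_carrierI[OF A] A]) auto
  also have "\<dots> = (\<Sum>i<n. complex_of_real ((cmod (A $$ (i,0)))\<^sup>2))"
  proof (rule sum.cong[OF refl])
    fix i assume "i \<in> {..<n}"
    then have "adj A $$ (0,i) = cnj (A $$ (i,0))" using A by simp
    then show "adj A $$ (0,i) * A $$ (i,0) = complex_of_real ((cmod (A $$ (i,0)))\<^sup>2)"
      using complex_norm_square[of "A $$ (i,0)"] by (simp only: mult.commute)
  qed
  finally show ?thesis by simp
qed

lemma iso_rescale:
  assumes A: "A \<in> carrier_mat n 2" and AA: "adj A * A = complex_of_real p \<cdot>\<^sub>m 1\<^sub>m 2" and p: "p > 0"
  shows "adj (complex_of_real (1 / sqrt p) \<cdot>\<^sub>m A) * (complex_of_real (1 / sqrt p) \<cdot>\<^sub>m A) = 1\<^sub>m 2"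
proof -
  have "adj (complex_of_real (1 / sqrt p) \<cdot>\<^sub>m A) * (complex_of_real (1 / sqrt p) \<cdot>\<^sub>m A)
      = (complex_of_real (1 / sqrt p) \<cdot>\<^sub>m adj A) * (complex_of_real (1 / sqrt p) \<cdot>\<^sub>m A)"
    by (simp add: adj_smult)
  also have "\<dots> = complex_of_real (1 / sqrt p) \<cdot>\<^sub>m (complex_of_real (1 / sqrt p) \<cdot>\<^sub>m (adj A * A))"
    using A by (simp add: mult_smult_assoc_mat[OF adj_carrierI[OF A] smult_carrier_mat[OF A]] mult_smult_distrib[OF adj_carrierI[OF A] A])
  also have "\<dots> = 1\<^sub>m 2"
  proof (rule eq_matI)
    fix i j assume "i < dim_row (1\<^sub>m 2 :: cmat)" "j < dim_col (1\<^sub>m 2 :: cmat)"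
    then have ij: "i < 2" "j < 2" by auto
    have "complex_of_real (1 / sqrt p) * complex_of_real (1 / sqrt p) * complex_of_real p = 1"
    proof -
      have "(1 / sqrt p) * (1 / sqrt p) * p = 1" using p by (simp add: field_simps)
      then have "complex_of_real ((1 / sqrt p) * (1 / sqrt p) * p) = 1" by simp
      then show ?thesis by (simp only: of_real_mult)
    qed
    then show "(complex_of_real (1 / sqrt p) \<cdot>\<^sub>m (complex_of_real (1 / sqrt p) \<cdot>\<^sub>m (adj A * A))) $$ (i,j) = (1\<^sub>m 2 :: cmat) $$ (i,j)"
      using ij A AA by (simp add: mult.assoc)
  qed (use A AA in auto)
  finally show ?thesis .
qed

lemma mem_leaf:
  assumes "(d',Ks,Ls) \<in> set outs" "K \<in> set Ks" "y \<in> set Ls"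
  shows "g K y \<in> set (concat (map (\<lambda>(d', Ks, Ls). concat (map (\<lambda>K. map (g K) Ls) Ks)) outs))"
  using assms by force


lemma prod3_smult1: "prod3 (c \<cdot>\<^sub>m X, Y, Z) = c \<cdot>\<^sub>m prod3 (X,Y,Z)"
  by (simp add: prod3_simp kron_smult_left)
lemma prod3_smult2: "prod3 (X, c \<cdot>\<^sub>m Y, Z) = c \<cdot>\<^sub>m prod3 (X,Y,Z)"
  by (simp add: prod3_simp kron_smult_left kron_smult_right)
lemma prod3_smult3: "prod3 (X, Y, c \<cdot>\<^sub>m Z) = c \<cdot>\<^sub>m prod3 (X,Y,Z)"
  by (simp add: prod3_simp kron_smult_right)

lemma no_locc:
  assumes "locc_tree bout d Ls" "bout = (4,4,4)"
  shows "\<forall>e1 e2 e3 W1 W2 W3. d = (e1,e2,e3) \<longrightarrow> W1 \<in> carrier_mat e1 2 \<longrightarrow> W2 \<in> carrier_mat e2 2 \<longrightarrow>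
    W3 \<in> carrier_mat e3 2 \<longrightarrow> adj W1 * W1 = 1\<^sub>m 2 \<longrightarrow> adj W2 * W2 = 1\<^sub>m 2 \<longrightarrow> adj W3 * W3 = 1\<^sub>m 2 \<longrightarrow>
    (\<forall>(L1, L2, L3)\<in>set Ls. good (prod3 (L1 * W1, L2 * W2, L3 * W3))) \<longrightarrow> False"
  using assms
proof (induction rule: locc_tree.induct)
  case (stop d1 d2 d3)
  show ?case
  proof (intro allI impI)
    fix e1 e2 e3 W1 W2 W3
    assume e: "(d1, d2, d3) = (e1, e2, e3)" and W1: "W1 \<in> carrier_mat e1 2" and W2: "W2 \<in> carrier_mat e2 2"
      and W3: "W3 \<in> carrier_mat e3 2" and I1: "adj W1 * W1 = 1\<^sub>m 2" and I2: "adj W2 * W2 = 1\<^sub>m 2"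
      and I3: "adj W3 * W3 = 1\<^sub>m 2"
      and G: "\<forall>(L1, L2, L3)\<in>set [(1\<^sub>m d1, 1\<^sub>m d2, 1\<^sub>m d3)]. good (prod3 (L1 * W1, L2 * W2, L3 * W3))"
    have dd: "d1 = 4" "d2 = 4" "d3 = 4" using stop by auto
    have ee: "e1 = 4" "e2 = 4" "e3 = 4" using e dd by auto
    have "good (prod3 (1\<^sub>m d1 * W1, 1\<^sub>m d2 * W2, 1\<^sub>m d3 * W3))" using G by simp
    moreover have "1\<^sub>m d1 * W1 = W1" "1\<^sub>m d2 * W2 = W2" "1\<^sub>m d3 * W3 = W3"
      using W1 W2 W3 e by auto
    ultimately have "good (prod3 (W1, W2, W3))" by simp
    then show False using base_case W1 W2 W3 I1 I2 I3 unfolding ee by blast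
  qed

next
  case (round1 outs d1 d2 d3)
  show ?case
  proof (intro allI impI)
    fix e1 e2 e3 W1 W2 W3
    assume e: "(d1, d2, d3) = (e1, e2, e3)" and W1: "W1 \<in> carrier_mat e1 2" and W2: "W2 \<in> carrier_mat e2 2"
      and W3: "W3 \<in> carrier_mat e3 2" and I1: "adj W1 * W1 = 1\<^sub>m 2" and I2: "adj W2 * W2 = 1\<^sub>m 2"
      and I3: "adj W3 * W3 = 1\<^sub>m 2"
      and G: "\<forall>(L1, L2, L3)\<in>set (concat (map (\<lambda>(d', Ks, Ls). concat (map (\<lambda>K. map (\<lambda>(L1, L2, L3). (L1 * K, L2, L3)) Ls) Ks)) outs)).
         good (prod3 (L1 * W1, L2 * W2, L3 * W3))"
    from e have ee: "e1 = d1" "e2 = d2" "e3 = d3" by auto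
    note W1 = W1[unfolded ee] and W2 = W2[unfolded ee] and W3 = W3[unfolded ee]
    have sub: "set Ks \<subseteq> carrier_mat d' d1 \<and> locc_tree (4,4,4) (d', d2, d3) Ls \<and>
      (\<forall>f1 f2 f3 V1 V2 V3. (d', d2, d3) = (f1, f2, f3) \<longrightarrow> V1 \<in> carrier_mat f1 2 \<longrightarrow>
         V2 \<in> carrier_mat f2 2 \<longrightarrow> V3 \<in> carrier_mat f3 2 \<longrightarrow> adj V1 * V1 = 1\<^sub>m 2 \<longrightarrow>
         adj V2 * V2 = 1\<^sub>m 2 \<longrightarrow> adj V3 * V3 = 1\<^sub>m 2 \<longrightarrow>
         (\<forall>(L1, L2, L3)\<in>set Ls. good (prod3 (L1 * V1, L2 * V2, L3 * V3))) \<longrightarrow> False)"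
      if o: "(d',Ks,Ls) \<in> set outs" for d' Ks Ls
      using bspec[OF round1.IH o] round1.prems by blast
    have zero: "(adj (K * W1) * (K * W1)) $$ (0,0) = 0" if o: "(d',Ks,Ls) \<in> set outs" and K: "K \<in> set Ks" for d' Ks Ls K
    proof -
      have cK: "K \<in> carrier_mat d' d1" using sub[OF o] K by blast
      have lt: "locc_tree (4,4,4) (d', d2, d3) Ls" using sub[OF o] by blast
      have IHd: "\<forall>f1 f2 f3 V1 V2 V3. (d', d2, d3) = (f1, f2, f3) \<longrightarrow> V1 \<in> carrier_mat f1 2 \<longrightarrow>
         V2 \<in> carrier_mat f2 2 \<longrightarrow> V3 \<in> carrier_mat f3 2 \<longrightarrow> adj V1 * V1 = 1\<^sub>m 2 \<longrightarrow>
         adj V2 * V2 = 1\<^sub>m 2 \<longrightarrow> adj V3 * V3 = 1\<^sub>m 2 \<longrightarrow>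
         (\<forall>(L1, L2, L3)\<in>set Ls. good (prod3 (L1 * V1, L2 * V2, L3 * V3))) \<longrightarrow> False"
        using sub[OF o] by blast
      have cL: "\<forall>(M1,M2,M3)\<in>set Ls. M1 \<in> carrier_mat 4 d' \<and> M2 \<in> carrier_mat 4 d2 \<and> M3 \<in> carrier_mat 4 d3"
        using locc_carrier[OF lt, of 4 4 4] by auto
      have tp: "msum (d'*d2*d3) (d'*d2*d3) (map Gm Ls) = 1\<^sub>m (d'*d2*d3)"
        using locc_tp[OF lt, of 4 4 4] by auto
      let ?A = "K * W1"
      have cA: "?A \<in> carrier_mat d' 2" using cK W1 by simp
      have br: "msum (2*2*2) (2*2*2) (map (\<lambda>(M1,M2,M3). Gm (M1*?A, M2*W2, M3*W3)) Ls) = prod3 (adj ?A * ?A, adj W2 * W2, adj W3 * W3)"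
        by (rule branch[OF cL tp cA W2 W3])
      define Lam where "Lam = (\<lambda>(M1::cmat,M2::cmat,M3::cmat). prod3 (M1*?A, M2*W2, M3*W3))"
      have goodL: "\<forall>M\<in>set Ls. Lam M \<in> carrier_mat 64 8 \<and> good (Lam M)"
      proof
        fix M assume M: "M \<in> set Ls"
        obtain M1 M2 M3 where MM: "M = (M1,M2,M3)" by (cases M) auto
        have c: "M1 \<in> carrier_mat 4 d'" "M2 \<in> carrier_mat 4 d2" "M3 \<in> carrier_mat 4 d3" using cL M MM by auto
        have mem: "(M1 * K, M2, M3) \<in> set (concat (map (\<lambda>(d', Ks, Ls). concat (map (\<lambda>K. map (\<lambda>(L1, L2, L3). (L1 * K, L2, L3)) Ls) Ks)) outs))"
          using mem_leaf[OF o K M, of "\<lambda>K (L1, L2, L3). (L1 * K, L2, L3)"] MM by simp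
        have "good (prod3 ((M1*K)*W1, M2*W2, M3*W3))" using bspec[OF G mem] by simp
        moreover have "(M1*K)*W1 = M1*?A" by (rule assoc_mult_mat[OF c(1) cK W1])
        ultimately have "good (Lam M)" unfolding Lam_def MM by simp
        moreover have "Lam M \<in> carrier_mat (4*4*4) (2*2*2)" unfolding Lam_def MM prod.case
          by (rule prod3_carrier) (use c cA W1 W2 W3 in auto)
        ultimately show "Lam M \<in> carrier_mat 64 8 \<and> good (Lam M)" by simp
      qed
      obtain w where w: "\<forall>k<8. \<forall>l<8. msum 8 8 (map (\<lambda>M. adj (Lam M) * Lam M) Ls) $$ (k,l) = complex_of_real (Rt w k l)"
        using sum_good[OF goodL] by blast
      have m: "map (\<lambda>M. adj (Lam M) * Lam M) Ls = map (\<lambda>(M1,M2,M3). Gm (M1*?A, M2*W2, M3*W3)) Ls"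
        by (rule map_cong[OF refl]) (auto simp: Lam_def Gm_def)
      have H: "\<forall>k<8. \<forall>l<8. prod3 (adj ?A * ?A, 1\<^sub>m 2, 1\<^sub>m 2) $$ (k,l) = complex_of_real (Rt w k l)"
        using w br I1 I2 I3 unfolding m by simp
      have cP: "adj ?A * ?A \<in> carrier_mat 2 2" using cA by (intro mult_carrier_mat[OF adj_carrierI])
      have PF: "adj ?A * ?A = complex_of_real (Rt w 0 0) \<cdot>\<^sub>m 1\<^sub>m 2" by (rule round_P1[OF cP H])
      have e00: "(adj ?A * ?A) $$ (0,0) = complex_of_real (Rt w 0 0)" unfolding PF by simp
      have pnn: "Rt w 0 0 \<ge> 0"
      proof -
        have "complex_of_real (Rt w 0 0) = complex_of_real (\<Sum>i<d'. (cmod (?A $$ (i,0)))\<^sup>2)"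
          using e00 gram_nonneg[OF cA] by simp
        then have "Rt w 0 0 = (\<Sum>i<d'. (cmod (?A $$ (i,0)))\<^sup>2)" by (simp only: of_real_eq_iff)
        then show ?thesis by (simp add: sum_nonneg)
      qed
      have "Rt w 0 0 = 0"
      proof (rule ccontr)
        assume "Rt w 0 0 \<noteq> 0"
        then have pp: "Rt w 0 0 > 0" using pnn by simp
        let ?W' = "complex_of_real (1 / sqrt (Rt w 0 0)) \<cdot>\<^sub>m ?A"
        have cW': "?W' \<in> carrier_mat d' 2" using cA by simp
        have IW': "adj ?W' * ?W' = 1\<^sub>m 2" by (rule iso_rescale[OF cA PF pp])
        have GW': "\<forall>(M1, M2, M3)\<in>set Ls. good (prod3 (M1*?W', M2*W2, M3*W3))"
        proof (intro ballI, clarify)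
          fix M1 M2 M3 assume M: "(M1,M2,M3) \<in> set Ls"
          have c: "M1 \<in> carrier_mat 4 d'" "M2 \<in> carrier_mat 4 d2" "M3 \<in> carrier_mat 4 d3" using cL M by auto
          have "M1 * ?W' = complex_of_real (1 / sqrt (Rt w 0 0)) \<cdot>\<^sub>m (M1 * ?A)"
            by (rule mult_smult_distrib[OF c(1) cA])
          then have eq: "prod3 (M1*?W', M2*W2, M3*W3) = complex_of_real (1 / sqrt (Rt w 0 0)) \<cdot>\<^sub>m Lam (M1,M2,M3)"
            unfolding Lam_def prod.case by (simp add: prod3_smult1)
          have "Lam (M1,M2,M3) \<in> carrier_mat 64 8 \<and> good (Lam (M1,M2,M3))" using goodL M by blast
          then show "good (prod3 (M1*?W', M2*W2, M3*W3))" unfolding eq by (intro good_smult) auto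
        qed
        show False
          using IHd[rule_format, OF refl cW' W2 W3 IW' I2 I3] GW' by blast
      qed
      then show ?thesis using e00 by simp
    qed
    define Kall where "Kall = concat (map (\<lambda>(d', Ks, Ls). Ks) outs)"
    have Kmem: "\<exists>d' Ks Ls. (d',Ks,Ls) \<in> set outs \<and> K \<in> set Ks" if "K \<in> set Kall" for K
      using that unfolding Kall_def by force
    have hyp: "msum d1 d1 (map (\<lambda>K. adj K * K) Kall) = 1\<^sub>m d1"
      using round1.hyps unfolding Kall_def by (simp add: concat_Ks)
    have eqm: "map (\<lambda>K. adj (K * W1) * (K * W1)) Kall = map (\<lambda>K. adj W1 * (adj K * K) * W1) Kall"
    proof (rule map_cong[OF refl])
      fix K assume "K \<in> set Kall"
      then obtain d' Ks Ls where o: "(d',Ks,Ls) \<in> set outs" and K: "K \<in> set Ks" using Kmem by blast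
      have cK: "K \<in> carrier_mat d' d1" using sub[OF o] K by blast
      have aK: "adj K \<in> carrier_mat d1 d'" by (rule adj_carrierI[OF cK])
      have aW: "adj W1 \<in> carrier_mat 2 d1" by (rule adj_carrierI[OF W1])
      have "adj (K * W1) * (K * W1) = (adj W1 * adj K) * (K * W1)" by (simp add: adj_mult[OF cK W1])
      also have "\<dots> = adj W1 * (adj K * (K * W1))" by (rule assoc_mult_mat[OF aW aK mult_carrier_mat[OF cK W1]])
      also have "adj K * (K * W1) = (adj K * K) * W1" by (rule assoc_mult_mat[OF aK cK W1, symmetric])
      also have "adj W1 * ((adj K * K) * W1) = adj W1 * (adj K * K) * W1"
        by (rule assoc_mult_mat[OF aW mult_carrier_mat[OF aK cK] W1, symmetric])
      finally show "adj (K * W1) * (K * W1) = adj W1 * (adj K * K) * W1" .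
    qed
    have fc: "\<forall>K\<in>set Kall. adj K * K \<in> carrier_mat d1 d1"
    proof
      fix K assume "K \<in> set Kall"
      then obtain d' Ks Ls where o: "(d',Ks,Ls) \<in> set outs" and K: "K \<in> set Ks" using Kmem by blast
      have cK: "K \<in> carrier_mat d' d1" using sub[OF o] K by blast
      then show "adj K * K \<in> carrier_mat d1 d1" by (intro mult_carrier_mat[OF adj_carrierI])
    qed
    have "msum 2 2 (map (\<lambda>K. adj (K * W1) * (K * W1)) Kall) = adj W1 * msum d1 d1 (map (\<lambda>K. adj K * K) Kall) * W1"
      unfolding eqm by (rule msum_mult3[OF fc adj_carrierI[OF W1] W1])
    also have "\<dots> = 1\<^sub>m 2" unfolding hyp using W1 I1 by simp
    finally have tot: "msum 2 2 (map (\<lambda>K. adj (K * W1) * (K * W1)) Kall) = 1\<^sub>m 2" .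
    have c2: "set (map (\<lambda>K. adj (K * W1) * (K * W1)) Kall) \<subseteq> carrier_mat 2 2"
    proof
      fix X assume "X \<in> set (map (\<lambda>K. adj (K * W1) * (K * W1)) Kall)"
      then obtain K where K: "K \<in> set Kall" and X: "X = adj (K * W1) * (K * W1)" by auto
      obtain d' Ks Ls where o: "(d',Ks,Ls) \<in> set outs" and KK: "K \<in> set Ks" using Kmem[OF K] by blast
      have cK: "K \<in> carrier_mat d' d1" using sub[OF o] KK by blast
      show "X \<in> carrier_mat 2 2" unfolding X using mult_carrier_mat[OF cK W1]
        by (intro mult_carrier_mat[OF adj_carrierI])
    qed
    have "msum 2 2 (map (\<lambda>K. adj (K * W1) * (K * W1)) Kall) $$ (0,0) = sum_list (map (\<lambda>K. (adj (K * W1) * (K * W1)) $$ (0,0)) Kall)"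
      using msum_entry[OF c2, of 0 0] by (simp add: o_def)
    also have "\<dots> = sum_list (map (\<lambda>K. 0) Kall)"
    proof (rule arg_cong[where f=sum_list], rule map_cong[OF refl])
      fix K assume "K \<in> set Kall"
      then obtain d' Ks Ls where o: "(d',Ks,Ls) \<in> set outs" and KK: "K \<in> set Ks" using Kmem by blast
      show "(adj (K * W1) * (K * W1)) $$ (0,0) = 0" by (rule zero[OF o KK])
    qed
    also have "\<dots> = 0" by (induction Kall) auto
    finally show False using tot by simp
  qed
next
  case (round2 outs d2 d1 d3)
  show ?case
  proof (intro allI impI)
    fix e1 e2 e3 W1 W2 W3
    assume e: "(d1, d2, d3) = (e1, e2, e3)" and W1: "W1 \<in> carrier_mat e1 2" and W2: "W2 \<in> carrier_mat e2 2"
      and W3: "W3 \<in> carrier_mat e3 2" and I1: "adj W1 * W1 = 1\<^sub>m 2" and I2: "adj W2 * W2 = 1\<^sub>m 2"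
      and I3: "adj W3 * W3 = 1\<^sub>m 2"
      and G: "\<forall>(L1, L2, L3)\<in>set (concat (map (\<lambda>(d', Ks, Ls). concat (map (\<lambda>K. map (\<lambda>(L1, L2, L3). (L1, L2 * K, L3)) Ls) Ks)) outs)).
         good (prod3 (L1 * W1, L2 * W2, L3 * W3))"
    from e have ee: "e1 = d1" "e2 = d2" "e3 = d3" by auto
    note W1 = W1[unfolded ee] and W2 = W2[unfolded ee] and W3 = W3[unfolded ee]
    have sub: "set Ks \<subseteq> carrier_mat d' d2 \<and> locc_tree (4,4,4) (d1, d', d3) Ls \<and>
      (\<forall>f1 f2 f3 V1 V2 V3. (d1, d', d3) = (f1, f2, f3) \<longrightarrow> V1 \<in> carrier_mat f1 2 \<longrightarrow>
         V2 \<in> carrier_mat f2 2 \<longrightarrow> V3 \<in> carrier_mat f3 2 \<longrightarrow> adj V1 * V1 = 1\<^sub>m 2 \<longrightarrow>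
         adj V2 * V2 = 1\<^sub>m 2 \<longrightarrow> adj V3 * V3 = 1\<^sub>m 2 \<longrightarrow>
         (\<forall>(L1, L2, L3)\<in>set Ls. good (prod3 (L1 * V1, L2 * V2, L3 * V3))) \<longrightarrow> False)"
      if o: "(d',Ks,Ls) \<in> set outs" for d' Ks Ls
      using bspec[OF round2.IH o] round2.prems by blast
    have zero: "(adj (K * W2) * (K * W2)) $$ (0,0) = 0" if o: "(d',Ks,Ls) \<in> set outs" and K: "K \<in> set Ks" for d' Ks Ls K
    proof -
      have cK: "K \<in> carrier_mat d' d2" using sub[OF o] K by blast
      have lt: "locc_tree (4,4,4) (d1, d', d3) Ls" using sub[OF o] by blast
      have IHd: "\<forall>f1 f2 f3 V1 V2 V3. (d1, d', d3) = (f1, f2, f3) \<longrightarrow> V1 \<in> carrier_mat f1 2 \<longrightarrow>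
         V2 \<in> carrier_mat f2 2 \<longrightarrow> V3 \<in> carrier_mat f3 2 \<longrightarrow> adj V1 * V1 = 1\<^sub>m 2 \<longrightarrow>
         adj V2 * V2 = 1\<^sub>m 2 \<longrightarrow> adj V3 * V3 = 1\<^sub>m 2 \<longrightarrow>
         (\<forall>(L1, L2, L3)\<in>set Ls. good (prod3 (L1 * V1, L2 * V2, L3 * V3))) \<longrightarrow> False"
        using sub[OF o] by blast
      have cL: "\<forall>(M1,M2,M3)\<in>set Ls. M1 \<in> carrier_mat 4 d1 \<and> M2 \<in> carrier_mat 4 d' \<and> M3 \<in> carrier_mat 4 d3"
        using locc_carrier[OF lt, of 4 4 4] by auto
      have tp: "msum (d1*d'*d3) (d1*d'*d3) (map Gm Ls) = 1\<^sub>m (d1*d'*d3)"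
        using locc_tp[OF lt, of 4 4 4] by auto
      let ?A = "K * W2"
      have cA: "?A \<in> carrier_mat d' 2" using cK W2 by simp
      have br: "msum (2*2*2) (2*2*2) (map (\<lambda>(M1,M2,M3). Gm (M1*W1, M2*?A, M3*W3)) Ls) = prod3 (adj W1 * W1, adj ?A * ?A, adj W3 * W3)"
        by (rule branch[OF cL tp W1 cA W3])
      define Lam where "Lam = (\<lambda>(M1::cmat,M2::cmat,M3::cmat). prod3 (M1*W1, M2*?A, M3*W3))"
      have goodL: "\<forall>M\<in>set Ls. Lam M \<in> carrier_mat 64 8 \<and> good (Lam M)"
      proof
        fix M assume M: "M \<in> set Ls"
        obtain M1 M2 M3 where MM: "M = (M1,M2,M3)" by (cases M) auto
        have c: "M1 \<in> carrier_mat 4 d1" "M2 \<in> carrier_mat 4 d'" "M3 \<in> carrier_mat 4 d3" using cL M MM by auto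
        have mem: "(M1, M2 * K, M3) \<in> set (concat (map (\<lambda>(d', Ks, Ls). concat (map (\<lambda>K. map (\<lambda>(L1, L2, L3). (L1, L2 * K, L3)) Ls) Ks)) outs))"
          using mem_leaf[OF o K M, of "\<lambda>K (L1, L2, L3). (L1, L2 * K, L3)"] MM by simp
        have "good (prod3 (M1*W1, (M2*K)*W2, M3*W3))" using bspec[OF G mem] by simp
        moreover have "(M2*K)*W2 = M2*?A" by (rule assoc_mult_mat[OF c(2) cK W2])
        ultimately have "good (Lam M)" unfolding Lam_def MM by simp
        moreover have "Lam M \<in> carrier_mat (4*4*4) (2*2*2)" unfolding Lam_def MM prod.case
          by (rule prod3_carrier) (use c cA W1 W2 W3 in auto)
        ultimately show "Lam M \<in> carrier_mat 64 8 \<and> good (Lam M)" by simp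
      qed
      obtain w where w: "\<forall>k<8. \<forall>l<8. msum 8 8 (map (\<lambda>M. adj (Lam M) * Lam M) Ls) $$ (k,l) = complex_of_real (Rt w k l)"
        using sum_good[OF goodL] by blast
      have m: "map (\<lambda>M. adj (Lam M) * Lam M) Ls = map (\<lambda>(M1,M2,M3). Gm (M1*W1, M2*?A, M3*W3)) Ls"
        by (rule map_cong[OF refl]) (auto simp: Lam_def Gm_def)
      have H: "\<forall>k<8. \<forall>l<8. prod3 (1\<^sub>m 2, adj ?A * ?A, 1\<^sub>m 2) $$ (k,l) = complex_of_real (Rt w k l)"
        using w br I1 I2 I3 unfolding m by simp
      have cP: "adj ?A * ?A \<in> carrier_mat 2 2" using cA by (intro mult_carrier_mat[OF adj_carrierI])
      have PF: "adj ?A * ?A = complex_of_real (Rt w 0 0) \<cdot>\<^sub>m 1\<^sub>m 2" by (rule round_P2[OF cP H])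
      have e00: "(adj ?A * ?A) $$ (0,0) = complex_of_real (Rt w 0 0)" unfolding PF by simp
      have pnn: "Rt w 0 0 \<ge> 0"
      proof -
        have "complex_of_real (Rt w 0 0) = complex_of_real (\<Sum>i<d'. (cmod (?A $$ (i,0)))\<^sup>2)"
          using e00 gram_nonneg[OF cA] by simp
        then have "Rt w 0 0 = (\<Sum>i<d'. (cmod (?A $$ (i,0)))\<^sup>2)" by (simp only: of_real_eq_iff)
        then show ?thesis by (simp add: sum_nonneg)
      qed
      have "Rt w 0 0 = 0"
      proof (rule ccontr)
        assume "Rt w 0 0 \<noteq> 0"
        then have pp: "Rt w 0 0 > 0" using pnn by simp
        let ?W' = "complex_of_real (1 / sqrt (Rt w 0 0)) \<cdot>\<^sub>m ?A"
        have cW': "?W' \<in> carrier_mat d' 2" using cA by simp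
        have IW': "adj ?W' * ?W' = 1\<^sub>m 2" by (rule iso_rescale[OF cA PF pp])
        have GW': "\<forall>(M1, M2, M3)\<in>set Ls. good (prod3 (M1*W1, M2*?W', M3*W3))"
        proof (intro ballI, clarify)
          fix M1 M2 M3 assume M: "(M1,M2,M3) \<in> set Ls"
          have c: "M1 \<in> carrier_mat 4 d1" "M2 \<in> carrier_mat 4 d'" "M3 \<in> carrier_mat 4 d3" using cL M by auto
          have "M2 * ?W' = complex_of_real (1 / sqrt (Rt w 0 0)) \<cdot>\<^sub>m (M2 * ?A)"
            by (rule mult_smult_distrib[OF c(2) cA])
          then have eq: "prod3 (M1*W1, M2*?W', M3*W3) = complex_of_real (1 / sqrt (Rt w 0 0)) \<cdot>\<^sub>m Lam (M1,M2,M3)"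
            unfolding Lam_def prod.case by (simp add: prod3_smult2)
          have "Lam (M1,M2,M3) \<in> carrier_mat 64 8 \<and> good (Lam (M1,M2,M3))" using goodL M by blast
          then show "good (prod3 (M1*W1, M2*?W', M3*W3))" unfolding eq by (intro good_smult) auto
        qed
        show False
          using IHd[rule_format, OF refl W1 cW' W3 I1 IW' I3] GW' by blast
      qed
      then show ?thesis using e00 by simp
    qed
    define Kall where "Kall = concat (map (\<lambda>(d', Ks, Ls). Ks) outs)"
    have Kmem: "\<exists>d' Ks Ls. (d',Ks,Ls) \<in> set outs \<and> K \<in> set Ks" if "K \<in> set Kall" for K
      using that unfolding Kall_def by force
    have hyp: "msum d2 d2 (map (\<lambda>K. adj K * K) Kall) = 1\<^sub>m d2"
      using round2.hyps unfolding Kall_def by (simp add: concat_Ks)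
    have eqm: "map (\<lambda>K. adj (K * W2) * (K * W2)) Kall = map (\<lambda>K. adj W2 * (adj K * K) * W2) Kall"
    proof (rule map_cong[OF refl])
      fix K assume "K \<in> set Kall"
      then obtain d' Ks Ls where o: "(d',Ks,Ls) \<in> set outs" and K: "K \<in> set Ks" using Kmem by blast
      have cK: "K \<in> carrier_mat d' d2" using sub[OF o] K by blast
      have aK: "adj K \<in> carrier_mat d2 d'" by (rule adj_carrierI[OF cK])
      have aW: "adj W2 \<in> carrier_mat 2 d2" by (rule adj_carrierI[OF W2])
      have "adj (K * W2) * (K * W2) = (adj W2 * adj K) * (K * W2)" by (simp add: adj_mult[OF cK W2])
      also have "\<dots> = adj W2 * (adj K * (K * W2))" by (rule assoc_mult_mat[OF aW aK mult_carrier_mat[OF cK W2]])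
      also have "adj K * (K * W2) = (adj K * K) * W2" by (rule assoc_mult_mat[OF aK cK W2, symmetric])
      also have "adj W2 * ((adj K * K) * W2) = adj W2 * (adj K * K) * W2"
        by (rule assoc_mult_mat[OF aW mult_carrier_mat[OF aK cK] W2, symmetric])
      finally show "adj (K * W2) * (K * W2) = adj W2 * (adj K * K) * W2" .
    qed
    have fc: "\<forall>K\<in>set Kall. adj K * K \<in> carrier_mat d2 d2"
    proof
      fix K assume "K \<in> set Kall"
      then obtain d' Ks Ls where o: "(d',Ks,Ls) \<in> set outs" and K: "K \<in> set Ks" using Kmem by blast
      have cK: "K \<in> carrier_mat d' d2" using sub[OF o] K by blast
      then show "adj K * K \<in> carrier_mat d2 d2" by (intro mult_carrier_mat[OF adj_carrierI])
    qed
    have "msum 2 2 (map (\<lambda>K. adj (K * W2) * (K * W2)) Kall) = adj W2 * msum d2 d2 (map (\<lambda>K. adj K * K) Kall) * W2"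
      unfolding eqm by (rule msum_mult3[OF fc adj_carrierI[OF W2] W2])
    also have "\<dots> = 1\<^sub>m 2" unfolding hyp using W2 I2 by simp
    finally have tot: "msum 2 2 (map (\<lambda>K. adj (K * W2) * (K * W2)) Kall) = 1\<^sub>m 2" .
    have c2: "set (map (\<lambda>K. adj (K * W2) * (K * W2)) Kall) \<subseteq> carrier_mat 2 2"
    proof
      fix X assume "X \<in> set (map (\<lambda>K. adj (K * W2) * (K * W2)) Kall)"
      then obtain K where K: "K \<in> set Kall" and X: "X = adj (K * W2) * (K * W2)" by auto
      obtain d' Ks Ls where o: "(d',Ks,Ls) \<in> set outs" and KK: "K \<in> set Ks" using Kmem[OF K] by blast
      have cK: "K \<in> carrier_mat d' d2" using sub[OF o] KK by blast
      show "X \<in> carrier_mat 2 2" unfolding X using mult_carrier_mat[OF cK W2]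
        by (intro mult_carrier_mat[OF adj_carrierI])
    qed
    have "msum 2 2 (map (\<lambda>K. adj (K * W2) * (K * W2)) Kall) $$ (0,0) = sum_list (map (\<lambda>K. (adj (K * W2) * (K * W2)) $$ (0,0)) Kall)"
      using msum_entry[OF c2, of 0 0] by (simp add: o_def)
    also have "\<dots> = sum_list (map (\<lambda>K. 0) Kall)"
    proof (rule arg_cong[where f=sum_list], rule map_cong[OF refl])
      fix K assume "K \<in> set Kall"
      then obtain d' Ks Ls where o: "(d',Ks,Ls) \<in> set outs" and KK: "K \<in> set Ks" using Kmem by blast
      show "(adj (K * W2) * (K * W2)) $$ (0,0) = 0" by (rule zero[OF o KK])
    qed
    also have "\<dots> = 0" by (induction Kall) auto
    finally show False using tot by simp
  qed
next
  case (round3 outs d3 d1 d2)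
  show ?case
  proof (intro allI impI)
    fix e1 e2 e3 W1 W2 W3
    assume e: "(d1, d2, d3) = (e1, e2, e3)" and W1: "W1 \<in> carrier_mat e1 2" and W2: "W2 \<in> carrier_mat e2 2"
      and W3: "W3 \<in> carrier_mat e3 2" and I1: "adj W1 * W1 = 1\<^sub>m 2" and I2: "adj W2 * W2 = 1\<^sub>m 2"
      and I3: "adj W3 * W3 = 1\<^sub>m 2"
      and G: "\<forall>(L1, L2, L3)\<in>set (concat (map (\<lambda>(d', Ks, Ls). concat (map (\<lambda>K. map (\<lambda>(L1, L2, L3). (L1, L2, L3 * K)) Ls) Ks)) outs)).
         good (prod3 (L1 * W1, L2 * W2, L3 * W3))"
    from e have ee: "e1 = d1" "e2 = d2" "e3 = d3" by auto
    note W1 = W1[unfolded ee] and W2 = W2[unfolded ee] and W3 = W3[unfolded ee]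
    have sub: "set Ks \<subseteq> carrier_mat d' d3 \<and> locc_tree (4,4,4) (d1, d2, d') Ls \<and>
      (\<forall>f1 f2 f3 V1 V2 V3. (d1, d2, d') = (f1, f2, f3) \<longrightarrow> V1 \<in> carrier_mat f1 2 \<longrightarrow>
         V2 \<in> carrier_mat f2 2 \<longrightarrow> V3 \<in> carrier_mat f3 2 \<longrightarrow> adj V1 * V1 = 1\<^sub>m 2 \<longrightarrow>
         adj V2 * V2 = 1\<^sub>m 2 \<longrightarrow> adj V3 * V3 = 1\<^sub>m 2 \<longrightarrow>
         (\<forall>(L1, L2, L3)\<in>set Ls. good (prod3 (L1 * V1, L2 * V2, L3 * V3))) \<longrightarrow> False)"
      if o: "(d',Ks,Ls) \<in> set outs" for d' Ks Ls
      using bspec[OF round3.IH o] round3.prems by blast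
    have zero: "(adj (K * W3) * (K * W3)) $$ (0,0) = 0" if o: "(d',Ks,Ls) \<in> set outs" and K: "K \<in> set Ks" for d' Ks Ls K
    proof -
      have cK: "K \<in> carrier_mat d' d3" using sub[OF o] K by blast
      have lt: "locc_tree (4,4,4) (d1, d2, d') Ls" using sub[OF o] by blast
      have IHd: "\<forall>f1 f2 f3 V1 V2 V3. (d1, d2, d') = (f1, f2, f3) \<longrightarrow> V1 \<in> carrier_mat f1 2 \<longrightarrow>
         V2 \<in> carrier_mat f2 2 \<longrightarrow> V3 \<in> carrier_mat f3 2 \<longrightarrow> adj V1 * V1 = 1\<^sub>m 2 \<longrightarrow>
         adj V2 * V2 = 1\<^sub>m 2 \<longrightarrow> adj V3 * V3 = 1\<^sub>m 2 \<longrightarrow>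
         (\<forall>(L1, L2, L3)\<in>set Ls. good (prod3 (L1 * V1, L2 * V2, L3 * V3))) \<longrightarrow> False"
        using sub[OF o] by blast
      have cL: "\<forall>(M1,M2,M3)\<in>set Ls. M1 \<in> carrier_mat 4 d1 \<and> M2 \<in> carrier_mat 4 d2 \<and> M3 \<in> carrier_mat 4 d'"
        using locc_carrier[OF lt, of 4 4 4] by auto
      have tp: "msum (d1*d2*d') (d1*d2*d') (map Gm Ls) = 1\<^sub>m (d1*d2*d')"
        using locc_tp[OF lt, of 4 4 4] by auto
      let ?A = "K * W3"
      have cA: "?A \<in> carrier_mat d' 2" using cK W3 by simp
      have br: "msum (2*2*2) (2*2*2) (map (\<lambda>(M1,M2,M3). Gm (M1*W1, M2*W2, M3*?A)) Ls) = prod3 (adj W1 * W1, adj W2 * W2, adj ?A * ?A)"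
        by (rule branch[OF cL tp W1 W2 cA])
      define Lam where "Lam = (\<lambda>(M1::cmat,M2::cmat,M3::cmat). prod3 (M1*W1, M2*W2, M3*?A))"
      have goodL: "\<forall>M\<in>set Ls. Lam M \<in> carrier_mat 64 8 \<and> good (Lam M)"
      proof
        fix M assume M: "M \<in> set Ls"
        obtain M1 M2 M3 where MM: "M = (M1,M2,M3)" by (cases M) auto
        have c: "M1 \<in> carrier_mat 4 d1" "M2 \<in> carrier_mat 4 d2" "M3 \<in> carrier_mat 4 d'" using cL M MM by auto
        have mem: "(M1, M2, M3 * K) \<in> set (concat (map (\<lambda>(d', Ks, Ls). concat (map (\<lambda>K. map (\<lambda>(L1, L2, L3). (L1, L2, L3 * K)) Ls) Ks)) outs))"
          using mem_leaf[OF o K M, of "\<lambda>K (L1, L2, L3). (L1, L2, L3 * K)"] MM by simp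
        have "good (prod3 (M1*W1, M2*W2, (M3*K)*W3))" using bspec[OF G mem] by simp
        moreover have "(M3*K)*W3 = M3*?A" by (rule assoc_mult_mat[OF c(3) cK W3])
        ultimately have "good (Lam M)" unfolding Lam_def MM by simp
        moreover have "Lam M \<in> carrier_mat (4*4*4) (2*2*2)" unfolding Lam_def MM prod.case
          by (rule prod3_carrier) (use c cA W1 W2 W3 in auto)
        ultimately show "Lam M \<in> carrier_mat 64 8 \<and> good (Lam M)" by simp
      qed
      obtain w where w: "\<forall>k<8. \<forall>l<8. msum 8 8 (map (\<lambda>M. adj (Lam M) * Lam M) Ls) $$ (k,l) = complex_of_real (Rt w k l)"
        using sum_good[OF goodL] by blast
      have m: "map (\<lambda>M. adj (Lam M) * Lam M) Ls = map (\<lambda>(M1,M2,M3). Gm (M1*W1, M2*W2, M3*?A)) Ls"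
        by (rule map_cong[OF refl]) (auto simp: Lam_def Gm_def)
      have H: "\<forall>k<8. \<forall>l<8. prod3 (1\<^sub>m 2, 1\<^sub>m 2, adj ?A * ?A) $$ (k,l) = complex_of_real (Rt w k l)"
        using w br I1 I2 I3 unfolding m by simp
      have cP: "adj ?A * ?A \<in> carrier_mat 2 2" using cA by (intro mult_carrier_mat[OF adj_carrierI])
      have PF: "adj ?A * ?A = complex_of_real (Rt w 0 0) \<cdot>\<^sub>m 1\<^sub>m 2" by (rule round_P3[OF cP H])
      have e00: "(adj ?A * ?A) $$ (0,0) = complex_of_real (Rt w 0 0)" unfolding PF by simp
      have pnn: "Rt w 0 0 \<ge> 0"
      proof -
        have "complex_of_real (Rt w 0 0) = complex_of_real (\<Sum>i<d'. (cmod (?A $$ (i,0)))\<^sup>2)"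
          using e00 gram_nonneg[OF cA] by simp
        then have "Rt w 0 0 = (\<Sum>i<d'. (cmod (?A $$ (i,0)))\<^sup>2)" by (simp only: of_real_eq_iff)
        then show ?thesis by (simp add: sum_nonneg)
      qed
      have "Rt w 0 0 = 0"
      proof (rule ccontr)
        assume "Rt w 0 0 \<noteq> 0"
        then have pp: "Rt w 0 0 > 0" using pnn by simp
        let ?W' = "complex_of_real (1 / sqrt (Rt w 0 0)) \<cdot>\<^sub>m ?A"
        have cW': "?W' \<in> carrier_mat d' 2" using cA by simp
        have IW': "adj ?W' * ?W' = 1\<^sub>m 2" by (rule iso_rescale[OF cA PF pp])
        have GW': "\<forall>(M1, M2, M3)\<in>set Ls. good (prod3 (M1*W1, M2*W2, M3*?W'))"
        proof (intro ballI, clarify)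
          fix M1 M2 M3 assume M: "(M1,M2,M3) \<in> set Ls"
          have c: "M1 \<in> carrier_mat 4 d1" "M2 \<in> carrier_mat 4 d2" "M3 \<in> carrier_mat 4 d'" using cL M by auto
          have "M3 * ?W' = complex_of_real (1 / sqrt (Rt w 0 0)) \<cdot>\<^sub>m (M3 * ?A)"
            by (rule mult_smult_distrib[OF c(3) cA])
          then have eq: "prod3 (M1*W1, M2*W2, M3*?W') = complex_of_real (1 / sqrt (Rt w 0 0)) \<cdot>\<^sub>m Lam (M1,M2,M3)"
            unfolding Lam_def prod.case by (simp add: prod3_smult3)
          have "Lam (M1,M2,M3) \<in> carrier_mat 64 8 \<and> good (Lam (M1,M2,M3))" using goodL M by blast
          then show "good (prod3 (M1*W1, M2*W2, M3*?W'))" unfolding eq by (intro good_smult) auto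
        qed
        show False
          using IHd[rule_format, OF refl W1 W2 cW' I1 I2 IW'] GW' by blast
      qed
      then show ?thesis using e00 by simp
    qed
    define Kall where "Kall = concat (map (\<lambda>(d', Ks, Ls). Ks) outs)"
    have Kmem: "\<exists>d' Ks Ls. (d',Ks,Ls) \<in> set outs \<and> K \<in> set Ks" if "K \<in> set Kall" for K
      using that unfolding Kall_def by force
    have hyp: "msum d3 d3 (map (\<lambda>K. adj K * K) Kall) = 1\<^sub>m d3"
      using round3.hyps unfolding Kall_def by (simp add: concat_Ks)
    have eqm: "map (\<lambda>K. adj (K * W3) * (K * W3)) Kall = map (\<lambda>K. adj W3 * (adj K * K) * W3) Kall"
    proof (rule map_cong[OF refl])
      fix K assume "K \<in> set Kall"
      then obtain d' Ks Ls where o: "(d',Ks,Ls) \<in> set outs" and K: "K \<in> set Ks" using Kmem by blast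
      have cK: "K \<in> carrier_mat d' d3" using sub[OF o] K by blast
      have aK: "adj K \<in> carrier_mat d3 d'" by (rule adj_carrierI[OF cK])
      have aW: "adj W3 \<in> carrier_mat 2 d3" by (rule adj_carrierI[OF W3])
      have "adj (K * W3) * (K * W3) = (adj W3 * adj K) * (K * W3)" by (simp add: adj_mult[OF cK W3])
      also have "\<dots> = adj W3 * (adj K * (K * W3))" by (rule assoc_mult_mat[OF aW aK mult_carrier_mat[OF cK W3]])
      also have "adj K * (K * W3) = (adj K * K) * W3" by (rule assoc_mult_mat[OF aK cK W3, symmetric])
      also have "adj W3 * ((adj K * K) * W3) = adj W3 * (adj K * K) * W3"
        by (rule assoc_mult_mat[OF aW mult_carrier_mat[OF aK cK] W3, symmetric])
      finally show "adj (K * W3) * (K * W3) = adj W3 * (adj K * K) * W3" .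
    qed
    have fc: "\<forall>K\<in>set Kall. adj K * K \<in> carrier_mat d3 d3"
    proof
      fix K assume "K \<in> set Kall"
      then obtain d' Ks Ls where o: "(d',Ks,Ls) \<in> set outs" and K: "K \<in> set Ks" using Kmem by blast
      have cK: "K \<in> carrier_mat d' d3" using sub[OF o] K by blast
      then show "adj K * K \<in> carrier_mat d3 d3" by (intro mult_carrier_mat[OF adj_carrierI])
    qed
    have "msum 2 2 (map (\<lambda>K. adj (K * W3) * (K * W3)) Kall) = adj W3 * msum d3 d3 (map (\<lambda>K. adj K * K) Kall) * W3"
      unfolding eqm by (rule msum_mult3[OF fc adj_carrierI[OF W3] W3])
    also have "\<dots> = 1\<^sub>m 2" unfolding hyp using W3 I3 by simp
    finally have tot: "msum 2 2 (map (\<lambda>K. adj (K * W3) * (K * W3)) Kall) = 1\<^sub>m 2" .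
    have c2: "set (map (\<lambda>K. adj (K * W3) * (K * W3)) Kall) \<subseteq> carrier_mat 2 2"
    proof
      fix X assume "X \<in> set (map (\<lambda>K. adj (K * W3) * (K * W3)) Kall)"
      then obtain K where K: "K \<in> set Kall" and X: "X = adj (K * W3) * (K * W3)" by auto
      obtain d' Ks Ls where o: "(d',Ks,Ls) \<in> set outs" and KK: "K \<in> set Ks" using Kmem[OF K] by blast
      have cK: "K \<in> carrier_mat d' d3" using sub[OF o] KK by blast
      show "X \<in> carrier_mat 2 2" unfolding X using mult_carrier_mat[OF cK W3]
        by (intro mult_carrier_mat[OF adj_carrierI])
    qed
    have "msum 2 2 (map (\<lambda>K. adj (K * W3) * (K * W3)) Kall) $$ (0,0) = sum_list (map (\<lambda>K. (adj (K * W3) * (K * W3)) $$ (0,0)) Kall)"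
      using msum_entry[OF c2, of 0 0] by (simp add: o_def)
    also have "\<dots> = sum_list (map (\<lambda>K. 0) Kall)"
    proof (rule arg_cong[where f=sum_list], rule map_cong[OF refl])
      fix K assume "K \<in> set Kall"
      then obtain d' Ks Ls where o: "(d',Ks,Ls) \<in> set outs" and KK: "K \<in> set Ks" using Kmem by blast
      show "(adj (K * W3) * (K * W3)) $$ (0,0) = 0" by (rule zero[OF o KK])
    qed
    also have "\<dots> = 0" by (induction Kall) auto
    finally show False using tot by simp
  qed
qed


definition Ekr :: "nat \<Rightarrow> cmat" where "Ekr a = ket 4 a * adj (qket a)"

lemma Ekr_carrier: "Ekr a \<in> carrier_mat 4 2"
  unfolding Ekr_def using ket_carrier[of 4 a] adj_carrierI[OF qket_carrier[of a]] by (rule mult_carrier_mat)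

lemma Ekr_entry: "i < 4 \<Longrightarrow> j < 2 \<Longrightarrow> Ekr a $$ (i,j) = (if i = a then complex_of_real (qr a j) else 0)"
  unfolding Ekr_def
  using carrier_matD[OF qket_carrier[of a]]
  by (subst mult_entry[OF ket_carrier adj_carrierI[OF qket_carrier]]) (auto simp: ket_entry qket_entry)

definition Es0 :: "(cmat \<times> cmat \<times> cmat) list" where
  "Es0 = map (\<lambda>(a,b,c). (complex_of_real (1 / sqrt 2) \<cdot>\<^sub>m Ekr a, Ekr b, Ekr c)) Tset"

definition Kt :: "nat \<times> nat \<times> nat \<Rightarrow> cmat" where
  "Kt t = (case t of (a,b,c) \<Rightarrow> prod3 (complex_of_real (1 / sqrt 2) \<cdot>\<^sub>m Ekr a, Ekr b, Ekr c))"

lemma Ks0_eq: "map prod3 Es0 = map Kt Tset"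
  unfolding Es0_def Kt_def by (auto simp: case_prod_beta)

lemma Kt_carrier: "Kt t \<in> carrier_mat 64 8"
proof -
  obtain a b c where t: "t = (a,b,c)" by (cases t) auto
  have "Kt t \<in> carrier_mat (4*4*4) (2*2*2)"
    unfolding t Kt_def prod.case by (rule prod3_carrier) (auto simp: Ekr_carrier)
  then show ?thesis by simp
qed

lemma Kt_entry:
  assumes "o' < 64" "k < 8"
  shows "Kt t $$ (o',k) = complex_of_real (1 / sqrt 2) * (if dec o' = t then complex_of_real (V t k) else 0)"
proof -
  obtain a b c where t: "t = (a,b,c)" by (cases t) auto
  have ok: "o' < 4*4*4" "k < 2*2*2" using assms by simp_all
  have 4: "(4::nat) * 4 = 16" "(2::nat) * 2 = 4" by simp_all
  have cs: "complex_of_real (1 / sqrt 2) \<cdot>\<^sub>m Ekr a \<in> carrier_mat 4 2" using Ekr_carrier by simp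
  have "Kt t $$ (o',k) = (complex_of_real (1 / sqrt 2) \<cdot>\<^sub>m Ekr a) $$ (o' div 16, k div 4) * Ekr b $$ ((o' div 4) mod 4, (k div 2) mod 2)
     * Ekr c $$ (o' mod 4, k mod 2)"
    unfolding t Kt_def prod.case using prod3_entry[OF cs Ekr_carrier Ekr_carrier ok] unfolding 4 .
  also have "\<dots> = complex_of_real (1 / sqrt 2) * (if dec o' = t then complex_of_real (V t k) else 0)"
  proof -
    have h: "o' div 16 < 4" "k div 4 < 2" "(o' div 4) mod 4 < 4" "(k div 2) mod 2 < 2" "o' mod 4 < 4" "k mod 2 < 2"
      using assms by auto
    show ?thesis using h Ekr_carrier[of a]
      by (simp add: Ekr_entry t dec_def V_def)
  qed
  finally show ?thesis .
qed

lemma Kt_pair: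
  assumes "o1 < 64" "o2 < 64" "k < 8" "l < 8"
  shows "Kt t $$ (o1,k) * cnj (Kt t $$ (o2,l)) = (if dec o1 = t \<and> dec o2 = t then complex_of_real (V t k * V t l / 2) else 0)"
proof -
  have s: "complex_of_real (1 / sqrt 2) * complex_of_real (1 / sqrt 2) = complex_of_real (1/2)"
  proof -
    have "(1 / sqrt 2) * (1 / sqrt 2) = (1/2 :: real)" by (simp add: power2_eq_square[symmetric] power_divide)
    then show ?thesis by (simp only: of_real_mult[symmetric])
  qed
  show ?thesis unfolding Kt_entry[OF assms(1,3)] Kt_entry[OF assms(2,4)]
    using s by (auto simp: mult_ac)
qed

lemma choi_sum:
  assumes "o1 < 64" "o2 < 64" "k < 8" "l < 8"
  shows "sum_list (map (\<lambda>K. K $$ (o1,k) * cnj (K $$ (o2,l))) (map prod3 Es0))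
     = (if o1 = o2 then complex_of_real (Vm o1 k * Vm o1 l / 2) else 0)"
proof -
  have "sum_list (map (\<lambda>K. K $$ (o1,k) * cnj (K $$ (o2,l))) (map prod3 Es0))
     = sum_list (map (\<lambda>t. if dec o1 = t \<and> dec o2 = t then complex_of_real (V t k * V t l / 2) else 0) Tset)"
    unfolding Ks0_eq by (simp add: o_def Kt_pair[OF assms])
  also have "\<dots> = (if dec o1 = dec o2 \<and> dec o1 \<in> set Tset then complex_of_real (V (dec o1) k * V (dec o1) l / 2) else 0)"
    by (simp only: delta_T)
  also have "\<dots> = (if o1 = o2 then complex_of_real (Vm o1 k * Vm o1 l / 2) else 0)"
    using dec_inj[OF assms(1,2)] by (auto simp: Vm_def)
  finally show ?thesis .
qed


lemma Rt1: assumes "k < 8" "l < 8" shows "Rt (\<lambda>_. 1) k l = (if k = l then 2 else 0)"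
proof -
  have k: "k = 0 \<or> k = 1 \<or> k = 2 \<or> k = 3 \<or> k = 4 \<or> k = 5 \<or> k = 6 \<or> k = 7" using assms by auto
  have l: "l = 0 \<or> l = 1 \<or> l = 2 \<or> l = 3 \<or> l = 4 \<or> l = 5 \<or> l = 6 \<or> l = 7" using assms by auto
  from k l show ?thesis
    by (elim disjE; simp add: Rt_def VV_def qq_def Tset_def enc_def)
qed

lemma sum_delta_dec:
  assumes t: "t \<in> set Tset"
  shows "(\<Sum>o'<64. if dec o' = t then F else 0) = (F :: 'a::comm_monoid_add)"
proof -
  have "(\<Sum>o'<64. if dec o' = t then F else 0) = (\<Sum>o'<64. if dec o' \<in> set Tset then (\<lambda>s. if s = t then F else 0) (dec o') else 0)"
    using t by (intro sum.cong) auto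
  also have "\<dots> = sum_list (map (\<lambda>s. if s = t then F else 0) Tset)" by (rule sum_T)
  also have "\<dots> = (\<Sum>s\<in>set Tset. if s = t then F else 0)" using distinct_Tset by (simp add: sum_list_distinct_conv_sum_set)
  also have "\<dots> = F" using t by simp
  finally show ?thesis .
qed

lemma sl_half: "sum_list (map (\<lambda>t. f t / 2) xs) = sum_list (map (\<lambda>t. 1 * f t) xs) / (2::real)"
  by (induction xs) (auto simp: add_divide_distrib)

lemma gram_Kt:
  assumes t: "t \<in> set Tset" and "k < 8" "l < 8"
  shows "(adj (Kt t) * Kt t) $$ (k,l) = complex_of_real (VV t k l / 2)"
proof -
  have "(adj (Kt t) * Kt t) $$ (k,l) = (\<Sum>o'<64. adj (Kt t) $$ (k,o') * Kt t $$ (o',l))"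
    by (rule mult_entry[OF adj_carrierI[OF Kt_carrier] Kt_carrier assms(2,3)])
  also have "\<dots> = (\<Sum>o'<64. if dec o' = t then complex_of_real (V t l * V t k / 2) else 0)"
  proof (rule sum.cong[OF refl])
    fix o' assume "o' \<in> {..<64::nat}"
    then have o: "o' < 64" by simp
    have "adj (Kt t) $$ (k,o') = cnj (Kt t $$ (o',k))" using Kt_carrier[of t] o assms by simp
    then show "adj (Kt t) $$ (k,o') * Kt t $$ (o',l) = (if dec o' = t then complex_of_real (V t l * V t k / 2) else 0)"
      using Kt_pair[OF o o assms(3,2), of t] by (simp add: mult.commute)
  qed
  also have "\<dots> = complex_of_real (V t l * V t k / 2)" by (rule sum_delta_dec[OF t])
  also have "\<dots> = complex_of_real (VV t k l / 2)" using V_VV[OF assms(2,3)] by (simp add: mult.commute)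
  finally show ?thesis .
qed

lemma S1: "msum 8 8 (map (\<lambda>K. adj K * K) (map prod3 Es0)) = 1\<^sub>m 8"
proof -
  have c: "set (map (\<lambda>K. adj K * K) (map prod3 Es0)) \<subseteq> carrier_mat 8 8"
    unfolding Ks0_eq using Kt_carrier by (auto intro!: mult_carrier_mat[OF adj_carrierI])
  show ?thesis
proof (rule eq_matI)
  fix k l assume "k < dim_row (1\<^sub>m 8 :: cmat)" "l < dim_col (1\<^sub>m 8 :: cmat)"
  then have kl: "k < 8" "l < 8" by auto
  have "msum 8 8 (map (\<lambda>K. adj K * K) (map prod3 Es0)) $$ (k,l) = sum_list (map (\<lambda>t. (adj (Kt t) * Kt t) $$ (k,l)) Tset)"
    using msum_entry[OF c kl] unfolding Ks0_eq by (simp add: o_def)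
  also have "\<dots> = sum_list (map (\<lambda>t. complex_of_real (VV t k l / 2)) Tset)"
    using gram_Kt kl by (intro arg_cong[where f=sum_list] map_cong) auto
  also have "\<dots> = complex_of_real (Rt (\<lambda>_. 1) k l / 2)"
  proof -
    have "sum_list (map (\<lambda>t. complex_of_real (VV t k l / 2)) Tset) = complex_of_real (sum_list (map (\<lambda>t. VV t k l / 2) Tset))"
    proof -
      have "map (\<lambda>t. complex_of_real (VV t k l / 2)) Tset = map complex_of_real (map (\<lambda>t. VV t k l / 2) Tset)"
        by (simp only: map_map o_def)
      then show ?thesis by (simp only: sum_list_of_real)
    qed
    then show ?thesis unfolding Rt_def sl_half .
  qed
  also have "\<dots> = (1\<^sub>m 8 :: cmat) $$ (k,l)" using kl by (simp add: Rt1)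
  finally show "msum 8 8 (map (\<lambda>K. adj K * K) (map prod3 Es0)) $$ (k,l) = (1\<^sub>m 8 :: cmat) $$ (k,l)" .
qed (use msum_carrier[OF c] in auto)
qed


lemma tr_def': "A \<in> carrier_mat n n \<Longrightarrow> tr A = (\<Sum>i<n. A $$ (i,i))"
  by (simp add: tr_def)

lemma tr_comm:
  assumes A: "A \<in> carrier_mat n m" and B: "B \<in> carrier_mat m n"
  shows "tr (A * B) = tr (B * A)"
proof -
  have "tr (A * B) = (\<Sum>i<n. \<Sum>j<m. A $$ (i,j) * B $$ (j,i))"
    unfolding tr_def'[OF mult_carrier_mat[OF A B]] by (intro sum.cong refl mult_entry[OF A B]) auto
  also have "\<dots> = (\<Sum>j<m. \<Sum>i<n. B $$ (j,i) * A $$ (i,j))"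
    by (subst sum.swap) (simp add: mult.commute)
  also have "\<dots> = tr (B * A)"
    unfolding tr_def'[OF mult_carrier_mat[OF B A]] by (intro sum.cong refl mult_entry[OF B A, symmetric]) auto
  finally show ?thesis .
qed

lemma tr_add: assumes A: "A \<in> carrier_mat n n" and B: "B \<in> carrier_mat n n" shows "tr (A + B) = tr A + tr B"
proof -
  have "tr (A + B) = (\<Sum>i<n. (A + B) $$ (i,i))" by (rule tr_def') (use A B in simp)
  also have "\<dots> = (\<Sum>i<n. A $$ (i,i) + B $$ (i,i))" using A B by (intro sum.cong) auto
  also have "\<dots> = tr A + tr B" by (simp add: sum.distrib tr_def'[OF A] tr_def'[OF B])
  finally show ?thesis .
qed

lemma tr_msum: "set Xs \<subseteq> carrier_mat n n \<Longrightarrow> tr (msum n n Xs) = sum_list (map tr Xs)"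
proof (induction Xs)
  case Nil then show ?case by (simp add: tr_def)
next
  case (Cons X Xs)
  then have "msum n n Xs \<in> carrier_mat n n" by (intro msum_carrier) auto
  with Cons show ?case using tr_add[of X n "msum n n Xs"] by simp
qed

lemma msum_mult_left:
  assumes "\<forall>x\<in>set xs. f x \<in> carrier_mat n p" "B \<in> carrier_mat m n"
  shows "msum m p (map (\<lambda>x. B * f x) xs) = B * msum n p (map f xs)"
  using assms
proof (induction xs)
  case Nil then show ?case by simp
next
  case (Cons x xs)
  have S: "msum n p (map f xs) \<in> carrier_mat n p" using Cons by (intro msum_carrier) auto
  have fx: "f x \<in> carrier_mat n p" using Cons by auto
  show ?case using Cons S fx by (simp add: mult_add_distrib_mat)
qed

definition M0 :: "cmat \<Rightarrow> cmat" where "M0 = kraus_apply 64 (map prod3 Es0)"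

lemma Ks0_carrier: "set (map prod3 Es0) \<subseteq> carrier_mat 64 8"
  unfolding Ks0_eq using Kt_carrier by auto

lemma M0_TP: "TP_map 8 64 M0"
  unfolding TP_map_def
proof
  fix X :: cmat assume X: "X \<in> carrier_mat 8 8"
  let ?Ks = "map prod3 Es0"
  have cK: "\<forall>K\<in>set ?Ks. K \<in> carrier_mat 64 8" using Ks0_carrier by auto
  have c1: "set (map (\<lambda>K. K * X * adj K) ?Ks) \<subseteq> carrier_mat 64 64"
    using cK X by (auto intro!: mult_carrier_mat[OF mult_carrier_mat adj_carrierI])
  have MX: "M0 X = msum 64 64 (map (\<lambda>K. K * X * adj K) ?Ks)" unfolding M0_def kraus_apply_def ..
  have "tr (M0 X) = sum_list (map tr (map (\<lambda>K. K * X * adj K) ?Ks))" unfolding MX by (rule tr_msum[OF c1])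
  also have "\<dots> = sum_list (map (\<lambda>K. tr (X * (adj K * K))) ?Ks)"
  proof -
    have "tr (K * X * adj K) = tr (X * (adj K * K))" if K: "K \<in> carrier_mat 64 8" for K
    proof -
      have "tr (K * X * adj K) = tr (adj K * (K * X))" by (rule tr_comm[OF mult_carrier_mat[OF K X] adj_carrierI[OF K]])
      also have "adj K * (K * X) = (adj K * K) * X" by (rule assoc_mult_mat[OF adj_carrierI[OF K] K X, symmetric])
      also have "tr ((adj K * K) * X) = tr (X * (adj K * K))" by (rule tr_comm[OF mult_carrier_mat[OF adj_carrierI[OF K] K] X])
      finally show ?thesis .
    qed
    then have "map (\<lambda>K. tr (K * X * adj K)) ?Ks = map (\<lambda>K. tr (X * (adj K * K))) ?Ks"
      using cK by (intro map_cong refl) auto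
    then show ?thesis by (simp only: map_map o_def)
  qed
  also have "\<dots> = sum_list (map tr (map (\<lambda>K. X * (adj K * K)) ?Ks))" by (simp add: o_def)
  also have "\<dots> = tr (msum 8 8 (map (\<lambda>K. X * (adj K * K)) ?Ks))"
    using cK X by (intro tr_msum[symmetric]) (auto intro!: mult_carrier_mat[OF _ mult_carrier_mat[OF adj_carrierI]])
  also have "msum 8 8 (map (\<lambda>K. X * (adj K * K)) ?Ks) = X * msum 8 8 (map (\<lambda>K. adj K * K) ?Ks)"
    using cK X by (intro msum_mult_left) (auto intro!: mult_carrier_mat[OF adj_carrierI])
  also have "\<dots> = X" unfolding S1 using X by simp
  finally have "tr (M0 X) = tr X" .
  moreover have "M0 X \<in> carrier_mat 64 64" unfolding MX by (rule msum_carrier[OF c1])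
  ultimately show "M0 X \<in> carrier_mat 64 64 \<and> tr (M0 X) = tr X" by simp
qed

lemma M0_CP: "CP_map 8 64 M0"
  unfolding CP_map_def M0_def using Ks0_carrier by blast

lemma M0_sep: "separable3 (2,2,2) (4,4,4) M0"
proof -
  have "\<forall>(E1,E2,E3)\<in>set Es0. E1 \<in> carrier_mat 4 2 \<and> E2 \<in> carrier_mat 4 2 \<and> E3 \<in> carrier_mat 4 2"
    unfolding Es0_def using Ekr_carrier by auto
  then show ?thesis unfolding separable3_def M0_def by auto
qed

lemma M0_choi: "choi 8 64 M0 = Gamma_choi_order"
proof (rule eq_matI)
  fix i j assume "i < dim_row Gamma_choi_order" "j < dim_col Gamma_choi_order"
  then have ij: "i < 512" "j < 512" by (auto simp: Gamma_choi_order_def)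
  define k where "k = i div 64" define o1 where "o1 = i mod 64"
  define l where "l = j div 64" define o2 where "o2 = j mod 64"
  have b: "k < 8" "l < 8" "o1 < 64" "o2 < 64" using ij unfolding k_def l_def o1_def o2_def by auto
  have i: "i = k*64+o1" "j = l*64+o2" unfolding k_def l_def o1_def o2_def by simp_all
  have M: "\<forall>X\<in>carrier_mat 8 8. M0 X = kraus_apply 64 (map prod3 Es0) X" unfolding M0_def by simp
  show "choi 8 64 M0 $$ (i,j) = Gamma_choi_order $$ (i,j)"
    unfolding i choi_kraus_entry[OF Ks0_carrier M b(1,2,3,4)] Gamma_choi_entry[OF b(1,2,3,4)] choi_sum[OF b(3,4,1,2)] ..
qed (auto simp: choi_def Gamma_choi_order_def)


lemma part2:
  assumes L: "LOCC3 (2,2,2) (4,4,4) M" and C: "choi 8 64 M = Gamma_choi_order"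
  shows False
proof -
  obtain Ls where lt: "locc_tree (4,4,4) (2,2,2) Ls"
    and MX: "\<forall>X\<in>carrier_mat 8 8. M X = kraus_apply 64 (map prod3 Ls) X"
    using L unfolding LOCC3_def by auto
  have cL: "\<forall>(L1,L2,L3)\<in>set Ls. L1 \<in> carrier_mat 4 2 \<and> L2 \<in> carrier_mat 4 2 \<and> L3 \<in> carrier_mat 4 2"
    using locc_carrier[OF lt, of 4 4 4] by auto
  have Ks: "set (map prod3 Ls) \<subseteq> carrier_mat 64 8"
  proof
    fix K assume "K \<in> set (map prod3 Ls)"
    then obtain L1 L2 L3 where L: "(L1,L2,L3) \<in> set Ls" "K = prod3 (L1,L2,L3)" by auto
    have "prod3 (L1,L2,L3) \<in> carrier_mat (4*4*4) (2*2*2)" using cL L(1) by (intro prod3_carrier) auto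
    then show "K \<in> carrier_mat 64 8" using L(2) by simp
  qed
  have eq: "sum_list (map (\<lambda>L. prod3 L $$ (o',k) * cnj (prod3 L $$ (o',l))) Ls) = complex_of_real (Vm o' k * Vm o' l / 2)"
    if "o' < 64" "k < 8" "l < 8" for o' k l
  proof -
    have "sum_list (map (\<lambda>K. K $$ (o',k) * cnj (K $$ (o',l))) (map prod3 Ls)) = choi 8 64 M $$ (k*64+o', l*64+o')"
      by (rule choi_kraus_entry[OF Ks MX that(2,3,1,1), symmetric])
    also have "\<dots> = complex_of_real (Vm o' k * Vm o' l / 2)"
      unfolding C Gamma_choi_entry[OF that(2,3,1,1)] by simp
    finally show ?thesis by (simp add: o_def)
  qed
  have good_all: "good (prod3 L)" if L: "L \<in> set Ls" for L
  proof -
    have "\<forall>o'\<in>{..<64}. \<exists>c. \<forall>k::nat. k < 8 \<longrightarrow> prod3 L $$ (o',k) = c * complex_of_real (Vm o' k)"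
    proof
      fix o' assume "o' \<in> {..<64::nat}"
      then have o: "o' < 64" by simp
      show "\<exists>c. \<forall>k::nat. k < 8 \<longrightarrow> prod3 L $$ (o',k) = c * complex_of_real (Vm o' k)"
        by (rule row_prop[where r="\<lambda>L k. prod3 L $$ (o',k)" and u="Vm o'" and xs=Ls, OF eq[OF o] L])
    qed
    then obtain c where "\<forall>o'\<in>{..<64}. \<forall>k::nat. k < 8 \<longrightarrow> prod3 L $$ (o',k) = c o' * complex_of_real (Vm o' k)"
      by (metis bchoice)
    then show ?thesis unfolding good_def by auto
  qed
  have I: "adj (1\<^sub>m 2) * 1\<^sub>m 2 = (1\<^sub>m 2 :: cmat)" by simp
  have G: "\<forall>(L1,L2,L3)\<in>set Ls. good (prod3 (L1 * 1\<^sub>m 2, L2 * 1\<^sub>m 2, L3 * 1\<^sub>m 2))"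
  proof (intro ballI, clarify)
    fix L1 L2 L3 assume L: "(L1,L2,L3) \<in> set Ls"
    then have "L1 * 1\<^sub>m 2 = L1" "L2 * 1\<^sub>m 2 = L2" "L3 * 1\<^sub>m 2 = L3" using cL by auto
    then show "good (prod3 (L1 * 1\<^sub>m 2, L2 * 1\<^sub>m 2, L3 * 1\<^sub>m 2))" using good_all[OF L] by simp
  qed
  show False
    using no_locc[OF lt refl, rule_format, OF refl one_carrier_mat one_carrier_mat one_carrier_mat I I I G[rule_format]] .
qed

theorem mainTheorem19:
  shows "(\<exists>M. CPTP_map 8 64 M \<and> separable3 (2,2,2) (4,4,4) M \<and> choi 8 64 M = Gamma_choi_order)
       \<and> (\<forall>M. LOCC3 (2,2,2) (4,4,4) M \<longrightarrow> choi 8 64 M \<noteq> Gamma_choi_order)"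
proof
  show "\<exists>M. CPTP_map 8 64 M \<and> separable3 (2,2,2) (4,4,4) M \<and> choi 8 64 M = Gamma_choi_order"
    using M0_CP M0_TP M0_sep M0_choi unfolding CPTP_map_def by blast
  show "\<forall>M. LOCC3 (2,2,2) (4,4,4) M \<longrightarrow> choi 8 64 M \<noteq> Gamma_choi_order"
    using part2 by blast
qed


end
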